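(* Let $G$ be a finite group acting on a weighted metric graph with boundary $(\Sigma',\partial\Sigma')$ by harmonic maps preserving $\partial\Sigma'$. Then there exist a weighted metric graph with boundary $(\Sigma,\partial\Sigma)$ and a surjective harmonic map $\pi\colon\Sigma'\to\Sigma$ such that $\Sigma$ is the quotient of $\Sigma'$ by $G$. Moreover, such a quotient is unique up to harmonic isomorphism.
   Context: Weighted metric graph with boundary: finite multigraph without loop edges, with oriented edges $e$ of length $\ell(e)>0$, parametrizations $t_e\colon[0,\ell(e)]\to e$ ($t_{\bar e}(x)=t_e(\ell(e)-x)$), weights $w(e)=w(\bar e)\in\mathbb Z_{>0}$, and boundary $\partial\Sigma\subset V(\Sigma)$; subdivisions are allowed. A piecewise linear map $\phi\colon\Sigma'\to\Sigma$: continuous, and after subdivision vertices go to vertices, edges map homeomorphically onto edges or to vertices, if $\phi(v')\in\partial\Sigma$ and $\phi$ not constant near $v'$ then $v'\in\partial\Sigma'$, and $\phi\circ t_{e'}(x)=t_e(d_{e'}(\phi)x)$ with $d_{e'}(\phi)=\ell(e)/\ell(e')$ when $\phi(e')=e$ ($d_{e'}=0$ on contracted edges). $\phi$ is harmonic if for every vertex $v'\notin\partial\Sigma'$, $\sum_{e'^-=v',\,e'\mapsto e}\frac{w(e')}{w(e)}d_{e'}(\phi)$ is independent of the edge $e$ starting at $\phi(v')$. A harmonic isomorphism is a harmonic map with a harmonic inverse. $\Sigma$ is the quotient of $\Sigma'$ by $G$ (via $\pi$) if $\pi$ is a surjective harmonic map with $\pi\circ\sigma=\pi$ for all $\sigma\in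 G$, $G$ acts transitively on fibres of $\pi$, and $\pi^{-1}(\partial\Sigma)=\partial\Sigma'$. *)

theory Defs
  imports "HOL-Analysis.Analysis" "HOL-Algebra.Group_Action"
begin

text \<open>An oriented edge is a pair (length, parametrisation); the parametrisation
  is a map [0,len] to points, extended by undefined outside [0,len].\<close>
type_synonym 'p edge = "real \<times> (real \<Rightarrow> 'p)"

record 'p wmg =
  verts :: "'p set"
  edges :: "'p edge set"
  weight :: "'p edge \<Rightarrow> nat"
  bdry :: "'p set"

definition elen :: "'p edge \<Rightarrow> real" where "elen e = fst e"
definition epar :: "'p edge \<Rightarrow> real \<Rightarrow> 'p" where "epar e = snd e"
definition esrc :: "'p edge \<Rightarrow> 'p" where "esrc e = epar e 0"
definition etgt :: "'p edge \<Rightarrow> 'p" where "etgt e = epar e (elen e)"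

definition erev :: "'p edge \<Rightarrow> 'p edge" where
  "erev e = (elen e, \<lambda>x. if x \<in> {0..elen e} then epar e (elen e - x) else undefined)"

definition einterior :: "'p edge \<Rightarrow> 'p set" where
  "einterior e = epar e ` {0<..<elen e}"

definition points :: "('p, 'z) wmg_scheme \<Rightarrow> 'p set" where
  "points S = verts S \<union> (\<Union>e\<in>edges S. epar e ` {0..elen e})"

definition wf_wmg :: "'p wmg \<Rightarrow> bool" where
  "wf_wmg S \<longleftrightarrow>
     finite (verts S) \<and> finite (edges S) \<and> bdry S \<subseteq> verts S \<and>
     (\<forall>e\<in>edges S.
        elen e > 0 \<and>
        (\<forall>x. x \<notin> {0..elen e} \<longrightarrow> epar e x = undefined) \<and>
        inj_on (epar e) {0..elen e} \<and>
        esrc e \<in> verts S \<and> etgt e \<in> verts S \<and> esrc e \<noteq> etgt e \<and>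
        einterior e \<inter> verts S = {} \<and>
        erev e \<in> edges S \<and> weight S (erev e) = weight S e \<and> weight S e > 0) \<and>
     (\<forall>e1\<in>edges S. \<forall>e2\<in>edges S. e2 \<noteq> e1 \<and> e2 \<noteq> erev e1 \<longrightarrow>
        einterior e1 \<inter> einterior e2 = {})"

definition subdivision :: "'p wmg \<Rightarrow> 'p wmg \<Rightarrow> bool" where
  "subdivision T S \<longleftrightarrow>
     wf_wmg T \<and> points T = points S \<and> verts S \<subseteq> verts T \<and> bdry T = bdry S \<and>
     (\<forall>e'\<in>edges T. \<exists>e\<in>edges S. \<exists>a. 0 \<le> a \<and> a + elen e' \<le> elen e \<and>
        (\<forall>x\<in>{0..elen e'}. epar e' x = epar e (a + x)) \<and> weight T e' = weight S e)"

definition contracted :: "('p \<Rightarrow> 'q) \<Rightarrow> 'p edge \<Rightarrow> bool" where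
  "contracted \<phi> e' \<longleftrightarrow> (\<exists>v. \<forall>x\<in>{0..elen e'}. \<phi> (epar e' x) = v)"

definition maps_onto :: "('p \<Rightarrow> 'q) \<Rightarrow> 'p edge \<Rightarrow> 'q edge \<Rightarrow> bool" where
  "maps_onto \<phi> e' e \<longleftrightarrow>
     (\<forall>x\<in>{0..elen e'}. \<phi> (epar e' x) = epar e ((elen e / elen e') * x))"

definition pl_comb :: "'p wmg \<Rightarrow> 'q wmg \<Rightarrow> ('p \<Rightarrow> 'q) \<Rightarrow> bool" where
  "pl_comb S' S \<phi> \<longleftrightarrow>
     \<phi> ` points S' \<subseteq> points S \<and>
     \<phi> ` verts S' \<subseteq> verts S \<and>
     (\<forall>e'\<in>edges S'. contracted \<phi> e' \<or> (\<exists>e\<in>edges S. maps_onto \<phi> e' e)) \<and>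
     (\<forall>v'\<in>verts S'. \<phi> v' \<in> bdry S \<and>
        (\<exists>e'\<in>edges S'. esrc e' = v' \<and> \<not> contracted \<phi> e') \<longrightarrow> v' \<in> bdry S')"

definition harmonic_at :: "'p wmg \<Rightarrow> 'q wmg \<Rightarrow> ('p \<Rightarrow> 'q) \<Rightarrow> 'p \<Rightarrow> bool" where
  "harmonic_at S' S \<phi> v' \<longleftrightarrow>
     (\<exists>c. \<forall>e\<in>edges S. esrc e = \<phi> v' \<longrightarrow>
        (\<Sum>e'\<in>{e'\<in>edges S'. esrc e' = v' \<and> maps_onto \<phi> e' e}.
            (real (weight S' e') / real (weight S e)) * (elen e / elen e')) = c)"

definition pl_map :: "'p wmg \<Rightarrow> 'q wmg \<Rightarrow> ('p \<Rightarrow> 'q) \<Rightarrow> bool" where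
  "pl_map S' S \<phi> \<longleftrightarrow>
     (\<exists>T' T. subdivision T' S' \<and> subdivision T S \<and> pl_comb T' T \<phi>)"

definition harmonic :: "'p wmg \<Rightarrow> 'q wmg \<Rightarrow> ('p \<Rightarrow> 'q) \<Rightarrow> bool" where
  "harmonic S' S \<phi> \<longleftrightarrow>
     (\<exists>T' T. subdivision T' S' \<and> subdivision T S \<and> pl_comb T' T \<phi> \<and>
        (\<forall>v'\<in>verts T' - bdry T'. harmonic_at T' T \<phi> v'))"

definition harmonic_iso :: "'p wmg \<Rightarrow> 'q wmg \<Rightarrow> ('p \<Rightarrow> 'q) \<Rightarrow> bool" where
  "harmonic_iso S' S \<phi> \<longleftrightarrow>
     harmonic S' S \<phi> \<and>
     (\<exists>\<psi>. harmonic S S' \<psi> \<and> (\<forall>x\<in>points S'. \<psi> (\<phi> x) = x) \<and> (\<forall>y\<in>points S. \<phi> (\<psi> y) = y))"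

definition is_quotient ::
  "('g, 'm) monoid_scheme \<Rightarrow> ('g \<Rightarrow> 'p \<Rightarrow> 'p) \<Rightarrow> 'p wmg \<Rightarrow> 'q wmg \<Rightarrow> ('p \<Rightarrow> 'q) \<Rightarrow> bool" where
  "is_quotient G act S' S \<pi> \<longleftrightarrow>
     harmonic S' S \<pi> \<and> \<pi> ` points S' = points S \<and>
     (\<forall>g\<in>carrier G. \<forall>x\<in>points S'. \<pi> (act g x) = \<pi> x) \<and>
     (\<forall>x\<in>points S'. \<forall>y\<in>points S'. \<pi> x = \<pi> y \<longrightarrow> (\<exists>g\<in>carrier G. act g x = y)) \<and>
     {x\<in>points S'. \<pi> x \<in> bdry S} = bdry S'"

end

theory Submission
  imports Defs
begin

lemma elen_pair[simp]: "elen (a, f) = a" and epar_pair[simp]: "epar (a, f) = f"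
  by (simp_all add: elen_def epar_def)

lemma erev_len[simp]: "elen (erev e) = elen e"
  by (simp add: erev_def elen_def)

lemma erev_par: "x \<in> {0..elen e} \<Longrightarrow> epar (erev e) x = epar e (elen e - x)"
  by (simp add: erev_def epar_def elen_def)

lemma erev_src: "elen e \<ge> 0 \<Longrightarrow> esrc (erev e) = etgt e"
  by (simp add: esrc_def etgt_def erev_par)

lemma erev_tgt: "elen e \<ge> 0 \<Longrightarrow> etgt (erev e) = esrc e"
  by (simp add: esrc_def etgt_def erev_par)

lemma erev_erev:
  assumes "\<forall>x. x \<notin> {0..elen e} \<longrightarrow> epar e x = undefined"
  shows "erev (erev e) = e"
proof -
  obtain a f where e: "e = (a, f)" by (cases e)
  have 1: "\<And>x. x \<notin> {0..a} \<Longrightarrow> f x = undefined" using assms e by (simp add: epar_def elen_def)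
  show ?thesis unfolding e erev_def elen_def epar_def
    using 1 by (auto simp: fun_eq_iff)
qed

lemma wf_parts:
  assumes "wf_wmg S"
  shows "finite (verts S)" "finite (edges S)" "bdry S \<subseteq> verts S"
    "\<forall>e\<in>edges S.
        elen e > 0 \<and>
        (\<forall>x. x \<notin> {0..elen e} \<longrightarrow> epar e x = undefined) \<and>
        inj_on (epar e) {0..elen e} \<and>
        esrc e \<in> verts S \<and> etgt e \<in> verts S \<and> esrc e \<noteq> etgt e \<and>
        einterior e \<inter> verts S = {} \<and>
        erev e \<in> edges S \<and> weight S (erev e) = weight S e \<and> weight S e > 0"
    "\<forall>e1\<in>edges S. \<forall>e2\<in>edges S. e2 \<noteq> e1 \<and> e2 \<noteq> erev e1 \<longrightarrow>
        einterior e1 \<inter> einterior e2 = {}"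
proof -
  note d = assms[unfolded wf_wmg_def]
  note c0 = conjunct1[OF d] note c1 = conjunct1[OF conjunct2[OF d]] note c2 = conjunct1[OF conjunct2[OF conjunct2[OF d]]] note c3 = conjunct1[OF conjunct2[OF conjunct2[OF conjunct2[OF d]]]] note c4 = conjunct2[OF conjunct2[OF conjunct2[OF conjunct2[OF d]]]]
  show "finite (verts S)" by (rule c0)
  show "finite (edges S)" by (rule c1)
  show "bdry S \<subseteq> verts S" by (rule c2)
  show "\<forall>e\<in>edges S.
        elen e > 0 \<and>
        (\<forall>x. x \<notin> {0..elen e} \<longrightarrow> epar e x = undefined) \<and>
        inj_on (epar e) {0..elen e} \<and>
        esrc e \<in> verts S \<and> etgt e \<in> verts S \<and> esrc e \<noteq> etgt e \<and>
        einterior e \<inter> verts S = {} \<and>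
        erev e \<in> edges S \<and> weight S (erev e) = weight S e \<and> weight S e > 0" by (rule c3)
  show "\<forall>e1\<in>edges S. \<forall>e2\<in>edges S. e2 \<noteq> e1 \<and> e2 \<noteq> erev e1 \<longrightarrow>
        einterior e1 \<inter> einterior e2 = {}" by (rule c4)
qed

lemma wf_edgeD:
  assumes "wf_wmg S" "e \<in> edges S"
  shows "elen e > 0" "\<forall>x. x \<notin> {0..elen e} \<longrightarrow> epar e x = undefined"
    "inj_on (epar e) {0..elen e}" "esrc e \<in> verts S" "etgt e \<in> verts S" "esrc e \<noteq> etgt e"
    "einterior e \<inter> verts S = {}" "erev e \<in> edges S" "weight S (erev e) = weight S e"
    "weight S e > 0"
proof -
  note d = bspec[OF wf_parts(4)[OF assms(1)] assms(2)]
  show "elen e > 0" by (rule conjunct1[OF d])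
  show "\<forall>x. x \<notin> {0..elen e} \<longrightarrow> epar e x = undefined" by (rule conjunct1[OF conjunct2[OF d]])
  show "inj_on (epar e) {0..elen e}" by (rule conjunct1[OF conjunct2[OF conjunct2[OF d]]])
  show "esrc e \<in> verts S" by (rule conjunct1[OF conjunct2[OF conjunct2[OF conjunct2[OF d]]]])
  show "etgt e \<in> verts S" by (rule conjunct1[OF conjunct2[OF conjunct2[OF conjunct2[OF conjunct2[OF d]]]]])
  show "esrc e \<noteq> etgt e" by (rule conjunct1[OF conjunct2[OF conjunct2[OF conjunct2[OF conjunct2[OF conjunct2[OF d]]]]]])
  show "einterior e \<inter> verts S = {}" by (rule conjunct1[OF conjunct2[OF conjunct2[OF conjunct2[OF conjunct2[OF conjunct2[OF conjunct2[OF d]]]]]]])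
  show "erev e \<in> edges S" by (rule conjunct1[OF conjunct2[OF conjunct2[OF conjunct2[OF conjunct2[OF conjunct2[OF conjunct2[OF conjunct2[OF d]]]]]]]])
  show "weight S (erev e) = weight S e" by (rule conjunct1[OF conjunct2[OF conjunct2[OF conjunct2[OF conjunct2[OF conjunct2[OF conjunct2[OF conjunct2[OF conjunct2[OF d]]]]]]]]])
  show "weight S e > 0" by (rule conjunct2[OF conjunct2[OF conjunct2[OF conjunct2[OF conjunct2[OF conjunct2[OF conjunct2[OF conjunct2[OF conjunct2[OF d]]]]]]]]])
qed

lemma wf_disj:
  assumes "wf_wmg S" "e1 \<in> edges S" "e2 \<in> edges S" "e2 \<noteq> e1" "e2 \<noteq> erev e1"
  shows "einterior e1 \<inter> einterior e2 = {}"
  using wf_parts(5)[OF assms(1)] assms(2-5) by blast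

lemma wf_finite: "wf_wmg S \<Longrightarrow> finite (verts S)" "wf_wmg S \<Longrightarrow> finite (edges S)"
  "wf_wmg S \<Longrightarrow> bdry S \<subseteq> verts S"
  using wf_parts(1-3) by blast+

lemma wf_erev_erev: "wf_wmg S \<Longrightarrow> e \<in> edges S \<Longrightarrow> erev (erev e) = e"
  by (rule erev_erev[OF wf_edgeD(2)])

lemma wf_erev_neq: "wf_wmg S \<Longrightarrow> e \<in> edges S \<Longrightarrow> erev e \<noteq> e"
  by (metis erev_src less_eq_real_def wf_edgeD(1,6))

lemma wf_inj: "wf_wmg S \<Longrightarrow> e \<in> edges S \<Longrightarrow> x \<in> {0..elen e} \<Longrightarrow> y \<in> {0..elen e}
   \<Longrightarrow> epar e x = epar e y \<Longrightarrow> x = y"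
  using wf_edgeD(3) by (metis inj_onD)

lemma wf_interior_notvert: "wf_wmg S \<Longrightarrow> e \<in> edges S \<Longrightarrow> 0 < t \<Longrightarrow> t < elen e \<Longrightarrow> epar e t \<notin> verts S"
proof -
  assume a: "wf_wmg S" "e \<in> edges S" "0 < t" "t < elen e"
  have "epar e t \<in> einterior e" using a unfolding einterior_def by auto
  thus ?thesis using wf_edgeD(7)[OF a(1,2)] by blast
qed

lemma points_cases:
  assumes "wf_wmg S" "x \<in> points S"
  shows "x \<in> verts S \<or> (\<exists>e\<in>edges S. \<exists>t. 0 < t \<and> t < elen e \<and> x = epar e t)"
proof -
  { assume "x \<notin> verts S"
    hence "x \<in> (\<Union>e\<in>edges S. epar e ` {0..elen e})" using assms(2) unfolding points_def by blast
    then obtain e t where e: "e \<in> edges S" "t \<in> {0..elen e}" "x = epar e t" by blast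
    have "t \<noteq> 0" using e \<open>x \<notin> verts S\<close> wf_edgeD(4)[OF assms(1) e(1)] by (auto simp: esrc_def)
    moreover have "t \<noteq> elen e" using e \<open>x \<notin> verts S\<close> wf_edgeD(5)[OF assms(1) e(1)] by (auto simp: etgt_def)
    ultimately have "0 < t \<and> t < elen e" using e by auto
    hence ?thesis using e by (intro disjI2 bexI[of _ e] exI[of _ t]) auto }
  thus ?thesis by blast
qed

lemma verts_points: "verts S \<subseteq> points S"
  unfolding points_def by auto

lemma edge_points: "e \<in> edges S \<Longrightarrow> t \<in> {0..elen e} \<Longrightarrow> epar e t \<in> points S"
  unfolding points_def by blast

lemma W4:
  assumes wf: "wf_wmg S" and e1: "e1 \<in> edges S" and e2: "e2 \<in> edges S"
    and s: "0 < s" "s < elen e1" and t: "0 < t" "t < elen e2" and eq: "epar e1 s = epar e2 t"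
  shows "(e2 = e1 \<and> t = s) \<or> (e2 = erev e1 \<and> t = elen e1 - s)"
proof -
  have i1: "epar e1 s \<in> einterior e1" using s unfolding einterior_def by auto
  have i2: "epar e2 t \<in> einterior e2" using t unfolding einterior_def by auto
  have "e2 = e1 \<or> e2 = erev e1"
  proof (rule ccontr)
    assume "\<not> (e2 = e1 \<or> e2 = erev e1)"
    hence "einterior e1 \<inter> einterior e2 = {}" using wf_disj[OF wf e1 e2] by blast
    thus False using i1 i2 eq by auto
  qed
  thus ?thesis
  proof
    assume "e2 = e1" thus ?thesis using wf_inj[OF wf e1, of s t] s t eq by auto
  next
    assume h: "e2 = erev e1"
    hence "epar e2 t = epar e1 (elen e1 - t)" using t by (simp add: erev_par)
    hence "elen e1 - t = s" using wf_inj[OF wf e1, of "elen e1 - t" s] s t eq h by auto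
    thus ?thesis using h by auto
  qed
qed

lemma AF:
  assumes wf: "wf_wmg S" and e1: "e1 \<in> edges S" and e2: "e2 \<in> edges S"
    and L: "L > 0" and b: "\<beta> > 0" and d: "\<delta> > 0"
    and H: "\<And>x. 0 \<le> x \<Longrightarrow> x \<le> L \<Longrightarrow> \<alpha> + \<beta>*x \<in> {0..elen e1} \<and> \<gamma> + \<delta>*x \<in> {0..elen e2}
              \<and> epar e1 (\<alpha> + \<beta>*x) = epar e2 (\<gamma> + \<delta>*x)"
  shows "e2 = e1 \<and> \<gamma> = \<alpha> \<and> \<delta> = \<beta>"
proof -
  have a0: "0 \<le> \<alpha>" "\<alpha> + \<beta>*L \<le> elen e1" using H[of 0] H[of L] L by auto
  have c0: "0 \<le> \<gamma>" "\<gamma> + \<delta>*L \<le> elen e2" using H[of 0] H[of L] L by auto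
  have int1: "0 < \<alpha>+\<beta>*x \<and> \<alpha>+\<beta>*x < elen e1" if "0<x" "x<L" for x
  proof -
    have "\<beta>*x < \<beta>*L" using b that by simp
    moreover have "\<beta>*x > 0" using b that by simp
    ultimately show ?thesis using a0 by linarith
  qed
  have int2: "0 < \<gamma>+\<delta>*x \<and> \<gamma>+\<delta>*x < elen e2" if "0<x" "x<L" for x
  proof -
    have "\<delta>*x < \<delta>*L" using d that by simp
    moreover have "\<delta>*x > 0" using d that by simp
    ultimately show ?thesis using c0 by linarith
  qed
  define x1 where "x1 = L/3"
  define x2 where "x2 = 2*L/3"
  have x: "0 < x1" "x1 < L" "0 < x2" "x2 < L" "x1 < x2" using L by (auto simp: x1_def x2_def)
  have C1: "(e2 = e1 \<and> \<gamma>+\<delta>*x1 = \<alpha>+\<beta>*x1) \<or> (e2 = erev e1 \<and> \<gamma>+\<delta>*x1 = elen e1 - (\<alpha>+\<beta>*x1))"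
    using W4[OF wf e1 e2 _ _ _ _ conjunct2[OF conjunct2[OF H[of x1]]]] int1[OF x(1,2)] int2[OF x(1,2)] x by auto
  have C2: "(e2 = e1 \<and> \<gamma>+\<delta>*x2 = \<alpha>+\<beta>*x2) \<or> (e2 = erev e1 \<and> \<gamma>+\<delta>*x2 = elen e1 - (\<alpha>+\<beta>*x2))"
    using W4[OF wf e1 e2 _ _ _ _ conjunct2[OF conjunct2[OF H[of x2]]]] int1[OF x(3,4)] int2[OF x(3,4)] x by auto
  have ne: "erev e1 \<noteq> e1" using wf_erev_neq[OF wf e1] .
  show ?thesis
  proof (cases "e2 = e1")
    case True
    hence q1: "\<gamma>+\<delta>*x1 = \<alpha>+\<beta>*x1" and q2: "\<gamma>+\<delta>*x2 = \<alpha>+\<beta>*x2" using C1 C2 ne by auto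
    have "(\<delta> - \<beta>) * (x2 - x1) = 0" using q1 q2 by (simp add: algebra_simps)
    hence "\<delta> = \<beta>" using x by simp
    thus ?thesis using True q1 by simp
  next
    case False
    hence q1: "\<gamma>+\<delta>*x1 = elen e1 - (\<alpha>+\<beta>*x1)" and q2: "\<gamma>+\<delta>*x2 = elen e1 - (\<alpha>+\<beta>*x2)" using C1 C2 by auto
    have "(\<delta> + \<beta>) * (x2 - x1) = 0" using q1 q2 by (simp add: algebra_simps)
    hence "\<delta> + \<beta> = 0" using x by simp
    thus ?thesis using b d by simp
  qed
qed

lemma MT:
  assumes wf: "wf_wmg S" and e: "e \<in> edges S" and e': "e' \<in> edges S" and p: "elen p > 0"
    and m1: "maps_onto \<phi> p e" and m2: "maps_onto \<phi> p e'"
  shows "e' = e"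
proof -
  have l: "elen e > 0" "elen e' > 0" using wf_edgeD(1)[OF wf e] wf_edgeD(1)[OF wf e'] by auto
  have "e' = e \<and> 0 = (0::real) \<and> elen e'/elen p = elen e/elen p"
  proof (rule AF[OF wf e e' p])
    fix x assume x: "0 \<le> x" "x \<le> elen p"
    have r: "elen e/elen p * x \<in> {0..elen e}"
      if "elen e > 0" for e :: "'a edge" using x p that by (auto simp: field_simps mult_left_le)
    show "0 + elen e / elen p * x \<in> {0..elen e} \<and> 0 + elen e' / elen p * x \<in> {0..elen e'} \<and>
          epar e (0 + elen e / elen p * x) = epar e' (0 + elen e' / elen p * x)"
      using r[OF l(1)] r[OF l(2)] m1 m2 x unfolding maps_onto_def by auto
  qed (use l p in auto)
  thus ?thesis by simp
qed

definition seg :: "'p edge \<Rightarrow> real \<Rightarrow> 'p edge \<Rightarrow> bool" where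
  "seg f c p \<longleftrightarrow> 0 \<le> c \<and> c + elen p \<le> elen f \<and> (\<forall>x\<in>{0..elen p}. epar p x = epar f (c + x))"

lemma segD: "seg f c p \<Longrightarrow> 0 \<le> x \<Longrightarrow> x \<le> elen p \<Longrightarrow> epar p x = epar f (c + x)"
  unfolding seg_def by auto

lemma seg_erev:
  assumes "seg f c p" "elen p \<ge> 0"
  shows "seg (erev f) (elen f - c - elen p) (erev p)"
  unfolding seg_def
proof (intro conjI ballI)
  show "0 \<le> elen f - c - elen p" "elen f - c - elen p + elen (erev p) \<le> elen (erev f)"
    using assms unfolding seg_def by auto
  fix x assume x: "x \<in> {0..elen (erev p)}"
  have "epar (erev p) x = epar p (elen p - x)" using x by (simp add: erev_par)
  also have "\<dots> = epar f (c + (elen p - x))" using assms x unfolding seg_def by auto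
  also have "\<dots> = epar (erev f) (elen f - c - elen p + x)"
    using assms x unfolding seg_def by (auto simp: erev_par)
  finally show "epar (erev p) x = epar (erev f) (elen f - c - elen p + x)" .
qed

lemma seg_trans: "seg e a f \<Longrightarrow> seg f c p \<Longrightarrow> seg e (a + c) p"
  unfolding seg_def by (auto simp: add.assoc)

lemma seg_refl: "elen e \<ge> 0 \<Longrightarrow> seg e 0 e"
  unfolding seg_def by auto

lemma subdivD:
  assumes "subdivision T S" "f \<in> edges T"
  shows "\<exists>e\<in>edges S. \<exists>a. seg e a f \<and> weight T f = weight S e"
proof -
  have "\<exists>e\<in>edges S. \<exists>a. 0 \<le> a \<and> a + elen f \<le> elen e \<and>
        (\<forall>x\<in>{0..elen f}. epar f x = epar e (a + x)) \<and> weight T f = weight S e"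
    using assms unfolding subdivision_def by blast
  then obtain e a where "e \<in> edges S" "0 \<le> a \<and> a + elen f \<le> elen e \<and>
        (\<forall>x\<in>{0..elen f}. epar f x = epar e (a + x)) \<and> weight T f = weight S e" by blast
  thus ?thesis unfolding seg_def by blast
qed

lemma subdiv_wf: "subdivision T S \<Longrightarrow> wf_wmg T"
  and subdiv_points: "subdivision T S \<Longrightarrow> points T = points S"
  and subdiv_verts: "subdivision T S \<Longrightarrow> verts S \<subseteq> verts T"
  and subdiv_bdry: "subdivision T S \<Longrightarrow> bdry T = bdry S"
  unfolding subdivision_def by auto

lemma subdiv_refl: "wf_wmg S \<Longrightarrow> subdivision S S"
proof -
  assume wf: "wf_wmg S"
  show ?thesis unfolding subdivision_def
  proof (intro conjI ballI)
    fix e' assume e': "e' \<in> edges S"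
    show "\<exists>e\<in>edges S. \<exists>a. 0 \<le> a \<and> a + elen e' \<le> elen e \<and>
        (\<forall>x\<in>{0..elen e'}. epar e' x = epar e (a + x)) \<and> weight S e' = weight S e"
      by (rule bexI[OF _ e'], rule exI[of _ 0]) simp
  qed (use wf in auto)
qed

lemma RF:
  assumes wf: "wf_wmg S" and X: "subdivision X S" and Y: "subdivision Y S"
    and vv: "verts X \<subseteq> verts Y" and p: "p \<in> edges Y"
  shows "\<exists>f\<in>edges X. \<exists>c. seg f c p"
proof -
  have wfX: "wf_wmg X" and wfY: "wf_wmg Y" using X Y subdiv_wf by auto
  obtain e a where e: "e \<in> edges S" "seg e a p" using subdivD[OF Y p] by blast
  define L where "L = elen p"
  have L: "L > 0" using wf_edgeD(1)[OF wfY p] L_def by simp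
  have ea: "0 \<le> a" "a + L \<le> elen e" using e(2) unfolding seg_def L_def by auto
  have pe: "epar p x = epar e (a + x)" if "0 \<le> x" "x \<le> L" for x using segD[OF e(2)] that L_def by auto
  have pint: "epar p x \<notin> verts X" if "0 < x" "x < L" for x
    using wf_interior_notvert[OF wfY p] that vv L_def by auto
  define m where "m = epar p (L/2)"
  have m: "m = epar e (a + L/2)" using pe[of "L/2"] L m_def by simp
  have "m \<in> points X" using subdiv_points[OF X] subdiv_points[OF Y] edge_points[OF p, of "L/2"] L m_def L_def by auto
  moreover have "m \<notin> verts X" using pint[of "L/2"] L m_def by simp
  ultimately obtain f t where f: "f \<in> edges X" "0 < t" "t < elen f" "m = epar f t"
    using points_cases[OF wfX] by blast
  obtain e2 a2 where e2: "e2 \<in> edges S" "seg e2 a2 f" using subdivD[OF X f(1)] by blast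
  have a2: "0 \<le> a2" "a2 + elen f \<le> elen e2" using e2(2) unfolding seg_def by auto
  have me2: "m = epar e2 (a2 + t)" using f segD[OF e2(2), of t] by simp
  have "(e2 = e \<and> a2 + t = a + L/2) \<or> (e2 = erev e \<and> a2 + t = elen e - (a + L/2))"
    by (rule W4[OF wf e(1) e2(1)]) (use ea a2 f L m me2 in auto)
  have "\<exists>f\<in>edges X. \<exists>a2. seg e a2 f \<and> a2 < a + L/2 \<and> a + L/2 < a2 + elen f"
  proof (cases "e2 = e")
    case True
    hence "a2 + t = a + L/2" using \<open>(e2 = e \<and> _) \<or> _\<close> wf_erev_neq[OF wf e(1)] by auto
    thus ?thesis using f e2 True by (intro bexI[of _ f] exI[of _ a2]) auto
  next
    case False
    hence h: "e2 = erev e" "a2 + t = elen e - (a + L/2)" using \<open>(e2 = e \<and> _) \<or> _\<close> by auto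
    have s: "seg (erev e2) (elen e2 - a2 - elen f) (erev f)"
      using seg_erev[OF e2(2)] wf_edgeD(1)[OF wfX f(1)] by simp
    have "erev e2 = e" using h wf_erev_erev[OF wf e(1)] by simp
    moreover have "erev f \<in> edges X" using wf_edgeD(8)[OF wfX f(1)] .
    ultimately show ?thesis using s h f by (intro bexI[of _ "erev f"] exI[of _ "elen e2 - a2 - elen f"]) auto
  qed
  then obtain f a2 where f2: "f \<in> edges X" "seg e a2 f" "a2 < a + L/2" "a + L/2 < a2 + elen f" by blast
  have fe: "epar f y = epar e (a2 + y)" if "0 \<le> y" "y \<le> elen f" for y using segD[OF f2(2)] that by auto
  have lo: "a2 \<le> a"
  proof (rule ccontr)
    assume "\<not> a2 \<le> a"
    hence "epar p (a2 - a) = epar f 0" using pe[of "a2 - a"] fe[of 0] f2 wf_edgeD(1)[OF wfX f2(1)] by auto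
    moreover have "epar f 0 \<in> verts X" using wf_edgeD(4)[OF wfX f2(1)] by (simp add: esrc_def)
    ultimately show False using pint[of "a2 - a"] \<open>\<not> a2 \<le> a\<close> f2 by auto
  qed
  have hi: "a + L \<le> a2 + elen f"
  proof (rule ccontr)
    assume "\<not> a + L \<le> a2 + elen f"
    hence "epar p (a2 + elen f - a) = epar f (elen f)" using pe[of "a2 + elen f - a"] fe[of "elen f"] f2 wf_edgeD(1)[OF wfX f2(1)] by auto
    moreover have "epar f (elen f) \<in> verts X" using wf_edgeD(5)[OF wfX f2(1)] by (simp add: etgt_def)
    ultimately show False using pint[of "a2 + elen f - a"] \<open>\<not> a + L \<le> a2 + elen f\<close> f2 by auto
  qed
  have "seg f (a - a2) p"
    unfolding seg_def
  proof (intro conjI ballI)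
    show "0 \<le> a - a2" "a - a2 + elen p \<le> elen f" using lo hi L_def by auto
    fix x assume "x \<in> {0..elen p}"
    thus "epar p x = epar f (a - a2 + x)" using pe[of x] fe[of "a - a2 + x"] lo hi L_def by auto
  qed
  thus ?thesis using f2(1) by blast
qed

lemma SW:
  assumes wf: "wf_wmg S" and X: "subdivision X S" and Y: "subdivision Y S"
    and f: "f \<in> edges X" and p: "p \<in> edges Y" and s: "seg f c p"
  shows "weight Y p = weight X f"
proof -
  have wfX: "wf_wmg X" and wfY: "wf_wmg Y" using X Y subdiv_wf by auto
  obtain e a where e: "e \<in> edges S" "seg e a p" "weight Y p = weight S e" using subdivD[OF Y p] by blast
  obtain e2 a2 where e2: "e2 \<in> edges S" "seg e2 a2 f" "weight X f = weight S e2" using subdivD[OF X f] by blast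
  define L where "L = elen p"
  have L: "L > 0" using wf_edgeD(1)[OF wfY p] L_def by simp
  have q1: "epar p (L/2) = epar e (a + L/2)" using segD[OF e(2), of "L/2"] L L_def by simp
  have q2: "epar p (L/2) = epar e2 (a2 + (c + L/2))" using segD[OF s, of "L/2"] segD[OF e2(2), of "c + L/2"] s L L_def
    unfolding seg_def by auto
  have "(e2 = e \<and> a2 + (c + L/2) = a + L/2) \<or> (e2 = erev e \<and> a2 + (c + L/2) = elen e - (a + L/2))"
    by (rule W4[OF wf e(1) e2(1)]) (use q1 q2 e(2) e2(2) s L L_def in \<open>auto simp: seg_def\<close>)
  thus ?thesis using e e2 wf_edgeD(9)[OF wf e(1)] by auto
qed

lemma GL:
  assumes wf: "wf_wmg S" and X: "subdivision X S" and Y: "subdivision Y S"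
    and vv: "verts X \<subseteq> verts Y" and x: "x \<in> edges X"
    and ab: "0 \<le> a" "a < b" "b \<le> elen x"
    and va: "epar x a \<in> verts Y" and vb: "epar x b \<in> verts Y"
    and nv: "\<And>s. a < s \<Longrightarrow> s < b \<Longrightarrow> epar x s \<notin> verts Y"
  shows "\<exists>q\<in>edges Y. elen q = b - a \<and> seg x a q"
proof -
  have wfX: "wf_wmg X" and wfY: "wf_wmg Y" using X Y subdiv_wf by auto
  define mid where "mid = (a+b)/2"
  have mid: "a < mid" "mid < b" using ab mid_def by auto
  define m where "m = epar x mid"
  have "m \<in> points Y" using subdiv_points[OF X] subdiv_points[OF Y] edge_points[OF x, of mid] mid ab m_def by auto
  moreover have "m \<notin> verts Y" using nv mid m_def by auto
  ultimately obtain q0 t where q0: "q0 \<in> edges Y" "0 < t" "t < elen q0" "m = epar q0 t"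
    using points_cases[OF wfY] by blast
  obtain x2 c2 where x2: "x2 \<in> edges X" "seg x2 c2 q0" using RF[OF wf X Y vv q0(1)] by blast
  have mx2: "m = epar x2 (c2 + t)" using q0 segD[OF x2(2), of t] by simp
  have "(x2 = x \<and> c2 + t = mid) \<or> (x2 = erev x \<and> c2 + t = elen x - mid)"
  proof (rule W4[OF wfX x x2(1)])
    have c2: "0 \<le> c2" "c2 + elen q0 \<le> elen x2" using x2(2) unfolding seg_def by auto
    show "0 < mid" "mid < elen x" using mid ab by auto
    show "0 < c2 + t" "c2 + t < elen x2" using c2 q0 by auto
    show "epar x mid = epar x2 (c2 + t)" using mx2 m_def by simp
  qed
  have "\<exists>q\<in>edges Y. \<exists>d. seg x d q \<and> d < mid \<and> mid < d + elen q"
  proof (cases "x2 = x")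
    case True
    hence "c2 + t = mid" using \<open>(x2 = x \<and> _) \<or> _\<close> wf_erev_neq[OF wfX x] by auto
    thus ?thesis using q0 x2 True by (intro bexI[of _ q0] exI[of _ c2]) auto
  next
    case False
    hence h: "x2 = erev x" "c2 + t = elen x - mid" using \<open>(x2 = x \<and> _) \<or> _\<close> by auto
    have s: "seg (erev x2) (elen x2 - c2 - elen q0) (erev q0)"
      using seg_erev[OF x2(2)] wf_edgeD(1)[OF wfY q0(1)] by simp
    have "erev x2 = x" using h wf_erev_erev[OF wfX x] by simp
    moreover have "erev q0 \<in> edges Y" using wf_edgeD(8)[OF wfY q0(1)] .
    ultimately show ?thesis using s h q0 by (intro bexI[of _ "erev q0"] exI[of _ "elen x2 - c2 - elen q0"]) auto
  qed
  then obtain q d where q: "q \<in> edges Y" "seg x d q" "d < mid" "mid < d + elen q" by blast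
  have qx: "epar q y = epar x (d + y)" if "0 \<le> y" "y \<le> elen q" for y using segD[OF q(2)] that by auto
  have qd: "0 \<le> d" "d + elen q \<le> elen x" using q(2) unfolding seg_def by auto
  have qint: "epar q y \<notin> verts Y" if "0 < y" "y < elen q" for y using wf_interior_notvert[OF wfY q(1)] that by auto
  have d1: "d = a"
  proof (rule ccontr)
    assume ne: "d \<noteq> a"
    show False
    proof (cases "d < a")
      case True
      thus False using qint[of "a - d"] qx[of "a - d"] va q mid by auto
    next
      case False
      hence "a < d" using ne by auto
      moreover have "epar x d \<in> verts Y" using qx[of 0] wf_edgeD(4)[OF wfY q(1)] wf_edgeD(1)[OF wfY q(1)] by (simp add: esrc_def)
      ultimately show False using nv[of d] q mid by auto
    qed
  qed
  have d2: "d + elen q = b"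
  proof (rule ccontr)
    assume ne: "d + elen q \<noteq> b"
    show False
    proof (cases "d + elen q < b")
      case True
      moreover have "epar x (d + elen q) \<in> verts Y" using qx[of "elen q"] wf_edgeD(5)[OF wfY q(1)] wf_edgeD(1)[OF wfY q(1)] by (simp add: etgt_def)
      ultimately show False using nv[of "d + elen q"] q mid by auto
    next
      case False
      hence "b < d + elen q" using ne by auto
      thus False using qint[of "b - d"] qx[of "b - d"] vb q mid by auto
    qed
  qed
  show ?thesis using q d1 d2 by (intro bexI[of _ q]) auto
qed

section \<open>Subdividing at a finite set of points\<close>

definition pset :: "'p set \<Rightarrow> 'p edge \<Rightarrow> real set" where
  "pset P e = {t\<in>{0..elen e}. epar e t \<in> P}"

definition consec :: "'p set \<Rightarrow> 'p edge \<Rightarrow> real \<Rightarrow> real \<Rightarrow> bool" where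
  "consec P e a b \<longleftrightarrow> a \<in> pset P e \<and> b \<in> pset P e \<and> a < b \<and> (\<forall>t\<in>pset P e. t \<le> a \<or> b \<le> t)"

definition piece :: "'p edge \<Rightarrow> real \<Rightarrow> real \<Rightarrow> 'p edge" where
  "piece e a b = (b - a, \<lambda>x. if x \<in> {0..b-a} then epar e (a + x) else undefined)"

definition subw :: "'p wmg \<Rightarrow> 'p set \<Rightarrow> 'p wmg" where
  "subw S P = \<lparr>verts = P, edges = {piece e a b | e a b. e \<in> edges S \<and> consec P e a b},
     weight = (\<lambda>q. weight S (SOME e. e \<in> edges S \<and> (\<exists>a b. consec P e a b \<and> q = piece e a b))),
     bdry = bdry S\<rparr>"

lemma piece_len[simp]: "elen (piece e a b) = b - a"
  by (simp add: piece_def)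

lemma piece_par: "x \<in> {0..b-a} \<Longrightarrow> epar (piece e a b) x = epar e (a + x)"
  by (simp add: piece_def)

lemma piece_undef: "x \<notin> {0..b-a} \<Longrightarrow> epar (piece e a b) x = undefined"
  by (auto simp: piece_def)

lemma consec_range: "consec P e a b \<Longrightarrow> 0 \<le> a \<and> b \<le> elen e \<and> a < b"
  unfolding consec_def pset_def by auto

lemma piece_seg: "consec P e a b \<Longrightarrow> seg e a (piece e a b)"
  using consec_range[of P e a b] unfolding seg_def by (auto simp: piece_par)

lemma pset_erev:
  assumes "elen e \<ge> 0"
  shows "pset P (erev e) = (\<lambda>u. elen e - u) ` pset P e"
proof (rule equalityI; rule subsetI)
  fix t assume "t \<in> pset P (erev e)"
  hence t: "t \<in> {0..elen e}" "epar e (elen e - t) \<in> P" unfolding pset_def by (auto simp: erev_par)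
  hence "elen e - t \<in> pset P e" unfolding pset_def by auto
  moreover have "t = elen e - (elen e - t)" by simp
  ultimately show "t \<in> (\<lambda>u. elen e - u) ` pset P e" by blast
next
  fix t assume "t \<in> (\<lambda>u. elen e - u) ` pset P e"
  then obtain u where u: "u \<in> pset P e" "t = elen e - u" by blast
  hence "u \<in> {0..elen e}" "epar e u \<in> P" unfolding pset_def by auto
  thus "t \<in> pset P (erev e)" unfolding pset_def using u by (auto simp: erev_par)
qed

lemma consec_erev:
  assumes "elen e \<ge> 0"
  shows "consec P (erev e) a b \<longleftrightarrow> consec P e (elen e - b) (elen e - a)"
proof -
  have m: "t \<in> pset P (erev e) \<longleftrightarrow> elen e - t \<in> pset P e" for t
    using pset_erev[OF assms, of P] by force
  have q: "(\<forall>t\<in>pset P (erev e). t \<le> a \<or> b \<le> t) \<longleftrightarrow> (\<forall>u\<in>pset P e. u \<le> elen e - b \<or> elen e - a \<le> u)"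
  proof
    assume h: "\<forall>t\<in>pset P (erev e). t \<le> a \<or> b \<le> t"
    show "\<forall>u\<in>pset P e. u \<le> elen e - b \<or> elen e - a \<le> u"
    proof
      fix u assume "u \<in> pset P e"
      hence "elen e - u \<in> pset P (erev e)" using m[of "elen e - u"] by simp
      thus "u \<le> elen e - b \<or> elen e - a \<le> u" using h by force
    qed
  next
    assume h: "\<forall>u\<in>pset P e. u \<le> elen e - b \<or> elen e - a \<le> u"
    show "\<forall>t\<in>pset P (erev e). t \<le> a \<or> b \<le> t"
    proof
      fix t assume "t \<in> pset P (erev e)"
      hence "elen e - t \<in> pset P e" using m by simp
      thus "t \<le> a \<or> b \<le> t" using h by force
    qed
  qed
  show ?thesis unfolding consec_def using m[of a] m[of b] q by auto
qed

lemma erev_piece: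
  assumes "consec P e a b"
  shows "erev (piece e a b) = piece (erev e) (elen e - b) (elen e - a)"
proof -
  have r: "0 \<le> a" "b \<le> elen e" "a < b" using consec_range[OF assms] by auto
  have "epar (erev (piece e a b)) x = epar (piece (erev e) (elen e - b) (elen e - a)) x" for x
  proof (cases "x \<in> {0..b-a}")
    case True
    have "epar (erev (piece e a b)) x = epar e (a + (b - a - x))"
      using True by (simp add: erev_par piece_par)
    moreover have "epar (piece (erev e) (elen e - b) (elen e - a)) x = epar (erev e) (elen e - b + x)"
      using True by (simp add: piece_par)
    moreover have "epar (erev e) (elen e - b + x) = epar e (elen e - (elen e - b + x))"
      using True r by (simp add: erev_par)
    ultimately show ?thesis by (simp add: algebra_simps)
  next
    case False
    thus ?thesis by (auto simp: erev_def piece_def epar_def elen_def)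
  qed
  hence "snd (erev (piece e a b)) = snd (piece (erev e) (elen e - b) (elen e - a))"
    by (simp add: epar_def fun_eq_iff)
  moreover have "fst (erev (piece e a b)) = fst (piece (erev e) (elen e - b) (elen e - a))"
    by (simp add: erev_def piece_def)
  ultimately show ?thesis by (simp add: prod_eq_iff)
qed

lemma pset_finite:
  assumes wf: "wf_wmg S" and e: "e \<in> edges S" and P: "finite P"
  shows "finite (pset P e)"
proof -
  have "inj_on (epar e) (pset P e)" using wf_edgeD(3)[OF wf e] unfolding pset_def
    by (rule inj_on_subset) auto
  moreover have "epar e ` pset P e \<subseteq> P" unfolding pset_def by auto
  ultimately show ?thesis using P finite_imageD finite_subset by metis
qed

lemma piece_uniq:
  assumes wf: "wf_wmg S" and e: "e \<in> edges S" and e2: "e2 \<in> edges S"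
    and c1: "consec P e a b" and c2: "consec P e2 c d" and eq: "piece e a b = piece e2 c d"
  shows "e2 = e \<and> c = a \<and> d = b"
proof -
  have r1: "0 \<le> a" "b \<le> elen e" "a < b" using consec_range[OF c1] by auto
  have r2: "0 \<le> c" "d \<le> elen e2" "c < d" using consec_range[OF c2] by auto
  have len: "d - c = b - a" using arg_cong[OF eq, of elen] by simp
  have "e2 = e \<and> c = a \<and> 1 = (1::real)"
  proof (rule AF[OF wf e e2, of "b - a"])
    fix x assume x: "0 \<le> x" "x \<le> b - a"
    have "epar (piece e a b) x = epar (piece e2 c d) x" using eq by simp
    hence "epar e (a + x) = epar e2 (c + x)" using x len by (simp add: piece_par)
    thus "a + 1 * x \<in> {0..elen e} \<and> c + 1 * x \<in> {0..elen e2} \<and> epar e (a + 1 * x) = epar e2 (c + 1 * x)"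
      using x r1 r2 len by auto
  qed (use r1 in auto)
  thus ?thesis using len by auto
qed

lemma consec_same:
  assumes "consec P e a1 b1" "consec P e a2 b2" "a1 < s" "s < b1" "a2 < s" "s < b2"
  shows "a1 = a2 \<and> b1 = b2"
proof -
  have "a2 \<le> a1 \<or> b1 \<le> a2" "b2 \<le> a1 \<or> b1 \<le> b2" "a1 \<le> a2 \<or> b2 \<le> a1" "b1 \<le> a2 \<or> b2 \<le> b1"
    using assms unfolding consec_def by blast+
  thus ?thesis using assms(3-6) by linarith
qed

lemma subw_simps[simp]: "verts (subw S P) = P" "bdry (subw S P) = bdry S"
  "edges (subw S P) = {piece e a b | e a b. e \<in> edges S \<and> consec P e a b}"
  by (simp_all add: subw_def)

lemma subw_edgeI: "e \<in> edges S \<Longrightarrow> consec P e a b \<Longrightarrow> piece e a b \<in> edges (subw S P)"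
  unfolding subw_simps by blast

lemma subw_weight:
  assumes wf: "wf_wmg S" and e: "e \<in> edges S" and c: "consec P e a b"
  shows "weight (subw S P) (piece e a b) = weight S e"
proof -
  let ?Q = "\<lambda>e'. e' \<in> edges S \<and> (\<exists>a' b'. consec P e' a' b' \<and> piece e a b = piece e' a' b')"
  have "?Q e" using e c by blast
  hence "?Q (SOME e'. ?Q e')" by (rule someI)
  then obtain a' b' where h: "(SOME e'. ?Q e') \<in> edges S" "consec P (SOME e'. ?Q e') a' b'"
    "piece e a b = piece (SOME e'. ?Q e') a' b'" by blast
  have "(SOME e'. ?Q e') = e" using piece_uniq[OF wf e h(1) c h(2) h(3)] by blast
  thus ?thesis by (simp add: subw_def)
qed

lemma subw_edgeE:
  assumes "q \<in> edges (subw S P)"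
  obtains e a b where "e \<in> edges S" "consec P e a b" "q = piece e a b"
  using assms by auto

lemma SUB:
  assumes wf: "wf_wmg S" and P: "finite P" "verts S \<subseteq> P" "P \<subseteq> points S"
  shows "subdivision (subw S P) S"
proof -
  let ?T = "subw S P"
  have fin_e: "finite (edges ?T)"
  proof -
    have "edges ?T \<subseteq> (\<Union>e\<in>edges S. (\<lambda>(a,b). piece e a b) ` (pset P e \<times> pset P e))"
    proof (rule subsetI)
      fix q assume "q \<in> edges ?T"
      then obtain e a b where e: "e \<in> edges S" "consec P e a b" "q = piece e a b" by (rule subw_edgeE)
      have ab: "(a, b) \<in> pset P e \<times> pset P e" using e(2) unfolding consec_def by auto
      have "q \<in> (\<lambda>(a,b). piece e a b) ` (pset P e \<times> pset P e)"
        by (rule image_eqI[OF _ ab]) (simp add: e(3))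
      thus "q \<in> (\<Union>e\<in>edges S. (\<lambda>(a,b). piece e a b) ` (pset P e \<times> pset P e))" using e(1) by blast
    qed
    moreover have "finite (\<Union>e\<in>edges S. (\<lambda>(a,b). piece e a b) ` (pset P e \<times> pset P e))"
      using wf_finite(2)[OF wf] pset_finite[OF wf _ P(1)] by auto
    ultimately show ?thesis by (rule finite_subset)
  qed
  have edge_props: "elen q > 0 \<and>
        (\<forall>x. x \<notin> {0..elen q} \<longrightarrow> epar q x = undefined) \<and>
        inj_on (epar q) {0..elen q} \<and>
        esrc q \<in> verts ?T \<and> etgt q \<in> verts ?T \<and> esrc q \<noteq> etgt q \<and>
        einterior q \<inter> verts ?T = {} \<and>
        erev q \<in> edges ?T \<and> weight ?T (erev q) = weight ?T q \<and> weight ?T q > 0"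
    if q: "q \<in> edges ?T" for q
  proof -
    from q obtain e a b where e: "e \<in> edges S" "consec P e a b" "q = piece e a b" by (rule subw_edgeE)
    have r: "0 \<le> a" "b \<le> elen e" "a < b" using consec_range[OF e(2)] by auto
    have ab: "a \<in> pset P e" "b \<in> pset P e" using e(2) unfolding consec_def by auto
    have l: "elen e > 0" using wf_edgeD(1)[OF wf e(1)] .
    have p1: "elen q > 0" using e r by simp
    have p2: "\<forall>x. x \<notin> {0..elen q} \<longrightarrow> epar q x = undefined" using e by (simp add: piece_undef)
    have p3: "inj_on (epar q) {0..elen q}"
    proof (rule inj_onI)
      fix x y assume xy: "x \<in> {0..elen q}" "y \<in> {0..elen q}" "epar q x = epar q y"
      hence "epar e (a + x) = epar e (a + y)" using e by (simp add: piece_par)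
      hence "a + x = a + y" using wf_inj[OF wf e(1), of "a+x" "a+y"] xy r e by auto
      thus "x = y" by simp
    qed
    have src: "esrc q = epar e a" using e r by (simp add: esrc_def piece_par)
    have tgt: "etgt q = epar e b" using e r by (simp add: etgt_def piece_par)
    have p4: "esrc q \<in> verts ?T" "etgt q \<in> verts ?T" using src tgt ab unfolding pset_def by auto
    have p5: "esrc q \<noteq> etgt q" using src tgt wf_inj[OF wf e(1), of a b] r by auto
    have p6: "einterior q \<inter> verts ?T = {}"
    proof -
      { fix x assume x: "0 < x" "x < elen q" "epar q x \<in> P"
        hence "epar e (a + x) \<in> P" using e by (simp add: piece_par)
        hence "a + x \<in> pset P e" unfolding pset_def using x r e by auto
        hence False using e(2) x e unfolding consec_def by force }
      thus ?thesis unfolding einterior_def by auto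
    qed
    have ce: "consec P (erev e) (elen e - b) (elen e - a)" using consec_erev[of e P] e(2) l by simp
    have p7: "erev q \<in> edges ?T" using erev_piece[OF e(2)] subw_edgeI[OF wf_edgeD(8)[OF wf e(1)] ce] e(3) by simp
    have p8: "weight ?T (erev q) = weight ?T q"
      using erev_piece[OF e(2)] subw_weight[OF wf wf_edgeD(8)[OF wf e(1)] ce] subw_weight[OF wf e(1,2)]
        wf_edgeD(9)[OF wf e(1)] e(3) by simp
    have p9: "weight ?T q > 0" using subw_weight[OF wf e(1,2)] wf_edgeD(10)[OF wf e(1)] e(3) by simp
    show ?thesis using p1 p2 p3 p4 p5 p6 p7 p8 p9 by blast
  qed
  have disj: "einterior q1 \<inter> einterior q2 = {}"
    if q: "q1 \<in> edges ?T" "q2 \<in> edges ?T" "q2 \<noteq> q1" "q2 \<noteq> erev q1" for q1 q2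
  proof (rule ccontr)
    assume "einterior q1 \<inter> einterior q2 \<noteq> {}"
    then obtain x1 x2 where x: "0 < x1" "x1 < elen q1" "0 < x2" "x2 < elen q2" "epar q1 x1 = epar q2 x2"
      unfolding einterior_def by auto
    from q(1) obtain e1 a1 b1 where e1: "e1 \<in> edges S" "consec P e1 a1 b1" "q1 = piece e1 a1 b1" by (rule subw_edgeE)
    from q(2) obtain e2 a2 b2 where e2: "e2 \<in> edges S" "consec P e2 a2 b2" "q2 = piece e2 a2 b2" by (rule subw_edgeE)
    have r1: "0 \<le> a1" "b1 \<le> elen e1" "a1 < b1" using consec_range[OF e1(2)] by auto
    have r2: "0 \<le> a2" "b2 \<le> elen e2" "a2 < b2" using consec_range[OF e2(2)] by auto
    have eq: "epar e1 (a1 + x1) = epar e2 (a2 + x2)" using x e1 e2 by (simp add: piece_par)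
    have "(e2 = e1 \<and> a2 + x2 = a1 + x1) \<or> (e2 = erev e1 \<and> a2 + x2 = elen e1 - (a1 + x1))"
      by (rule W4[OF wf e1(1) e2(1)]) (use x r1 r2 e1 e2 eq in auto)
    thus False
    proof
      assume h: "e2 = e1 \<and> a2 + x2 = a1 + x1"
      hence "a1 = a2 \<and> b1 = b2" using consec_same[OF e1(2), of a2 b2 "a1 + x1"] e2(2) x e1 e2 by auto
      thus False using h e1 e2 q(3) by simp
    next
      assume h: "e2 = erev e1 \<and> a2 + x2 = elen e1 - (a1 + x1)"
      have l: "elen e1 > 0" using wf_edgeD(1)[OF wf e1(1)] .
      have c: "consec P e1 (elen e1 - b2) (elen e1 - a2)" using e2(2) h consec_erev[of e1 P] l by simp
      have "a1 = elen e1 - b2 \<and> b1 = elen e1 - a2"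
        using consec_same[OF e1(2) c, of "a1 + x1"] x e1 e2 h by auto
      hence "q2 = erev q1" using erev_piece[OF e1(2)] e1 e2 h by simp
      thus False using q(4) by simp
    qed
  qed
  have wfT: "wf_wmg ?T"
    unfolding wf_wmg_def using P(1) fin_e wf_finite(3)[OF wf] P(2) edge_props disj by auto
  have pts: "points ?T = points S"
  proof
    show "points ?T \<subseteq> points S"
    proof
      fix x assume "x \<in> points ?T"
      hence "x \<in> P \<or> (\<exists>q\<in>edges ?T. x \<in> epar q ` {0..elen q})" unfolding points_def by auto
      thus "x \<in> points S"
      proof
        assume "x \<in> P" thus ?thesis using P(3) by auto
      next
        assume "\<exists>q\<in>edges ?T. x \<in> epar q ` {0..elen q}"
        then obtain q t where q: "q \<in> edges ?T" "t \<in> {0..elen q}" "x = epar q t" by blast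
        from q(1) obtain e a b where e0: "e \<in> edges S" "consec P e a b" "q = piece e a b" by (rule subw_edgeE)
        have e: "e \<in> edges S" "consec P e a b" "t \<in> {0..b - a}" "x = epar (piece e a b) t"
          using e0 q by auto
        have r: "0 \<le> a" "b \<le> elen e" "a < b" using consec_range[OF e(2)] by auto
        have "x = epar e (a + t)" using e by (simp add: piece_par)
        thus ?thesis using edge_points[OF e(1), of "a + t"] r e by auto
      qed
    qed
  next
    show "points S \<subseteq> points ?T"
    proof
      fix x assume x: "x \<in> points S"
      show "x \<in> points ?T"
      proof (cases "x \<in> P")
        case True thus ?thesis unfolding points_def by auto
      next
        case False
        hence "x \<notin> verts S" using P(2) by auto
        then obtain e t where e: "e \<in> edges S" "0 < t" "t < elen e" "x = epar e t"
          using points_cases[OF wf x] by blast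
        let ?A = "pset P e"
        have finA: "finite ?A" using pset_finite[OF wf e(1) P(1)] .
        have 0: "0 \<in> ?A" using wf_edgeD(4)[OF wf e(1)] wf_edgeD(1)[OF wf e(1)] P(2)
          unfolding pset_def esrc_def by auto
        have L: "elen e \<in> ?A" using wf_edgeD(5)[OF wf e(1)] wf_edgeD(1)[OF wf e(1)] P(2)
          unfolding pset_def etgt_def by auto
        have tA: "t \<notin> ?A" using False e unfolding pset_def by auto
        define a where "a = Max {s\<in>?A. s \<le> t}"
        define b where "b = Min {s\<in>?A. t \<le> s}"
        have f1: "finite {s\<in>?A. s \<le> t}" "finite {s\<in>?A. t \<le> s}" using finA by auto
        have n1: "0 \<in> {s\<in>?A. s \<le> t}" using 0 e by auto
        have n2: "elen e \<in> {s\<in>?A. t \<le> s}" using L e by auto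
        have aA: "a \<in> ?A" "a \<le> t" using Max_in[OF f1(1)] n1 unfolding a_def by auto
        have bA: "b \<in> ?A" "t \<le> b" using Min_in[OF f1(2)] n2 unfolding b_def by auto
        have at: "a < t" using aA tA by (cases "a = t") auto
        have tb: "t < b" using bA tA by (cases "b = t") auto
        have c: "consec P e a b"
          unfolding consec_def
        proof (intro conjI ballI)
          fix u assume u: "u \<in> ?A"
          show "u \<le> a \<or> b \<le> u"
          proof (cases "u \<le> t")
            case True thus ?thesis using Max_ge[OF f1(1)] u unfolding a_def by auto
          next
            case False thus ?thesis using Min_le[OF f1(2)] u unfolding b_def by auto
          qed
        qed (use aA bA at tb in auto)
        have "x = epar (piece e a b) (t - a)" using e at tb by (simp add: piece_par)
        moreover have "piece e a b \<in> edges ?T" using subw_edgeI[OF e(1) c] .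
        moreover have "t - a \<in> {0..elen (piece e a b)}" using at tb by simp
        ultimately show ?thesis unfolding points_def by blast
      qed
    qed
  qed
  show ?thesis
    unfolding subdivision_def
  proof (intro conjI ballI)
    fix q assume q: "q \<in> edges ?T"
    then obtain e a b where e: "e \<in> edges S" "consec P e a b" "q = piece e a b" by (rule subw_edgeE)
    have r: "0 \<le> a" "b \<le> elen e" "a < b" using consec_range[OF e(2)] by auto
    show "\<exists>e\<in>edges S. \<exists>a. 0 \<le> a \<and> a + elen q \<le> elen e \<and>
        (\<forall>x\<in>{0..elen q}. epar q x = epar e (a + x)) \<and> weight ?T q = weight S e"
      using e r subw_weight[OF wf e(1,2)] by (intro bexI[OF _ e(1)] exI[of _ a]) (auto simp: piece_par)
  qed (use wfT pts P(2) in auto)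
qed

section \<open>Refinement of harmonic maps\<close>

lemma mapsD: "maps_onto \<phi> f g \<Longrightarrow> 0 \<le> x \<Longrightarrow> x \<le> elen f \<Longrightarrow> \<phi> (epar f x) = epar g (elen g / elen f * x)"
  unfolding maps_onto_def by auto

lemma maps_onto_erev:
  assumes m: "maps_onto \<phi> f g" and f: "elen f > 0" and g: "elen g \<ge> 0"
  shows "maps_onto \<phi> (erev f) (erev g)"
  unfolding maps_onto_def
proof
  fix x assume x: "x \<in> {0..elen (erev f)}"
  have r: "elen g / elen f * x \<in> {0..elen g}"
  proof -
    have "elen g / elen f * x \<le> elen g / elen f * elen f"
      using x f g by (intro mult_left_mono) auto
    thus ?thesis using x f g by auto
  qed
  have "\<phi> (epar (erev f) x) = \<phi> (epar f (elen f - x))" using x by (simp add: erev_par)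
  also have "\<dots> = epar g (elen g / elen f * (elen f - x))" using mapsD[OF m, of "elen f - x"] x by auto
  also have "elen g / elen f * (elen f - x) = elen g - elen g / elen f * x" using f by (simp add: field_simps)
  also have "epar g (elen g - elen g / elen f * x) = epar (erev g) (elen g / elen f * x)"
    using r by (simp add: erev_par)
  finally show "\<phi> (epar (erev f) x) = epar (erev g) (elen (erev g) / elen (erev f) * x)" by simp
qed

lemma maps_not_contracted:
  assumes wf: "wf_wmg S" and q: "q \<in> edges S" and p: "elen p > 0" and m: "maps_onto \<phi> p q"
  shows "\<not> contracted \<phi> p"
proof
  assume "contracted \<phi> p"
  then obtain v where v: "\<forall>x\<in>{0..elen p}. \<phi> (epar p x) = v" unfolding contracted_def by blast
  have "epar q 0 = v" using mapsD[OF m, of 0] v p by auto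
  moreover have "epar q (elen q) = v" using mapsD[OF m, of "elen p"] v p by auto
  ultimately show False using wf_edgeD(6)[OF wf q] by (simp add: esrc_def etgt_def)
qed

lemma FV:
  assumes wf: "wf_wmg X" and f: "f \<in> edges X" and V: "finite V" and fl: "epar f (elen f) \<in> V"
    and a: "0 \<le> a" "a < elen f"
  shows "\<exists>b. a < b \<and> b \<le> elen f \<and> epar f b \<in> V \<and> (\<forall>s. a < s \<and> s < b \<longrightarrow> epar f s \<notin> V)"
proof -
  let ?Z = "{s\<in>{a<..elen f}. epar f s \<in> V}"
  have "inj_on (epar f) ?Z" using wf_edgeD(3)[OF wf f] by (rule inj_on_subset) (use a in auto)
  moreover have "epar f ` ?Z \<subseteq> V" by auto
  ultimately have fin: "finite ?Z" using V finite_imageD finite_subset by metis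
  have ne: "elen f \<in> ?Z" using fl a by auto
  define b where "b = Min ?Z"
  have b: "b \<in> ?Z" using Min_in[OF fin] ne unfolding b_def by auto
  have "\<forall>s. a < s \<and> s < b \<longrightarrow> epar f s \<notin> V"
  proof (intro allI impI)
    fix s assume s: "a < s \<and> s < b"
    show "epar f s \<notin> V"
    proof
      assume "epar f s \<in> V"
      hence "s \<in> ?Z" using s b by auto
      hence "b \<le> s" using Min_le[OF fin] unfolding b_def by auto
      thus False using s by simp
    qed
  qed
  thus ?thesis using b by auto
qed

locale refine_setup =
  fixes S' :: "'p wmg" and S :: "'q wmg" and T' T B' B :: "_ wmg" and \<phi> :: "'p \<Rightarrow> 'q"
  assumes wfS': "wf_wmg S'" and wfS: "wf_wmg S"
    and T': "subdivision T' S'" and T: "subdivision T S"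
    and pl: "pl_comb T' T \<phi>" and nc: "\<forall>f\<in>edges T'. \<not> contracted \<phi> f"
    and B': "subdivision B' S'" and B: "subdivision B S"
    and v1: "verts T' \<subseteq> verts B'" and v2: "verts T \<subseteq> verts B"
    and img: "\<phi> ` verts B' \<subseteq> verts B"
    and pre: "\<forall>x\<in>points S'. \<phi> x \<in> verts B \<longrightarrow> x \<in> verts B'"
begin

lemma wfT': "wf_wmg T'" and wfT: "wf_wmg T" and wfB': "wf_wmg B'" and wfB: "wf_wmg B"
  using T' T B' B subdiv_wf by auto

lemma f_maps: "f \<in> edges T' \<Longrightarrow> \<exists>g\<in>edges T. maps_onto \<phi> f g"
  using pl nc unfolding pl_comb_def by blast

lemma IMG:
  assumes p: "p \<in> edges B'" and f: "f \<in> edges T'" and s: "seg f c p"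
    and g: "g \<in> edges T" and m: "maps_onto \<phi> f g"
  shows "\<exists>q\<in>edges B. maps_onto \<phi> p q \<and> seg g (elen g / elen f * c) q \<and> elen q = elen g / elen f * elen p"
proof -
  define k where "k = elen g / elen f"
  have lf: "elen f > 0" using wf_edgeD(1)[OF wfT' f] .
  have lg: "elen g > 0" using wf_edgeD(1)[OF wfT g] .
  have lp: "elen p > 0" using wf_edgeD(1)[OF wfB' p] .
  have k: "k > 0" using lf lg k_def by simp
  have cs: "0 \<le> c" "c + elen p \<le> elen f" using s unfolding seg_def by auto
  have gk: "epar g (k * y) = \<phi> (epar f y)" if "0 \<le> y" "y \<le> elen f" for y
    using mapsD[OF m that] k_def by simp
  have pf: "epar p x = epar f (c + x)" if "0 \<le> x" "x \<le> elen p" for x using segD[OF s that] .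
  have ptsB': "epar p x \<in> points S'" if "0 \<le> x" "x \<le> elen p" for x
    using edge_points[OF p, of x] that subdiv_points[OF B'] by auto
  have "\<exists>q\<in>edges B. elen q = k * (c + elen p) - k * c \<and> seg g (k * c) q"
  proof (rule GL[OF wfS T B v2 g])
    show "0 \<le> k * c" using k cs by simp
    show "k * c < k * (c + elen p)" using k lp by simp
    have "k * (c + elen p) \<le> k * elen f" using k cs by (intro mult_left_mono) auto
    thus "k * (c + elen p) \<le> elen g" using lf k_def by simp
    have "epar g (k * c) = \<phi> (epar p 0)" using gk[of c] pf[of 0] cs lp by simp
    moreover have "epar p 0 \<in> verts B'" using wf_edgeD(4)[OF wfB' p] by (simp add: esrc_def)
    ultimately show "epar g (k * c) \<in> verts B" using img by auto
    have "epar g (k * (c + elen p)) = \<phi> (epar p (elen p))" using gk[of "c + elen p"] pf[of "elen p"] cs lp by simp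
    moreover have "epar p (elen p) \<in> verts B'" using wf_edgeD(5)[OF wfB' p] by (simp add: etgt_def)
    ultimately show "epar g (k * (c + elen p)) \<in> verts B" using img by auto
  next
    fix s assume s: "k * c < s" "s < k * (c + elen p)"
    define y where "y = s / k - c"
    have y: "0 < y" "y < elen p" using s k unfolding y_def by (auto simp: field_simps)
    have "s = k * (c + y)" using k unfolding y_def by (simp add: field_simps)
    hence "epar g s = \<phi> (epar p y)" using gk[of "c + y"] pf[of y] y cs by simp
    moreover have "epar p y \<notin> verts B'" using wf_interior_notvert[OF wfB' p y] .
    ultimately show "epar g s \<notin> verts B" using pre ptsB'[of y] y by auto
  qed
  then obtain q where q: "q \<in> edges B" "elen q = k * elen p" "seg g (k * c) q" by (auto simp: algebra_simps)
  have "maps_onto \<phi> p q"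
    unfolding maps_onto_def
  proof
    fix x assume x: "x \<in> {0..elen p}"
    have "\<phi> (epar p x) = epar g (k * (c + x))" using gk[of "c + x"] pf[of x] x cs by simp
    also have "\<dots> = epar q (k * x)" using segD[OF q(3), of "k * x"] x k q(2)
      by (auto simp: algebra_simps intro: mult_left_mono)
    also have "k * x = elen q / elen p * x" using q(2) lp by simp
    finally show "\<phi> (epar p x) = epar q (elen q / elen p * x)" .
  qed
  thus ?thesis using q k_def by auto
qed

lemma img_unique:
  assumes p: "p \<in> edges B'" and f: "f \<in> edges T'" and s: "seg f c p"
    and g: "g \<in> edges T" and m: "maps_onto \<phi> f g" and q: "q \<in> edges B" and mq: "maps_onto \<phi> p q"
  shows "seg g (elen g / elen f * c) q \<and> elen q = elen g / elen f * elen p"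
proof -
  obtain q' where q': "q' \<in> edges B" "maps_onto \<phi> p q'" "seg g (elen g / elen f * c) q'"
    "elen q' = elen g / elen f * elen p" using IMG[OF p f s g m] by blast
  have "q = q'" using MT[OF wfB q'(1) q wf_edgeD(1)[OF wfB' p] q'(2) mq] .
  thus ?thesis using q' by simp
qed

lemma seg_same_start:
  assumes wf: "wf_wmg X" and a: "a \<in> edges X" and b: "b \<in> edges X"
    and sa: "seg f c a" and sb: "seg f c b"
  shows "b = a"
proof -
  define L where "L = min (elen a) (elen b)"
  have L: "L > 0" using wf_edgeD(1)[OF wf a] wf_edgeD(1)[OF wf b] L_def by simp
  have "a = b \<and> 0 = (0::real) \<and> 1 = (1::real)"
  proof (rule AF[OF wf b a L])
    fix x assume x: "0 \<le> x" "x \<le> L"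
    have "epar a x = epar f (c + x)" using segD[OF sa, of x] x L_def by auto
    moreover have "epar b x = epar f (c + x)" using segD[OF sb, of x] x L_def by auto
    ultimately show "0 + 1 * x \<in> {0..elen b} \<and> 0 + 1 * x \<in> {0..elen a} \<and> epar b (0 + 1 * x) = epar a (0 + 1 * x)"
      using x L_def by auto
  qed auto
  thus ?thesis by simp
qed

lemma seg_same_edge:
  assumes wf: "wf_wmg X" and f1: "f1 \<in> edges X" and f2: "f2 \<in> edges X"
    and s1: "seg f1 c1 p" and s2: "seg f2 c2 p" and lp: "elen p > 0"
  shows "f2 = f1 \<and> c2 = c1"
proof -
  have "f2 = f1 \<and> c2 = c1 \<and> 1 = (1::real)"
  proof (rule AF[OF wf f1 f2 lp])
    fix x assume x: "0 \<le> x" "x \<le> elen p"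
    show "c1 + 1 * x \<in> {0..elen f1} \<and> c2 + 1 * x \<in> {0..elen f2} \<and> epar f1 (c1 + 1 * x) = epar f2 (c2 + 1 * x)"
      using segD[OF s1, of x] segD[OF s2, of x] x s1 s2 unfolding seg_def by auto
  qed auto
  thus ?thesis by simp
qed

lemma pl_B: "pl_comb B' B \<phi>" and nc_B: "\<forall>p\<in>edges B'. \<not> contracted \<phi> p"
proof -
  have edge: "\<exists>q\<in>edges B. maps_onto \<phi> p q" if p: "p \<in> edges B'" for p
  proof -
    obtain f c where f: "f \<in> edges T'" "seg f c p" using RF[OF wfS' T' B' v1 p] by blast
    obtain g where g: "g \<in> edges T" "maps_onto \<phi> f g" using f_maps[OF f(1)] by blast
    show ?thesis using IMG[OF p f g] by blast
  qed
  show ncB: "\<forall>p\<in>edges B'. \<not> contracted \<phi> p"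
    using edge maps_not_contracted[OF wfB] wf_edgeD(1)[OF wfB'] by blast
  show "pl_comb B' B \<phi>"
    unfolding pl_comb_def
  proof (intro conjI ballI impI)
    show "\<phi> ` points B' \<subseteq> points B"
      using pl subdiv_points[OF T'] subdiv_points[OF T] subdiv_points[OF B'] subdiv_points[OF B]
      unfolding pl_comb_def by auto
    show "\<phi> ` verts B' \<subseteq> verts B" using img .
    fix p assume "p \<in> edges B'"
    thus "contracted \<phi> p \<or> (\<exists>q\<in>edges B. maps_onto \<phi> p q)" using edge by blast
  next
    fix v' assume v': "v' \<in> verts B'" and h: "\<phi> v' \<in> bdry B \<and> (\<exists>p\<in>edges B'. esrc p = v' \<and> \<not> contracted \<phi> p)"
    then obtain p where p: "p \<in> edges B'" "esrc p = v'" by blast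
    obtain f c where f: "f \<in> edges T'" "seg f c p" using RF[OF wfS' T' B' v1 p(1)] by blast
    obtain g where g: "g \<in> edges T" "maps_onto \<phi> f g" using f_maps[OF f(1)] by blast
    have lp: "elen p > 0" using wf_edgeD(1)[OF wfB' p(1)] .
    have lf: "elen f > 0" using wf_edgeD(1)[OF wfT' f(1)] .
    have lg: "elen g > 0" using wf_edgeD(1)[OF wfT g(1)] .
    have cs: "0 \<le> c" "c + elen p \<le> elen f" using f(2) unfolding seg_def by auto
    have vf: "v' = epar f c" using p(2) segD[OF f(2), of 0] lp by (simp add: esrc_def)
    show "v' \<in> bdry B'"
    proof (cases "c = 0")
      case True
      hence "esrc f = v'" using vf by (simp add: esrc_def)
      moreover have "v' \<in> verts T'" using wf_edgeD(4)[OF wfT' f(1)] calculation by simp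
      moreover have "\<phi> v' \<in> bdry T" using h subdiv_bdry[OF T] subdiv_bdry[OF B] by simp
      ultimately have "v' \<in> bdry T'" using pl f(1) nc unfolding pl_comb_def by blast
      thus ?thesis using subdiv_bdry[OF T'] subdiv_bdry[OF B'] by simp
    next
      case False
      hence c: "0 < c" "c < elen f" using cs lp by auto
      have "\<phi> v' = epar g (elen g / elen f * c)" using mapsD[OF g(2), of c] vf c by simp
      moreover have "0 < elen g / elen f * c" "elen g / elen f * c < elen g"
        using c lf lg by (auto simp: field_simps)
      ultimately have "\<phi> v' \<notin> verts T" using wf_interior_notvert[OF wfT g(1)] by simp
      moreover have "\<phi> v' \<in> verts T" using h subdiv_bdry[OF B] wf_finite(3)[OF wfS] subdiv_verts[OF T] by auto
      ultimately show ?thesis by simp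
    qed
  qed
qed

definition par_of :: "'p edge \<Rightarrow> 'p edge" where
  "par_of p = (THE f. f \<in> edges T' \<and> seg f 0 p)"

definition ini_of :: "'p edge \<Rightarrow> 'p edge" where
  "ini_of f = (THE p. p \<in> edges B' \<and> seg f 0 p)"

lemma par_ok:
  assumes p: "p \<in> edges B'" and v: "esrc p \<in> verts T'"
  shows "par_of p \<in> edges T' \<and> seg (par_of p) 0 p"
proof -
  obtain f c where f: "f \<in> edges T'" "seg f c p" using RF[OF wfS' T' B' v1 p] by blast
  have lp: "elen p > 0" using wf_edgeD(1)[OF wfB' p] .
  have cs: "0 \<le> c" "c + elen p \<le> elen f" using f(2) unfolding seg_def by auto
  have vf: "esrc p = epar f c" using segD[OF f(2), of 0] lp by (simp add: esrc_def)
  have c0: "c = 0"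
  proof (rule ccontr)
    assume "c \<noteq> 0"
    hence "0 < c" "c < elen f" using cs lp by auto
    thus False using wf_interior_notvert[OF wfT' f(1)] vf v by simp
  qed
  have ex: "f \<in> edges T' \<and> seg f 0 p" using f c0 by simp
  have "par_of p = f"
    unfolding par_of_def
  proof (rule the_equality)
    show "f \<in> edges T' \<and> seg f 0 p" using ex .
    fix f' assume "f' \<in> edges T' \<and> seg f' 0 p"
    thus "f' = f" using seg_same_edge[OF wfT' f(1) _ _ _ lp] ex by blast
  qed
  thus ?thesis using ex by simp
qed

lemma ini_ok:
  assumes f: "f \<in> edges T'"
  shows "ini_of f \<in> edges B' \<and> seg f 0 (ini_of f)"
proof -
  have lf: "elen f > 0" using wf_edgeD(1)[OF wfT' f] .
  have fl: "epar f (elen f) \<in> verts B'" using wf_edgeD(5)[OF wfT' f] v1 by (auto simp: etgt_def)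
  have f0: "epar f 0 \<in> verts B'" using wf_edgeD(4)[OF wfT' f] v1 by (auto simp: esrc_def)
  obtain b where b: "0 < b" "b \<le> elen f" "epar f b \<in> verts B'" "\<forall>s. 0 < s \<and> s < b \<longrightarrow> epar f s \<notin> verts B'"
    using FV[OF wfT' f wf_finite(1)[OF wfB'] fl, of 0] lf by auto
  obtain p where p: "p \<in> edges B'" "seg f 0 p"
    using GL[OF wfS' T' B' v1 f, of 0 b] b f0 by auto
  have "ini_of f = p"
    unfolding ini_of_def
  proof (rule the_equality)
    show "p \<in> edges B' \<and> seg f 0 p" using p by simp
    fix p' assume "p' \<in> edges B' \<and> seg f 0 p'"
    thus "p' = p" using seg_same_start[OF wfB' p(1)] p by blast
  qed
  thus ?thesis using p by simp
qed

lemma harm_B: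
  assumes harm: "\<forall>v'\<in>verts T' - bdry T'. harmonic_at T' T \<phi> v'"
  shows "\<forall>v'\<in>verts B' - bdry B'. harmonic_at B' B \<phi> v'"
proof
  fix v' assume v': "v' \<in> verts B' - bdry B'"
  have nb: "v' \<notin> bdry T'" using v' subdiv_bdry[OF T'] subdiv_bdry[OF B'] by auto
  let ?AB = "\<lambda>q. {p\<in>edges B'. esrc p = v' \<and> maps_onto \<phi> p q}"
  let ?tB = "\<lambda>q p. real (weight B' p) / real (weight B q) * (elen q / elen p)"
  show "harmonic_at B' B \<phi> v'"
  proof (cases "v' \<in> verts T'")
    case True
    obtain c0 where c0: "\<forall>g\<in>edges T. esrc g = \<phi> v' \<longrightarrow>
        (\<Sum>f\<in>{f\<in>edges T'. esrc f = v' \<and> maps_onto \<phi> f g}.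
            real (weight T' f) / real (weight T g) * (elen g / elen f)) = c0"
      using harm True nb unfolding harmonic_at_def by blast
    have "\<forall>q\<in>edges B. esrc q = \<phi> v' \<longrightarrow> sum (?tB q) (?AB q) = c0"
    proof (intro ballI impI)
      fix q assume q: "q \<in> edges B" and qs: "esrc q = \<phi> v'"
      obtain g d where g: "g \<in> edges T" "seg g d q" using RF[OF wfS T B v2 q] by blast
      have lq: "elen q > 0" using wf_edgeD(1)[OF wfB q] .
      have ds: "0 \<le> d" "d + elen q \<le> elen g" using g(2) unfolding seg_def by auto
      have vq: "\<phi> v' = epar g d" using qs segD[OF g(2), of 0] lq by (simp add: esrc_def)
      have vT: "\<phi> v' \<in> verts T" using pl True unfolding pl_comb_def by auto
      have d0: "d = 0"
      proof (rule ccontr)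
        assume "d \<noteq> 0"
        hence "0 < d" "d < elen g" using ds lq by auto
        thus False using wf_interior_notvert[OF wfT g(1)] vq vT by simp
      qed
      have gs: "esrc g = \<phi> v'" using vq d0 by (simp add: esrc_def)
      have sq: "seg g 0 q" using g(2) d0 by simp
      let ?AT = "{f\<in>edges T'. esrc f = v' \<and> maps_onto \<phi> f g}"
      let ?tT = "\<lambda>f. real (weight T' f) / real (weight T g) * (elen g / elen f)"
      have "sum ?tT ?AT = sum (?tB q) (?AB q)"
      proof (rule sum.reindex_bij_witness[of _ par_of ini_of])
        fix a assume a: "a \<in> ?AT"
        have ia: "ini_of a \<in> edges B'" "seg a 0 (ini_of a)" using ini_ok a by auto
        have li: "elen (ini_of a) > 0" using wf_edgeD(1)[OF wfB' ia(1)] .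
        have es: "esrc (ini_of a) = v'" using segD[OF ia(2), of 0] li a by (simp add: esrc_def)
        have pa: "par_of (ini_of a) \<in> edges T' \<and> seg (par_of (ini_of a)) 0 (ini_of a)"
          using par_ok[OF ia(1)] es True by simp
        have aT: "a \<in> edges T'" using a by simp
        show "par_of (ini_of a) = a" using seg_same_edge[OF wfT' aT conjunct1[OF pa] ia(2) conjunct2[OF pa] li] by simp
        obtain q' where q': "q' \<in> edges B" "maps_onto \<phi> (ini_of a) q'" "seg g (elen g / elen a * 0) q'"
          "elen q' = elen g / elen a * elen (ini_of a)"
          using IMG[OF ia(1) _ ia(2) g(1)] a by blast
        have "q' = q" using seg_same_start[OF wfB q q'(1) sq] q'(3) by simp
        thus "ini_of a \<in> ?AB q" using ia es q' by auto
        have w1: "weight B' (ini_of a) = weight T' a" using SW[OF wfS' T' B' _ ia(1) ia(2)] a by auto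
        have w2: "weight B q = weight T g" using SW[OF wfS T B g(1) q sq] .
        have la: "elen a > 0" using wf_edgeD(1)[OF wfT'] a by auto
        have "elen q / elen (ini_of a) = elen g / elen a" using q'(4) \<open>q' = q\<close> li la by simp
        thus "?tB q (ini_of a) = ?tT a" using w1 w2 by simp
      next
        fix b assume b: "b \<in> ?AB q"
        have pb: "par_of b \<in> edges T'" "seg (par_of b) 0 b" using par_ok[of b] b True by auto
        have lb: "elen b > 0" using wf_edgeD(1)[OF wfB'] b by auto
        show "ini_of (par_of b) = b"
          using seg_same_start[OF wfB' _ _ pb(2)] ini_ok[OF pb(1)] b by auto
        have es: "esrc (par_of b) = v'" using segD[OF pb(2), of 0] lb b by (simp add: esrc_def)
        obtain g' where g': "g' \<in> edges T" "maps_onto \<phi> (par_of b) g'" using f_maps[OF pb(1)] by blast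
        have "seg g' (elen g' / elen (par_of b) * 0) q" using img_unique[OF _ pb(1) pb(2) g'(1) g'(2) q] b by auto
        hence "g' = g" using seg_same_edge[OF wfT g(1) g'(1) sq _ lq] by simp
        thus "par_of b \<in> ?AT" using pb es g' by auto
      qed
      thus "sum (?tB q) (?AB q) = c0" using c0 g(1) gs by simp
    qed
    thus ?thesis unfolding harmonic_at_def by blast
  next
    case False
    have "v' \<in> points B'" using v' verts_points[of B'] by auto
    hence "v' \<in> points T'" using subdiv_points[OF T'] subdiv_points[OF B'] by simp
    then obtain f0 t0 where f0: "f0 \<in> edges T'" "0 < t0" "t0 < elen f0" "v' = epar f0 t0"
      using points_cases[OF wfT'] False by blast
    obtain g0 where g0: "g0 \<in> edges T" "maps_onto \<phi> f0 g0" using f_maps[OF f0(1)] by blast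
    have lf0: "elen f0 > 0" using wf_edgeD(1)[OF wfT' f0(1)] .
    have lg0: "elen g0 > 0" using wf_edgeD(1)[OF wfT g0(1)] .
    define k0 where "k0 = elen g0 / elen f0"
    have k0: "k0 > 0" using lf0 lg0 k0_def by simp
    define K where "K = real (weight T' f0) / real (weight T g0) * k0"
    have rf0: "erev f0 \<in> edges T'" using wf_edgeD(8)[OF wfT' f0(1)] .
    have rg0: "erev g0 \<in> edges T" using wf_edgeD(8)[OF wfT g0(1)] .
    have mr: "maps_onto \<phi> (erev f0) (erev g0)" using maps_onto_erev[OF g0(2) lf0] lg0 by simp
    have F1: "\<exists>f c. seg f c p \<and> ((f = f0 \<and> c = t0) \<or> (f = erev f0 \<and> c = elen f0 - t0))"
      if p: "p \<in> edges B'" "esrc p = v'" for p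
    proof -
      obtain f c where f: "f \<in> edges T'" "seg f c p" using RF[OF wfS' T' B' v1 p(1)] by blast
      have lp: "elen p > 0" using wf_edgeD(1)[OF wfB' p(1)] .
      have cs: "0 \<le> c" "c + elen p \<le> elen f" using f(2) unfolding seg_def by auto
      have vf: "v' = epar f c" using p(2) segD[OF f(2), of 0] lp by (simp add: esrc_def)
      have "c \<noteq> 0" using vf False wf_edgeD(4)[OF wfT' f(1)] by (auto simp: esrc_def)
      hence c: "0 < c" "c < elen f" using cs lp by auto
      have "(f = f0 \<and> c = t0) \<or> (f = erev f0 \<and> c = elen f0 - t0)"
        using W4[OF wfT' f0(1) f(1) f0(2,3) c] vf f0(4) by simp
      thus ?thesis using f by blast
    qed
    have TERM: "?tB q p = K" if q: "q \<in> edges B" and p: "p \<in> ?AB q" for q p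
    proof -
      have pe: "p \<in> edges B'" "esrc p = v'" "maps_onto \<phi> p q" using p by auto
      obtain f c where fc: "seg f c p" "(f = f0 \<and> c = t0) \<or> (f = erev f0 \<and> c = elen f0 - t0)"
        using F1[OF pe(1,2)] by blast
      define gf where "gf = (if f = f0 then g0 else erev g0)"
      have fe: "f \<in> edges T'" using fc(2) f0(1) rf0 by auto
      have ge: "gf \<in> edges T" "maps_onto \<phi> f gf" using fc(2) g0 rg0 mr wf_erev_neq[OF wfT' f0(1)]
        unfolding gf_def by auto
      have ln: "elen gf / elen f = k0" using fc(2) wf_erev_neq[OF wfT' f0(1)] unfolding gf_def k0_def by auto
      have iu: "seg gf (elen gf / elen f * c) q \<and> elen q = elen gf / elen f * elen p"
        using img_unique[OF pe(1) fe fc(1) ge q pe(3)] .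
      have w1: "weight B' p = weight T' f" using SW[OF wfS' T' B' fe pe(1) fc(1)] .
      have w1': "weight T' f = weight T' f0" using fc(2) wf_edgeD(9)[OF wfT' f0(1)] by auto
      have w2: "weight B q = weight T gf" using SW[OF wfS T B ge(1) q] iu by blast
      have w2': "weight T gf = weight T g0" using wf_edgeD(9)[OF wfT g0(1)] unfolding gf_def by auto
      have lp: "elen p > 0" using wf_edgeD(1)[OF wfB' pe(1)] .
      have "elen q / elen p = k0" using iu ln lp by simp
      thus ?thesis using w1 w1' w2 w2' K_def by simp
    qed
    have ONE: "\<exists>p. ?AB q = {p}" if q: "q \<in> edges B" "esrc q = \<phi> v'" for q
    proof -
      obtain g' d where g': "g' \<in> edges T" "seg g' d q" using RF[OF wfS T B v2 q(1)] by blast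
      have lq: "elen q > 0" using wf_edgeD(1)[OF wfB q(1)] .
      have ds: "0 \<le> d" "d + elen q \<le> elen g'" using g'(2) unfolding seg_def by auto
      have vq: "\<phi> v' = epar g' d" using q(2) segD[OF g'(2), of 0] lq by (simp add: esrc_def)
      have vg0: "\<phi> v' = epar g0 (k0 * t0)" using mapsD[OF g0(2), of t0] f0 k0_def by simp
      have kt: "0 < k0 * t0" "k0 * t0 < elen g0" using k0 f0 lf0 unfolding k0_def by (auto simp: field_simps)
      have nvT: "\<phi> v' \<notin> verts T" using wf_interior_notvert[OF wfT g0(1) kt] vg0 by simp
      have "d \<noteq> 0" using nvT vq wf_edgeD(4)[OF wfT g'(1)] by (auto simp: esrc_def)
      hence dd: "0 < d" "d < elen g'" using ds lq by auto
      have W: "(g' = g0 \<and> d = k0 * t0) \<or> (g' = erev g0 \<and> d = elen g0 - k0 * t0)"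
        using W4[OF wfT g0(1) g'(1) kt dd] vq vg0 by simp
      define f where "f = (if g' = g0 then f0 else erev f0)"
      define c where "c = (if g' = g0 then t0 else elen f0 - t0)"
      have fe: "f \<in> edges T'" "maps_onto \<phi> f g'" using W f0(1) rf0 g0 mr unfolding f_def by auto
      have lf: "elen f = elen f0" unfolding f_def by simp
      have cc: "0 < c" "c < elen f" using f0 lf unfolding c_def by auto
      have vf: "epar f c = v'" using W f0 unfolding f_def c_def by (auto simp: erev_par)
      have dc: "elen g' / elen f * c = d"
        using W lf k0_def wf_erev_neq[OF wfT g0(1)] lf0 unfolding c_def by (auto simp: field_simps)
      have fl: "epar f (elen f) \<in> verts B'" using wf_edgeD(5)[OF wfT' fe(1)] v1 by (auto simp: etgt_def)
      obtain b where b: "c < b" "b \<le> elen f" "epar f b \<in> verts B'" "\<forall>s. c < s \<and> s < b \<longrightarrow> epar f s \<notin> verts B'"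
        using FV[OF wfT' fe(1) wf_finite(1)[OF wfB'] fl, of c] cc by auto
      obtain p where p: "p \<in> edges B'" "seg f c p"
        using GL[OF wfS' T' B' v1 fe(1), of c b] b cc vf v' by auto
      have lp: "elen p > 0" using wf_edgeD(1)[OF wfB' p(1)] .
      have ps: "esrc p = v'" using segD[OF p(2), of 0] lp vf by (simp add: esrc_def)
      obtain q'' where q'': "q'' \<in> edges B" "maps_onto \<phi> p q''" "seg g' (elen g' / elen f * c) q''"
        using IMG[OF p(1) fe(1) p(2) g'(1) fe(2)] by blast
      have "q'' = q" using seg_same_start[OF wfB q(1) q''(1) g'(2)] q''(3) dc by simp
      hence pin: "p \<in> ?AB q" using p ps q'' by auto
      have "p2 = p" if p2: "p2 \<in> ?AB q" for p2
      proof -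
        obtain f1 c1 where f1: "seg f1 c1 p" "(f1 = f0 \<and> c1 = t0) \<or> (f1 = erev f0 \<and> c1 = elen f0 - t0)"
          using F1[of p] pin by auto
        obtain f2 c2 where f2: "seg f2 c2 p2" "(f2 = f0 \<and> c2 = t0) \<or> (f2 = erev f0 \<and> c2 = elen f0 - t0)"
          using F1[of p2] p2 by auto
        show ?thesis
        proof (cases "f1 = f2")
          case True
          hence "c1 = c2" using f1(2) f2(2) wf_erev_neq[OF wfT' f0(1)] by auto
          thus ?thesis using seg_same_start[OF wfB' _ _ f1(1)] f2(1) True pin p2 by auto
        next
          case False
          hence fs: "(f1 = f0 \<and> f2 = erev f0) \<or> (f1 = erev f0 \<and> f2 = f0)" using f1(2) f2(2) by auto
          have s1: "seg (if f1 = f0 then g0 else erev g0) (elen (if f1 = f0 then g0 else erev g0) / elen f1 * c1) q"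
            using img_unique[of p f1 c1 "if f1 = f0 then g0 else erev g0" q] f1 pin q(1) g0 rg0 mr f0(1) rf0
            by (cases "f1 = f0") auto
          have s2: "seg (if f2 = f0 then g0 else erev g0) (elen (if f2 = f0 then g0 else erev g0) / elen f2 * c2) q"
            using img_unique[of p2 f2 c2 "if f2 = f0 then g0 else erev g0" q] f2 p2 q(1) g0 rg0 mr f0(1) rf0
            by (cases "f2 = f0") auto
          have "erev g0 = g0"
            using fs seg_same_edge[OF wfT g0(1) rg0 _ _ lq] s1 s2 wf_erev_neq[OF wfT' f0(1)] by (cases "f1 = f0") auto
          thus ?thesis using wf_erev_neq[OF wfT g0(1)] by simp
        qed
      qed
      thus ?thesis using pin by blast
    qed
    have "\<forall>q\<in>edges B. esrc q = \<phi> v' \<longrightarrow> sum (?tB q) (?AB q) = K"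
    proof (intro ballI impI)
      fix q assume q: "q \<in> edges B" "esrc q = \<phi> v'"
      obtain p where p: "?AB q = {p}" using ONE[OF q] by blast
      have "p \<in> ?AB q" using p by blast
      thus "sum (?tB q) (?AB q) = K" using p TERM[OF q(1)] by simp
    qed
    thus ?thesis unfolding harmonic_at_def by blast
  qed
qed

end

declare split_paired_Ex[simp del] split_paired_All[simp del]

section \<open>Factoring harmonic maps through a quotient\<close>

lemma FL:
  fixes A :: "'p wmg" and C1 :: "'q wmg" and C2 :: "'r wmg"
  assumes wfA: "wf_wmg A" and wf1: "wf_wmg C1" and wf2: "wf_wmg C2"
    and pl1: "pl_comb A C1 \<pi>1" and pl2: "pl_comb A C2 \<pi>2"
    and nc1: "\<forall>p\<in>edges A. \<not> contracted \<pi>1 p" and nc2: "\<forall>p\<in>edges A. \<not> contracted \<pi>2 p"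
    and h1: "\<forall>v\<in>verts A - bdry A. harmonic_at A C1 \<pi>1 v"
    and h2: "\<forall>v\<in>verts A - bdry A. harmonic_at A C2 \<pi>2 v"
    and surj: "\<pi>1 ` points A = points C1"
    and hp: "\<forall>x\<in>points A. h (\<pi>1 x) = \<pi>2 x"
    and vert1: "\<pi>1 ` verts A = verts C1"
    and prev: "\<forall>x\<in>points A. \<pi>1 x \<in> verts C1 \<longrightarrow> x \<in> verts A"
    and bd1: "\<forall>x\<in>points A. \<pi>1 x \<in> bdry C1 \<longleftrightarrow> x \<in> bdry A"
    and bd2: "\<forall>x\<in>points A. \<pi>2 x \<in> bdry C2 \<longleftrightarrow> x \<in> bdry A"
  shows "pl_comb C1 C2 h \<and> (\<forall>v\<in>verts C1 - bdry C1. harmonic_at C1 C2 h v)"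
proof -
  have m1: "\<exists>q\<in>edges C1. maps_onto \<pi>1 p q" if "p \<in> edges A" for p
    using pl1 nc1 that unfolding pl_comb_def by blast
  have m2: "\<exists>q\<in>edges C2. maps_onto \<pi>2 p q" if "p \<in> edges A" for p
    using pl2 nc2 that unfolding pl_comb_def by blast
  have lift: "\<exists>p\<in>edges A. maps_onto \<pi>1 p e1" if e1: "e1 \<in> edges C1" for e1
  proof -
    have l1: "elen e1 > 0" using wf_edgeD(1)[OF wf1 e1] .
    define y where "y = epar e1 (elen e1 / 2)"
    have "y \<in> points C1" using edge_points[OF e1, of "elen e1 / 2"] l1 y_def by auto
    hence "y \<in> \<pi>1 ` points A" using surj by simp
    then obtain x where x: "x \<in> points A" "\<pi>1 x = y" by (metis imageE)
    have yn: "y \<notin> verts C1" using wf_interior_notvert[OF wf1 e1, of "elen e1 / 2"] l1 y_def by auto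
    have "x \<notin> verts A" using x yn vert1 by auto
    then obtain p0 t where p0: "p0 \<in> edges A" "0 < t" "t < elen p0" "x = epar p0 t"
      using points_cases[OF wfA x(1)] by blast
    obtain q where q: "q \<in> edges C1" "maps_onto \<pi>1 p0 q" using m1[OF p0(1)] by blast
    have lp: "elen p0 > 0" using wf_edgeD(1)[OF wfA p0(1)] .
    have lq: "elen q > 0" using wf_edgeD(1)[OF wf1 q(1)] .
    have yq: "y = epar q (elen q / elen p0 * t)" using mapsD[OF q(2), of t] p0 x by simp
    have tt: "0 < elen q / elen p0 * t" "elen q / elen p0 * t < elen q"
      using p0 lp lq by (auto simp: field_simps)
    have "(q = e1 \<and> elen q / elen p0 * t = elen e1 / 2) \<or> (q = erev e1 \<and> elen q / elen p0 * t = elen e1 - elen e1 / 2)"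
    proof (rule W4[OF wf1 e1 q(1) _ _ tt])
      show "0 < elen e1 / 2" "elen e1 / 2 < elen e1" using l1 by auto
      show "epar e1 (elen e1 / 2) = epar q (elen q / elen p0 * t)" using yq y_def by simp
    qed
    thus ?thesis
    proof (elim disjE conjE)
      assume "q = e1" thus ?thesis using q p0 by blast
    next
      assume "q = erev e1"
      hence "maps_onto \<pi>1 (erev p0) e1" using maps_onto_erev[OF q(2) lp] lq wf_erev_erev[OF wf1 e1] by simp
      thus ?thesis using wf_edgeD(8)[OF wfA p0(1)] by blast
    qed
  qed
  have comp: "maps_onto h e1 e2"
    if p: "p \<in> edges A" and e1: "e1 \<in> edges C1" and e2: "e2 \<in> edges C2"
      and a1: "maps_onto \<pi>1 p e1" and a2: "maps_onto \<pi>2 p e2" for p e1 e2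
    unfolding maps_onto_def
  proof
    fix x assume x: "x \<in> {0..elen e1}"
    have lp: "elen p > 0" using wf_edgeD(1)[OF wfA p] .
    have l1: "elen e1 > 0" using wf_edgeD(1)[OF wf1 e1] .
    define s where "s = elen p / elen e1 * x"
    have s: "0 \<le> s" "s \<le> elen p"
    proof -
      have "elen p / elen e1 * x \<le> elen p / elen e1 * elen e1" using x lp l1 by (intro mult_left_mono) auto
      thus "0 \<le> s" "s \<le> elen p" using x lp l1 s_def by auto
    qed
    have "epar e1 x = \<pi>1 (epar p s)" using mapsD[OF a1 s] lp l1 s_def by simp
    hence "h (epar e1 x) = \<pi>2 (epar p s)" using hp edge_points[OF p, of s] s by simp
    also have "\<dots> = epar e2 (elen e2 / elen p * s)" using mapsD[OF a2 s] .
    also have "elen e2 / elen p * s = elen e2 / elen e1 * x" using lp l1 s_def by simp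
    finally show "h (epar e1 x) = epar e2 (elen e2 / elen e1 * x)" .
  qed
  have pl: "pl_comb C1 C2 h"
    unfolding pl_comb_def
  proof (intro conjI ballI impI)
    show "h ` points C1 \<subseteq> points C2"
    proof
      fix z assume "z \<in> h ` points C1"
      then obtain y where y: "y \<in> points C1" "z = h y" by blast
      hence "y \<in> \<pi>1 ` points A" using surj by simp
      then obtain x where x: "x \<in> points A" "y = \<pi>1 x" by (metis imageE)
      hence "z = \<pi>2 x" using hp y by simp
      thus "z \<in> points C2" using pl2 x unfolding pl_comb_def by auto
    qed
    show "h ` verts C1 \<subseteq> verts C2"
    proof
      fix z assume "z \<in> h ` verts C1"
      then obtain y where y: "y \<in> verts C1" "z = h y" by blast
      hence "y \<in> \<pi>1 ` verts A" using vert1 by simp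
      then obtain x where x: "x \<in> verts A" "y = \<pi>1 x" by (metis imageE)
      hence "z = \<pi>2 x" using hp y verts_points[of A] by auto
      thus "z \<in> verts C2" using pl2 x unfolding pl_comb_def by auto
    qed
  next
    fix e1 assume e1: "e1 \<in> edges C1"
    obtain p where p: "p \<in> edges A" "maps_onto \<pi>1 p e1" using lift[OF e1] by blast
    obtain e2 where e2: "e2 \<in> edges C2" "maps_onto \<pi>2 p e2" using m2[OF p(1)] by blast
    show "contracted h e1 \<or> (\<exists>e\<in>edges C2. maps_onto h e1 e)" using comp[OF p(1) e1 e2(1) p(2) e2(2)] e2(1) by blast
  next
    fix v assume v: "v \<in> verts C1" and b: "h v \<in> bdry C2 \<and> (\<exists>e'\<in>edges C1. esrc e' = v \<and> \<not> contracted h e')"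
    have "v \<in> \<pi>1 ` verts A" using v vert1 by simp
    then obtain a where a: "a \<in> verts A" "v = \<pi>1 a" by (metis imageE)
    have aP: "a \<in> points A" using a verts_points[of A] by blast
    have "\<pi>2 a \<in> bdry C2" using b a hp aP by auto
    hence "a \<in> bdry A" using bd2 aP by auto
    thus "v \<in> bdry C1" using bd1 aP a by auto
  qed
  have harm: "harmonic_at C1 C2 h v" if v: "v \<in> verts C1 - bdry C1" for v
  proof (cases "\<exists>e1\<in>edges C1. esrc e1 = v")
    case False
    hence "\<forall>e2\<in>edges C2. esrc e2 = h v \<longrightarrow>
        (\<Sum>e1\<in>{e1\<in>edges C1. esrc e1 = v \<and> maps_onto h e1 e2}.
            real (weight C1 e1) / real (weight C2 e2) * (elen e2 / elen e1)) = 0"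
    proof (intro ballI impI)
      fix e2 assume "e2 \<in> edges C2" "esrc e2 = h v"
      have "{e1\<in>edges C1. esrc e1 = v \<and> maps_onto h e1 e2} = {}" using False by blast
      thus "(\<Sum>e1\<in>{e1\<in>edges C1. esrc e1 = v \<and> maps_onto h e1 e2}.
            real (weight C1 e1) / real (weight C2 e2) * (elen e2 / elen e1)) = 0" by (simp only: sum.empty)
    qed
    thus ?thesis unfolding harmonic_at_def by blast
  next
    case True
    then obtain e10 where e10: "e10 \<in> edges C1" "esrc e10 = v" by blast
    obtain p0 where p0: "p0 \<in> edges A" "maps_onto \<pi>1 p0 e10" using lift[OF e10(1)] by blast
    define a where "a = esrc p0"
    have lp0: "elen p0 > 0" using wf_edgeD(1)[OF wfA p0(1)] .
    have av: "\<pi>1 a = v" using mapsD[OF p0(2), of 0] lp0 e10(2) unfolding a_def esrc_def by simp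
    have aV: "a \<in> verts A" using wf_edgeD(4)[OF wfA p0(1)] a_def by simp
    have aP: "a \<in> points A" using aV verts_points[of A] by blast
    have anb: "a \<notin> bdry A" using bd1 aP av v by auto
    let ?A1 = "\<lambda>e1. {p\<in>edges A. esrc p = a \<and> maps_onto \<pi>1 p e1}"
    let ?t1 = "\<lambda>e1 p. real (weight A p) / real (weight C1 e1) * (elen e1 / elen p)"
    obtain c1 where c1: "\<forall>e1\<in>edges C1. esrc e1 = \<pi>1 a \<longrightarrow> sum (?t1 e1) (?A1 e1) = c1"
      using h1 aV anb unfolding harmonic_at_def by blast
    let ?A2 = "\<lambda>e2. {p\<in>edges A. esrc p = a \<and> maps_onto \<pi>2 p e2}"
    let ?t2 = "\<lambda>e2 p. real (weight A p) / real (weight C2 e2) * (elen e2 / elen p)"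
    obtain c2 where c2: "\<forall>e2\<in>edges C2. esrc e2 = \<pi>2 a \<longrightarrow> sum (?t2 e2) (?A2 e2) = c2"
      using h2 aV anb unfolding harmonic_at_def by blast
    have finA: "finite (edges A)" using wf_finite(2)[OF wfA] .
    have c1pos: "c1 > 0"
    proof -
      have "p0 \<in> ?A1 e10" using p0 a_def by simp
      moreover have "finite (?A1 e10)" using finA by simp
      moreover have "\<forall>p\<in>?A1 e10. ?t1 e10 p \<ge> 0"
      proof
        fix p assume "p \<in> ?A1 e10"
        hence "elen p > 0" using wf_edgeD(1)[OF wfA] by blast
        thus "?t1 e10 p \<ge> 0" using wf_edgeD(1)[OF wf1 e10(1)] by simp
      qed
      ultimately have "?t1 e10 p0 \<le> sum (?t1 e10) (?A1 e10)" by (intro member_le_sum) auto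
      moreover have "?t1 e10 p0 > 0"
        using wf_edgeD(10)[OF wfA p0(1)] wf_edgeD(10)[OF wf1 e10(1)] wf_edgeD(1)[OF wf1 e10(1)] lp0 by simp
      ultimately show ?thesis using c1 e10 av by auto
    qed
    let ?E1 = "\<lambda>e2. {e1\<in>edges C1. esrc e1 = v \<and> maps_onto h e1 e2}"
    let ?t = "\<lambda>e2 e1. real (weight C1 e1) / real (weight C2 e2) * (elen e2 / elen e1)"
    have "\<forall>e2\<in>edges C2. esrc e2 = h v \<longrightarrow> sum (?t e2) (?E1 e2) = c2 / c1"
    proof (intro ballI impI)
      fix e2 assume e2: "e2 \<in> edges C2" "esrc e2 = h v"
      have hv: "h v = \<pi>2 a" using hp aP av by auto
      have U: "?A2 e2 = (\<Union>e1\<in>?E1 e2. ?A1 e1)"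
      proof (rule equalityI; rule subsetI)
        fix p assume p: "p \<in> ?A2 e2"
        obtain e1 where e1: "e1 \<in> edges C1" "maps_onto \<pi>1 p e1" using m1[of p] p by auto
        have lp: "elen p > 0" using wf_edgeD(1)[OF wfA] p by auto
        have "esrc e1 = v" using mapsD[OF e1(2), of 0] lp p av by (simp add: esrc_def)
        moreover have "maps_onto h e1 e2" using comp[of p e1 e2] p e1 e2 by auto
        ultimately show "p \<in> (\<Union>e1\<in>?E1 e2. ?A1 e1)" using e1 p by auto
      next
        fix p assume "p \<in> (\<Union>e1\<in>?E1 e2. ?A1 e1)"
        then obtain e1 where e1: "e1 \<in> ?E1 e2" and p: "p \<in> ?A1 e1" by blast
        obtain e2' where e2': "e2' \<in> edges C2" "maps_onto \<pi>2 p e2'" using m2[of p] p by auto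
        have me': "maps_onto h e1 e2'" using comp[of p e1 e2'] p e1 e2' by auto
        have me: "maps_onto h e1 e2" using e1 by blast
        have le1: "elen e1 > 0" using wf_edgeD(1)[OF wf1] e1 by blast
        have "e2' = e2" by (rule MT[OF wf2 e2(1) e2'(1) le1 me me'])
        thus "p \<in> ?A2 e2" using p e2' by auto
      qed
      have D: "?A1 e1 \<inter> ?A1 e1' = {}" if "e1 \<in> ?E1 e2" "e1' \<in> ?E1 e2" "e1 \<noteq> e1'" for e1 e1'
      proof (rule ccontr)
        assume "?A1 e1 \<inter> ?A1 e1' \<noteq> {}"
        then obtain p where p: "p \<in> ?A1 e1" "p \<in> ?A1 e1'" by blast
        have lp: "elen p > 0" using wf_edgeD(1)[OF wfA] p by blast
        have "e1' = e1" by (rule MT[OF wf1 _ _ lp]) (use p that in auto)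
        thus False using that by simp
      qed
      have fE: "finite (?E1 e2)" using wf_finite(2)[OF wf1] by simp
      have "c2 = sum (?t2 e2) (?A2 e2)" using c2 e2 hv by simp
      also have "\<dots> = sum (\<lambda>e1. sum (?t2 e2) (?A1 e1)) (?E1 e2)"
        unfolding U by (rule sum.UNION_disjoint[OF fE]) (use finA D in auto)
      also have "\<dots> = sum (\<lambda>e1. ?t e2 e1 * c1) (?E1 e2)"
      proof (rule sum.cong[OF refl])
        fix e1 assume e1: "e1 \<in> ?E1 e2"
        have l1: "elen e1 > 0" "real (weight C1 e1) > 0" using wf_edgeD(1,10)[OF wf1] e1 by auto
        have "sum (?t2 e2) (?A1 e1) = sum (\<lambda>p. ?t e2 e1 * ?t1 e1 p) (?A1 e1)"
          by (rule sum.cong[OF refl]) (use l1 in \<open>auto simp: field_simps\<close>)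
        also have "\<dots> = ?t e2 e1 * sum (?t1 e1) (?A1 e1)" by (simp add: sum_distrib_left)
        also have "sum (?t1 e1) (?A1 e1) = c1" using c1 e1 av by auto
        finally show "sum (?t2 e2) (?A1 e1) = ?t e2 e1 * c1" .
      qed
      also have "\<dots> = sum (?t e2) (?E1 e2) * c1" by (simp add: sum_distrib_right)
      finally show "sum (?t e2) (?E1 e2) = c2 / c1" using c1pos by (simp add: field_simps)
    qed
    thus ?thesis unfolding harmonic_at_def by blast
  qed
  show ?thesis using pl harm by blast
qed

section \<open>Uniqueness of quotients\<close>

locale qsetup =
  fixes G :: "('g, 'm) monoid_scheme" and act :: "'g \<Rightarrow> 'p \<Rightarrow> 'p" and S' :: "'p wmg"
  assumes wfS': "wf_wmg S'" and grp: "group G" and finG: "finite (carrier G)"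
    and ga: "group_action G (points S') act"
begin

lemma quotD:
  assumes "is_quotient G act S' S1 \<pi>1"
  shows "harmonic S' S1 \<pi>1" "\<pi>1 ` points S' = points S1"
    "\<forall>g\<in>carrier G. \<forall>x\<in>points S'. \<pi>1 (act g x) = \<pi>1 x"
    "\<forall>x\<in>points S'. \<forall>y\<in>points S'. \<pi>1 x = \<pi>1 y \<longrightarrow> (\<exists>g\<in>carrier G. act g x = y)"
    "{x\<in>points S'. \<pi>1 x \<in> bdry S1} = bdry S'"
  using assms unfolding is_quotient_def by blast+

lemma fib_finite:
  assumes q: "is_quotient G act S' S1 \<pi>1"
  shows "finite {x\<in>points S'. \<pi>1 x = y}"
proof (cases "{x\<in>points S'. \<pi>1 x = y} = {}")
  case True thus ?thesis by (simp only: finite.emptyI)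
next
  case False
  then obtain x0 where x0: "x0 \<in> points S'" "\<pi>1 x0 = y" by blast
  have "{x\<in>points S'. \<pi>1 x = y} \<subseteq> (\<lambda>g. act g x0) ` carrier G"
  proof
    fix x assume "x \<in> {x\<in>points S'. \<pi>1 x = y}"
    hence "x \<in> points S'" "\<pi>1 x0 = \<pi>1 x" using x0 by auto
    then obtain g where "g \<in> carrier G" "act g x0 = x" using quotD(4)[OF q] x0 by blast
    thus "x \<in> (\<lambda>g. act g x0) ` carrier G" by blast
  qed
  thus ?thesis using finG finite_subset by blast
qed

lemma same_fib:
  assumes q1: "is_quotient G act S' S1 \<pi>1" and q2: "is_quotient G act S' S2 \<pi>2"
    and x: "x \<in> points S'" and y: "y \<in> points S'" and e: "\<pi>1 x = \<pi>1 y"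
  shows "\<pi>2 x = \<pi>2 y"
proof -
  obtain g where g: "g \<in> carrier G" "act g x = y" using quotD(4)[OF q1] x y e by blast
  thus ?thesis using quotD(3)[OF q2] x by metis
qed

lemma nc_q:
  assumes q: "is_quotient G act S' S1 \<pi>1" and T': "subdivision T' S'" and f: "f \<in> edges T'"
  shows "\<not> contracted \<pi>1 f"
proof
  assume "contracted \<pi>1 f"
  then obtain v where v: "\<forall>x\<in>{0..elen f}. \<pi>1 (epar f x) = v" unfolding contracted_def by blast
  have wfT': "wf_wmg T'" using subdiv_wf[OF T'] .
  have "epar f ` {0..elen f} \<subseteq> {x\<in>points S'. \<pi>1 x = v}"
    using v edge_points[OF f] subdiv_points[OF T'] by auto
  hence "finite (epar f ` {0..elen f})" using fib_finite[OF q] finite_subset by blast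
  hence "finite {0..elen f}" using finite_imageD wf_edgeD(3)[OF wfT' f] by blast
  thus False using infinite_Icc[OF wf_edgeD(1)[OF wfT' f]] by blast
qed

lemma harmonicD:
  assumes "harmonic S' S1 \<pi>1"
  obtains T' T where "subdivision T' S'" "subdivision T S1" "pl_comb T' T \<pi>1"
    "\<forall>v'\<in>verts T' - bdry T'. harmonic_at T' T \<pi>1 v'"
  using assms unfolding harmonic_def by blast

lemma quotient_factor:
  fixes S1 :: "'q wmg" and S2 :: "'r wmg"
  assumes wf1: "wf_wmg S1" and q1: "is_quotient G act S' S1 \<pi>1"
    and wf2: "wf_wmg S2" and q2: "is_quotient G act S' S2 \<pi>2"
    and hp: "\<forall>x\<in>points S'. h (\<pi>1 x) = \<pi>2 x"
  shows "harmonic S1 S2 h"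
proof -
  obtain T1' T1 where t1: "subdivision T1' S'" "subdivision T1 S1" "pl_comb T1' T1 \<pi>1"
    "\<forall>v'\<in>verts T1' - bdry T1'. harmonic_at T1' T1 \<pi>1 v'" using harmonicD[OF quotD(1)[OF q1]] by blast
  obtain T2' T2 where t2: "subdivision T2' S'" "subdivision T2 S2" "pl_comb T2' T2 \<pi>2"
    "\<forall>v'\<in>verts T2' - bdry T2'. harmonic_at T2' T2 \<pi>2 v'" using harmonicD[OF quotD(1)[OF q2]] by blast
  have sur1: "\<pi>1 ` points S' = points S1" and sur2: "\<pi>2 ` points S' = points S2"
    using quotD(2)[OF q1] quotD(2)[OF q2] .
  define Y where "Y = \<pi>1 ` (verts T1' \<union> verts T2') \<union> verts T1 \<union> {y\<in>points S1. h y \<in> verts T2}"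
  define W where "W = {x\<in>points S'. \<pi>1 x \<in> Y}"
  have injh: "inj_on h (points S1)"
  proof (rule inj_onI)
    fix y1 y2 assume y: "y1 \<in> points S1" "y2 \<in> points S1" "h y1 = h y2"
    obtain x1 where x1: "x1 \<in> points S'" "y1 = \<pi>1 x1" using y(1) sur1 by (metis imageE)
    obtain x2 where x2: "x2 \<in> points S'" "y2 = \<pi>1 x2" using y(2) sur1 by (metis imageE)
    have "\<pi>2 x1 = \<pi>2 x2" using y(3) x1 x2 hp by simp
    thus "y1 = y2" using same_fib[OF q2 q1 x1(1) x2(1)] x1 x2 by simp
  qed
  have finY: "finite Y"
  proof -
    have "finite (verts T1')" "finite (verts T2')" "finite (verts T1)" "finite (verts T2)"
      using wf_finite(1) subdiv_wf t1 t2 by blast+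
    moreover have "finite {y\<in>points S1. h y \<in> verts T2}"
    proof -
      have "inj_on h {y\<in>points S1. h y \<in> verts T2}" using injh by (rule inj_on_subset) auto
      moreover have "h ` {y\<in>points S1. h y \<in> verts T2} \<subseteq> verts T2" by auto
      ultimately show ?thesis using \<open>finite (verts T2)\<close> finite_imageD finite_subset by metis
    qed
    ultimately show ?thesis unfolding Y_def by blast
  qed
  have finW: "finite W"
  proof -
    have "W = (\<Union>y\<in>Y. {x\<in>points S'. \<pi>1 x = y})" unfolding W_def by auto
    thus ?thesis using finY fib_finite[OF q1] by auto
  qed
  have WP: "W \<subseteq> points S'" unfolding W_def by auto
  have vT1': "verts T1' \<subseteq> W" using verts_points[of T1'] subdiv_points[OF t1(1)] unfolding W_def Y_def by auto
  have vT2': "verts T2' \<subseteq> W" using verts_points[of T2'] subdiv_points[OF t2(1)] unfolding W_def Y_def by auto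
  have vS': "verts S' \<subseteq> W" using subdiv_verts[OF t1(1)] vT1' by auto
  define B' where "B' = subw S' W"
  have B': "subdivision B' S'" unfolding B'_def using SUB[OF wfS' finW vS' WP] .
  have vB': "verts B' = W" unfolding B'_def by simp
  define P1 where "P1 = \<pi>1 ` W"
  define P2 where "P2 = \<pi>2 ` W"
  have vT1: "verts T1 \<subseteq> P1"
  proof
    fix v assume v: "v \<in> verts T1"
    hence "v \<in> points S1" using verts_points[of T1] subdiv_points[OF t1(2)] by auto
    then obtain x where x: "x \<in> points S'" "v = \<pi>1 x" using sur1 by (metis imageE)
    hence "x \<in> W" using v unfolding W_def Y_def by auto
    thus "v \<in> P1" using x unfolding P1_def by auto
  qed
  have vT2: "verts T2 \<subseteq> P2"
  proof
    fix v assume v: "v \<in> verts T2"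
    hence "v \<in> points S2" using verts_points[of T2] subdiv_points[OF t2(2)] by auto
    then obtain x where x: "x \<in> points S'" "v = \<pi>2 x" using sur2 by (metis imageE)
    have "\<pi>1 x \<in> points S1" using x sur1 by auto
    moreover have "h (\<pi>1 x) \<in> verts T2" using hp x v by simp
    ultimately have "x \<in> W" using x unfolding W_def Y_def by auto
    thus "v \<in> P2" using x unfolding P2_def by auto
  qed
  have P1S: "P1 \<subseteq> points S1" using WP sur1 unfolding P1_def by auto
  have P2S: "P2 \<subseteq> points S2" using WP sur2 unfolding P2_def by auto
  define B1 where "B1 = subw S1 P1"
  define B2 where "B2 = subw S2 P2"
  have B1: "subdivision B1 S1" unfolding B1_def
    using SUB[OF wf1 _ _ P1S] finW subdiv_verts[OF t1(2)] vT1 unfolding P1_def by auto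
  have B2: "subdivision B2 S2" unfolding B2_def
    using SUB[OF wf2 _ _ P2S] finW subdiv_verts[OF t2(2)] vT2 unfolding P2_def by auto
  have pre1: "\<forall>x\<in>points S'. \<pi>1 x \<in> verts B1 \<longrightarrow> x \<in> verts B'"
  proof (intro ballI impI)
    fix x assume x: "x \<in> points S'" "\<pi>1 x \<in> verts B1"
    then obtain w where w: "w \<in> W" "\<pi>1 x = \<pi>1 w" unfolding B1_def P1_def by auto
    thus "x \<in> verts B'" using x(1) unfolding vB' W_def by auto
  qed
  have pre2: "\<forall>x\<in>points S'. \<pi>2 x \<in> verts B2 \<longrightarrow> x \<in> verts B'"
  proof (intro ballI impI)
    fix x assume x: "x \<in> points S'" "\<pi>2 x \<in> verts B2"
    then obtain w where w: "w \<in> W" "\<pi>2 x = \<pi>2 w" unfolding B2_def P2_def by auto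
    hence "\<pi>1 x = \<pi>1 w" using same_fib[OF q2 q1 x(1)] WP by auto
    thus "x \<in> verts B'" using x(1) w unfolding vB' W_def by auto
  qed
  interpret r1: refine_setup S' S1 T1' T1 B' B1 \<pi>1
    by unfold_locales (use wfS' wf1 t1 B' B1 nc_q[OF q1 t1(1)] vT1' vB' vT1 pre1 in
        \<open>auto simp: B1_def P1_def\<close>)
  interpret r2: refine_setup S' S2 T2' T2 B' B2 \<pi>2
    by unfold_locales (use wfS' wf2 t2 B' B2 nc_q[OF q2 t2(1)] vT2' vB' vT2 pre2 in
        \<open>auto simp: B2_def P2_def\<close>)
  have pB': "points B' = points S'" using subdiv_points[OF B'] .
  have FLr: "pl_comb B1 B2 h \<and> (\<forall>v\<in>verts B1 - bdry B1. harmonic_at B1 B2 h v)"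
  proof (rule FL[OF r1.wfB' r1.wfB r2.wfB r1.pl_B r2.pl_B r1.nc_B r2.nc_B
        r1.harm_B[OF t1(4)] r2.harm_B[OF t2(4)]])
    show "\<pi>1 ` points B' = points B1" using pB' sur1 subdiv_points[OF B1] by simp
    show "\<forall>x\<in>points B'. h (\<pi>1 x) = \<pi>2 x" using hp pB' by simp
    show "\<pi>1 ` verts B' = verts B1" unfolding vB' B1_def P1_def by simp
    show "\<forall>x\<in>points B'. \<pi>1 x \<in> verts B1 \<longrightarrow> x \<in> verts B'" using pre1 pB' by simp
    show "\<forall>x\<in>points B'. (\<pi>1 x \<in> bdry B1) = (x \<in> bdry B')"
      using quotD(5)[OF q1] pB' subdiv_bdry[OF B1] subdiv_bdry[OF B'] by blast
    show "\<forall>x\<in>points B'. (\<pi>2 x \<in> bdry B2) = (x \<in> bdry B')"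
      using quotD(5)[OF q2] pB' subdiv_bdry[OF B2] subdiv_bdry[OF B'] by blast
  qed
  show ?thesis unfolding harmonic_def using B1 B2 FLr by blast
qed

lemma uniqueness:
  fixes S1 :: "'q wmg" and S2 :: "'r wmg"
  assumes wf1: "wf_wmg S1" and q1: "is_quotient G act S' S1 \<pi>1"
    and wf2: "wf_wmg S2" and q2: "is_quotient G act S' S2 \<pi>2"
  shows "\<exists>h. harmonic_iso S1 S2 h \<and> (\<forall>x\<in>points S'. h (\<pi>1 x) = \<pi>2 x)"
proof -
  define h where "h = (\<lambda>y. \<pi>2 (SOME x. x \<in> points S' \<and> \<pi>1 x = y))"
  define k where "k = (\<lambda>z. \<pi>1 (SOME x. x \<in> points S' \<and> \<pi>2 x = z))"
  have hp: "\<forall>x\<in>points S'. h (\<pi>1 x) = \<pi>2 x"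
  proof
    fix x assume x: "x \<in> points S'"
    have "\<exists>x'. x' \<in> points S' \<and> \<pi>1 x' = \<pi>1 x" using x by blast
    hence s: "(SOME x'. x' \<in> points S' \<and> \<pi>1 x' = \<pi>1 x) \<in> points S' \<and> \<pi>1 (SOME x'. x' \<in> points S' \<and> \<pi>1 x' = \<pi>1 x) = \<pi>1 x"
      by (rule someI_ex)
    show "h (\<pi>1 x) = \<pi>2 x" unfolding h_def using same_fib[OF q1 q2 _ x] s by blast
  qed
  have kp: "\<forall>x\<in>points S'. k (\<pi>2 x) = \<pi>1 x"
  proof
    fix x assume x: "x \<in> points S'"
    have "\<exists>x'. x' \<in> points S' \<and> \<pi>2 x' = \<pi>2 x" using x by blast
    hence s: "(SOME x'. x' \<in> points S' \<and> \<pi>2 x' = \<pi>2 x) \<in> points S' \<and> \<pi>2 (SOME x'. x' \<in> points S' \<and> \<pi>2 x' = \<pi>2 x) = \<pi>2 x"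
      by (rule someI_ex)
    show "k (\<pi>2 x) = \<pi>1 x" unfolding k_def using same_fib[OF q2 q1 _ x] s by blast
  qed
  have H1: "harmonic S1 S2 h" using quotient_factor[OF wf1 q1 wf2 q2 hp] .
  have H2: "harmonic S2 S1 k" using quotient_factor[OF wf2 q2 wf1 q1 kp] .
  have I1: "\<forall>y\<in>points S1. k (h y) = y"
  proof
    fix y assume "y \<in> points S1"
    then obtain x where "x \<in> points S'" "y = \<pi>1 x" using quotD(2)[OF q1] by (metis imageE)
    thus "k (h y) = y" using hp kp by simp
  qed
  have I2: "\<forall>z\<in>points S2. h (k z) = z"
  proof
    fix z assume "z \<in> points S2"
    then obtain x where "x \<in> points S'" "z = \<pi>2 x" using quotD(2)[OF q2] by (metis imageE)
    thus "h (k z) = z" using hp kp by simp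
  qed
  show ?thesis unfolding harmonic_iso_def using H1 H2 I1 I2 hp by blast
qed

end

declare split_paired_Ex[simp del] split_paired_All[simp del]

locale esetup = qsetup G act S'
  for G :: "('g, 'm) monoid_scheme" and act :: "'g \<Rightarrow> 'p \<Rightarrow> 'p" and S' :: "'p wmg" +
  assumes harmG: "\<forall>g\<in>carrier G. harmonic S' S' (act g)"
    and bdG: "\<forall>g\<in>carrier G. act g ` bdry S' \<subseteq> bdry S'"
begin

lemma gG: "group G" using grp .

lemma actP: "g \<in> carrier G \<Longrightarrow> x \<in> points S' \<Longrightarrow> act g x \<in> points S'"
  using group_action.element_image[OF ga] by blast

lemma act_comp: "g \<in> carrier G \<Longrightarrow> h \<in> carrier G \<Longrightarrow> x \<in> points S' \<Longrightarrow>
    act (g \<otimes>\<^bsub>G\<^esub> h) x = act g (act h x)"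
  using group_action.composition_rule[OF ga] by blast

lemma act_one: "x \<in> points S' \<Longrightarrow> act \<one>\<^bsub>G\<^esub> x = x"
proof -
  assume x: "x \<in> points S'"
  have "(\<lambda>x\<in>points S'. x) = act \<one>\<^bsub>G\<^esub>" using group_action.id_eq_one[OF ga] .
  hence "act \<one>\<^bsub>G\<^esub> x = (\<lambda>x\<in>points S'. x) x" by simp
  thus ?thesis using x by simp
qed

lemma inv_closed: "g \<in> carrier G \<Longrightarrow> inv\<^bsub>G\<^esub> g \<in> carrier G"
  using group.inv_closed[OF gG] .

lemma one_closed: "\<one>\<^bsub>G\<^esub> \<in> carrier G"
  using monoid.one_closed[OF group.is_monoid[OF gG]] .

lemma m_closed: "g \<in> carrier G \<Longrightarrow> h \<in> carrier G \<Longrightarrow> g \<otimes>\<^bsub>G\<^esub> h \<in> carrier G"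
  using monoid.m_closed[OF group.is_monoid[OF gG]] .

lemma act_inv: "g \<in> carrier G \<Longrightarrow> x \<in> points S' \<Longrightarrow> act (inv\<^bsub>G\<^esub> g) (act g x) = x"
proof -
  assume g: "g \<in> carrier G" and x: "x \<in> points S'"
  have "act (inv\<^bsub>G\<^esub> g) (act g x) = act (inv\<^bsub>G\<^esub> g \<otimes>\<^bsub>G\<^esub> g) x"
    using act_comp[OF inv_closed[OF g] g x] by simp
  also have "inv\<^bsub>G\<^esub> g \<otimes>\<^bsub>G\<^esub> g = \<one>\<^bsub>G\<^esub>" using group.l_inv[OF gG g] .
  finally show ?thesis using act_one[OF x] by simp
qed

lemma act_inv2: "g \<in> carrier G \<Longrightarrow> x \<in> points S' \<Longrightarrow> act g (act (inv\<^bsub>G\<^esub> g) x) = x"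
proof -
  assume g: "g \<in> carrier G" and x: "x \<in> points S'"
  have "act g (act (inv\<^bsub>G\<^esub> g) x) = act (g \<otimes>\<^bsub>G\<^esub> inv\<^bsub>G\<^esub> g) x"
    using act_comp[OF g inv_closed[OF g] x] by simp
  also have "g \<otimes>\<^bsub>G\<^esub> inv\<^bsub>G\<^esub> g = \<one>\<^bsub>G\<^esub>" using group.r_inv[OF gG g] .
  finally show ?thesis using act_one[OF x] by simp
qed

lemma act_inj: "g \<in> carrier G \<Longrightarrow> x \<in> points S' \<Longrightarrow> y \<in> points S' \<Longrightarrow> act g x = act g y \<Longrightarrow> x = y"
  by (metis act_inv)

lemma bdry_inv: "g \<in> carrier G \<Longrightarrow> x \<in> points S' \<Longrightarrow> act g x \<in> bdry S' \<longleftrightarrow> x \<in> bdry S'"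
proof
  assume g: "g \<in> carrier G" and x: "x \<in> points S'" and b: "act g x \<in> bdry S'"
  have "act (inv\<^bsub>G\<^esub> g) (act g x) \<in> bdry S'" using bdG inv_closed[OF g] b by blast
  thus "x \<in> bdry S'" using act_inv[OF g x] by simp
next
  assume g: "g \<in> carrier G" and x: "x \<in> points S'" and b: "x \<in> bdry S'"
  thus "act g x \<in> bdry S'" using bdG by blast
qed

lemma act_nc:
  assumes g: "g \<in> carrier G" and T': "subdivision T' S'" and f: "f \<in> edges T'"
  shows "\<not> contracted (act g) f"
proof
  assume "contracted (act g) f"
  then obtain v where v: "\<forall>x\<in>{0..elen f}. act g (epar f x) = v" unfolding contracted_def by blast
  have wfT': "wf_wmg T'" using subdiv_wf[OF T'] .
  have l: "elen f > 0" using wf_edgeD(1)[OF wfT' f] .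
  have p: "epar f 0 \<in> points S'" "epar f (elen f) \<in> points S'"
    using edge_points[OF f] subdiv_points[OF T'] l by auto
  have "act g (epar f 0) = act g (epar f (elen f))" using v l by auto
  hence "epar f 0 = epar f (elen f)" using act_inj[OF g p] by simp
  thus False using wf_edgeD(6)[OF wfT' f] by (simp add: esrc_def etgt_def)
qed

definition TA :: "'g \<Rightarrow> 'p wmg" where
  "TA g = (SOME T'. \<exists>T. subdivision T' S' \<and> subdivision T S' \<and> pl_comb T' T (act g) \<and>
        (\<forall>v'\<in>verts T' - bdry T'. harmonic_at T' T (act g) v'))"

definition TB :: "'g \<Rightarrow> 'p wmg" where
  "TB g = (SOME T. subdivision (TA g) S' \<and> subdivision T S' \<and> pl_comb (TA g) T (act g) \<and>
        (\<forall>v'\<in>verts (TA g) - bdry (TA g). harmonic_at (TA g) T (act g) v'))"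

lemma TAB:
  assumes g: "g \<in> carrier G"
  shows "subdivision (TA g) S' \<and> subdivision (TB g) S' \<and> pl_comb (TA g) (TB g) (act g) \<and>
        (\<forall>v'\<in>verts (TA g) - bdry (TA g). harmonic_at (TA g) (TB g) (act g) v')"
proof -
  have "\<exists>T' T. subdivision T' S' \<and> subdivision T S' \<and> pl_comb T' T (act g) \<and>
        (\<forall>v'\<in>verts T' - bdry T'. harmonic_at T' T (act g) v')"
    using harmG g unfolding harmonic_def by blast
  hence "\<exists>T. subdivision (TA g) S' \<and> subdivision T S' \<and> pl_comb (TA g) T (act g) \<and>
        (\<forall>v'\<in>verts (TA g) - bdry (TA g). harmonic_at (TA g) T (act g) v')"
    unfolding TA_def by (rule someI_ex)
  thus ?thesis unfolding TB_def by (rule someI_ex)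
qed

definition X0 :: "'p set" where "X0 = (\<Union>g\<in>carrier G. verts (TA g) \<union> verts (TB g))"

definition W :: "'p set" where "W = (\<Union>g\<in>carrier G. act g ` X0)"

lemma TAsub: "g \<in> carrier G \<Longrightarrow> subdivision (TA g) S'" using TAB by blast
lemma TBsub: "g \<in> carrier G \<Longrightarrow> subdivision (TB g) S'" using TAB by blast

lemma X0_points: "X0 \<subseteq> points S'"
proof
  fix x assume "x \<in> X0"
  then obtain g where g: "g \<in> carrier G" "x \<in> verts (TA g) \<union> verts (TB g)" unfolding X0_def by blast
  thus "x \<in> points S'" using verts_points[of "TA g"] verts_points[of "TB g"]
      subdiv_points[OF TAsub[OF g(1)]] subdiv_points[OF TBsub[OF g(1)]] by blast
qed

lemma finX0: "finite X0"
  unfolding X0_def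
proof (rule finite_UN_I[OF finG])
  fix g assume g: "g \<in> carrier G"
  show "finite (verts (TA g) \<union> verts (TB g))"
    using wf_finite(1)[OF subdiv_wf[OF TAsub[OF g]]] wf_finite(1)[OF subdiv_wf[OF TBsub[OF g]]] by simp
qed

lemma W_points: "W \<subseteq> points S'"
proof
  fix x assume "x \<in> W"
  then obtain g y where "g \<in> carrier G" "y \<in> X0" "x = act g y" unfolding W_def by blast
  thus "x \<in> points S'" using X0_points actP by blast
qed

lemma finW: "finite W"
  unfolding W_def using finG finX0 by simp

lemma X0_W: "X0 \<subseteq> W"
proof
  fix x assume "x \<in> X0"
  hence "x = act \<one>\<^bsub>G\<^esub> x" "x \<in> X0" using act_one X0_points by auto
  thus "x \<in> W" unfolding W_def using one_closed by blast
qed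

lemma W_inv: "g \<in> carrier G \<Longrightarrow> x \<in> W \<Longrightarrow> act g x \<in> W"
proof -
  assume g: "g \<in> carrier G" and "x \<in> W"
  then obtain h y where hy: "h \<in> carrier G" "y \<in> X0" "x = act h y" unfolding W_def by blast
  hence "act g x = act (g \<otimes>\<^bsub>G\<^esub> h) y" using act_comp[OF g hy(1)] X0_points by auto
  thus "act g x \<in> W" unfolding W_def using m_closed[OF g hy(1)] hy(2) by blast
qed

lemma W_pre: "g \<in> carrier G \<Longrightarrow> x \<in> points S' \<Longrightarrow> act g x \<in> W \<Longrightarrow> x \<in> W"
  using W_inv[OF inv_closed] act_inv by metis

lemma vS'_W: "verts S' \<subseteq> W"
proof -
  have "verts S' \<subseteq> verts (TA \<one>\<^bsub>G\<^esub>)" using subdiv_verts[OF TAsub[OF one_closed]] .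
  also have "\<dots> \<subseteq> X0" unfolding X0_def using one_closed by blast
  finally show ?thesis using X0_W by blast
qed

definition BW :: "'p wmg" where "BW = subw S' W"

lemma BW: "subdivision BW S'" unfolding BW_def using SUB[OF wfS' finW vS'_W W_points] .

lemma vBW: "verts BW = W" unfolding BW_def by simp

lemma wfBW: "wf_wmg BW" using subdiv_wf[OF BW] .

lemma refine_W:
  assumes g: "g \<in> carrier G"
  shows "refine_setup S' S' (TA g) (TB g) BW BW (act g)"
proof -
  note t = TAB[OF g]
  show ?thesis
  proof (unfold_locales)
    show "\<forall>f\<in>edges (TA g). \<not> contracted (act g) f" using act_nc[OF g] t by blast
    show "verts (TA g) \<subseteq> verts BW" "verts (TB g) \<subseteq> verts BW"
      using vBW X0_W g unfolding X0_def by auto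
    show "act g ` verts BW \<subseteq> verts BW" using W_inv[OF g] vBW by auto
    show "\<forall>x\<in>points S'. act g x \<in> verts BW \<longrightarrow> x \<in> verts BW" using W_pre[OF g] vBW by auto
  qed (use wfS' t BW in auto)
qed

definition M :: "'p set" where "M = {epar q (elen q / 2) | q. q \<in> edges BW}"

lemma M_alt: "M = (\<lambda>q. epar q (elen q / 2)) ` edges BW" unfolding M_def by auto

lemma finM: "finite M" unfolding M_alt using wf_finite(2)[OF wfBW] by simp

lemma M_points: "M \<subseteq> points S'"
proof
  fix x assume "x \<in> M"
  then obtain q where q: "q \<in> edges BW" "x = epar q (elen q / 2)" unfolding M_def by blast
  thus "x \<in> points S'" using edge_points[OF q(1), of "elen q / 2"] wf_edgeD(1)[OF wfBW q(1)]
      subdiv_points[OF BW] by auto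
qed

lemma M_W: "M \<inter> W = {}"
proof -
  { fix x assume "x \<in> M" "x \<in> W"
    then obtain q where q: "q \<in> edges BW" "x = epar q (elen q / 2)" unfolding M_def by blast
    have "x \<notin> verts BW" using wf_interior_notvert[OF wfBW q(1), of "elen q / 2"] wf_edgeD(1)[OF wfBW q(1)] q
      by auto
    hence False using \<open>x \<in> W\<close> vBW by simp }
  thus ?thesis by blast
qed

lemma M_inv: "g \<in> carrier G \<Longrightarrow> x \<in> M \<Longrightarrow> act g x \<in> M"
proof -
  assume g: "g \<in> carrier G" and "x \<in> M"
  then obtain q where q: "q \<in> edges BW" "x = epar q (elen q / 2)" unfolding M_def by blast
  interpret r: refine_setup S' S' "TA g" "TB g" BW BW "act g" using refine_W[OF g] .
  have "\<exists>q'\<in>edges BW. maps_onto (act g) q q'"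
    using r.pl_B r.nc_B q(1) unfolding pl_comb_def by blast
  then obtain q' where q': "q' \<in> edges BW" "maps_onto (act g) q q'" by blast
  have l: "elen q > 0" using wf_edgeD(1)[OF wfBW q(1)] .
  have "act g x = epar q' (elen q' / elen q * (elen q / 2))" using mapsD[OF q'(2), of "elen q / 2"] q l by simp
  also have "elen q' / elen q * (elen q / 2) = elen q' / 2" using l by simp
  finally show "act g x \<in> M" unfolding M_def using q'(1) by blast
qed

lemma M_pre: "g \<in> carrier G \<Longrightarrow> x \<in> points S' \<Longrightarrow> act g x \<in> M \<Longrightarrow> x \<in> M"
  using M_inv[OF inv_closed] act_inv by metis

definition W2 :: "'p set" where "W2 = W \<union> M"

lemma W2_inv: "g \<in> carrier G \<Longrightarrow> x \<in> W2 \<Longrightarrow> act g x \<in> W2"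
  unfolding W2_def using W_inv M_inv by blast

lemma W2_pre: "g \<in> carrier G \<Longrightarrow> x \<in> points S' \<Longrightarrow> act g x \<in> W2 \<Longrightarrow> x \<in> W2"
  unfolding W2_def using W_pre M_pre by blast

lemma W2_points: "W2 \<subseteq> points S'" unfolding W2_def using W_points M_points by blast

lemma finW2: "finite W2" unfolding W2_def using finW finM by blast

definition B :: "'p wmg" where "B = subw S' W2"

lemma B: "subdivision B S'" unfolding B_def using SUB[OF wfS' finW2 _ W2_points] vS'_W unfolding W2_def by blast

lemma vB: "verts B = W2" unfolding B_def by simp

lemma wfB: "wf_wmg B" using subdiv_wf[OF B] .

lemma bB: "bdry B = bdry S'" using subdiv_bdry[OF B] .

lemma refine_W2:
  assumes g: "g \<in> carrier G"
  shows "refine_setup S' S' (TA g) (TB g) B B (act g)"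
proof -
  note t = TAB[OF g]
  show ?thesis
  proof (unfold_locales)
    show "\<forall>f\<in>edges (TA g). \<not> contracted (act g) f" using act_nc[OF g] t by blast
    show "verts (TA g) \<subseteq> verts B" "verts (TB g) \<subseteq> verts B"
      using vB X0_W g unfolding X0_def W2_def by auto
    show "act g ` verts B \<subseteq> verts B" using W2_inv[OF g] vB by auto
    show "\<forall>x\<in>points S'. act g x \<in> verts B \<longrightarrow> x \<in> verts B" using W2_pre[OF g] vB by auto
  qed (use wfS' t B in auto)
qed

lemma act_B:
  assumes g: "g \<in> carrier G"
  shows "pl_comb B B (act g)" "\<forall>p\<in>edges B. \<not> contracted (act g) p"
    "\<forall>v'\<in>verts B - bdry B. harmonic_at B B (act g) v'"
proof -
  interpret r: refine_setup S' S' "TA g" "TB g" B B "act g" using refine_W2[OF g] .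
  show "pl_comb B B (act g)" "\<forall>p\<in>edges B. \<not> contracted (act g) p" using r.pl_B r.nc_B by auto
  show "\<forall>v'\<in>verts B - bdry B. harmonic_at B B (act g) v'" using r.harm_B TAB[OF g] by blast
qed

lemma one_end:
  assumes p: "p \<in> edges B"
  shows "esrc p \<in> W \<longleftrightarrow> etgt p \<notin> W"
proof -
  have sub: "verts BW \<subseteq> verts B" using vBW vB unfolding W2_def by auto
  obtain q c where q: "q \<in> edges BW" "seg q c p" using RF[OF wfS' BW B sub p] by blast
  have lq: "elen q > 0" using wf_edgeD(1)[OF wfBW q(1)] .
  have lp: "elen p > 0" using wf_edgeD(1)[OF wfB p] .
  have cs: "0 \<le> c" "c + elen p \<le> elen q" using q(2) unfolding seg_def by auto
  have onq: "s = 0 \<or> s = elen q / 2 \<or> s = elen q" if s: "0 \<le> s" "s \<le> elen q" "epar q s \<in> W2" for s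
  proof (rule ccontr)
    assume ne: "\<not> (s = 0 \<or> s = elen q / 2 \<or> s = elen q)"
    hence s': "0 < s" "s < elen q" using s by auto
    have "epar q s \<notin> W" using wf_interior_notvert[OF wfBW q(1) s'] vBW by simp
    hence "epar q s \<in> M" using s(3) unfolding W2_def by simp
    then obtain q' where q': "q' \<in> edges BW" "epar q s = epar q' (elen q' / 2)" unfolding M_def by blast
    have lq': "elen q' > 0" using wf_edgeD(1)[OF wfBW q'(1)] .
    have "(q' = q \<and> elen q' / 2 = s) \<or> (q' = erev q \<and> elen q' / 2 = elen q - s)"
      by (rule W4[OF wfBW q(1) q'(1) s']) (use lq' q' in auto)
    thus False using ne by auto
  qed
  have mid: "epar q (elen q / 2) \<in> W2" unfolding W2_def M_def using q(1) by blast
  have pint: "epar q (c + x) \<notin> W2" if "0 < x" "x < elen p" for x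
    using wf_interior_notvert[OF wfB p that] segD[OF q(2), of x] that vB by simp
  have e0: "epar q c \<in> W2" using wf_edgeD(4)[OF wfB p] segD[OF q(2), of 0] lp vB by (simp add: esrc_def)
  have e1: "epar q (c + elen p) \<in> W2" using wf_edgeD(5)[OF wfB p] segD[OF q(2), of "elen p"] lp vB
    by (simp add: etgt_def)
  have c1: "c = 0 \<or> c = elen q / 2 \<or> c = elen q" using onq[OF cs(1) _ e0] cs lp by auto
  have c2: "c + elen p = 0 \<or> c + elen p = elen q / 2 \<or> c + elen p = elen q" using onq[OF _ cs(2) e1] cs lp by auto
  have nm: "\<not> (c < elen q / 2 \<and> elen q / 2 < c + elen p)"
  proof
    assume h: "c < elen q / 2 \<and> elen q / 2 < c + elen p"
    thus False using pint[of "elen q / 2 - c"] mid by auto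
  qed
  have cases: "(c = 0 \<and> c + elen p = elen q / 2) \<or> (c = elen q / 2 \<and> c + elen p = elen q)"
    using c1 c2 nm lp lq by auto
  have W0: "epar q 0 \<in> W" "epar q (elen q) \<in> W"
    using wf_edgeD(4,5)[OF wfBW q(1)] vBW by (auto simp: esrc_def etgt_def)
  have Wm: "epar q (elen q / 2) \<notin> W" using M_W mid unfolding W2_def M_def using q(1) by blast
  have sp: "esrc p = epar q c" "etgt p = epar q (c + elen p)"
    using segD[OF q(2), of 0] segD[OF q(2), of "elen p"] lp by (auto simp: esrc_def etgt_def)
  from cases show ?thesis
  proof (elim disjE conjE)
    assume h: "c = 0" "c + elen p = elen q / 2"
    have "esrc p = epar q 0" using sp h by simp
    moreover have "etgt p = epar q (elen q / 2)" using sp(2) h(2) by simp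
    ultimately have "esrc p = epar q 0" "etgt p = epar q (elen q / 2)" by simp_all
    thus ?thesis using W0 Wm by simp
  next
    assume h: "c = elen q / 2" "c + elen p = elen q"
    have "esrc p = epar q (elen q / 2)" using sp(1) h(1) by simp
    moreover have "etgt p = epar q (elen q)" using sp(2) h(2) by simp
    ultimately have "esrc p = epar q (elen q / 2)" "etgt p = epar q (elen q)" by simp_all
    thus ?thesis using W0 Wm by simp
  qed
qed

lemma ends_orb:
  assumes p: "p \<in> edges B" and g: "g \<in> carrier G"
  shows "act g (esrc p) \<noteq> etgt p"
proof
  assume h: "act g (esrc p) = etgt p"
  have sP: "esrc p \<in> points S'" using wf_edgeD(4)[OF wfB p] vB W2_points by auto
  have "esrc p \<in> W \<longleftrightarrow> etgt p \<in> W"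
  proof
    assume "esrc p \<in> W" thus "etgt p \<in> W" using W_inv[OF g, of "esrc p"] h by simp
  next
    assume "etgt p \<in> W" thus "esrc p \<in> W" using W_pre[OF g sP] h by simp
  qed
  thus False using one_end[OF p] by simp
qed

end

declare split_paired_Ex[simp del] split_paired_All[simp del]

context esetup
begin

definition gE :: "'g \<Rightarrow> 'p edge \<Rightarrow> 'p edge" where
  "gE g p = (THE q. q \<in> edges B \<and> maps_onto (act g) p q)"

lemma gE_ok:
  assumes g: "g \<in> carrier G" and p: "p \<in> edges B"
  shows "gE g p \<in> edges B \<and> maps_onto (act g) p (gE g p)"
proof -
  obtain q where q: "q \<in> edges B" "maps_onto (act g) p q"
    using act_B(1,2)[OF g] p unfolding pl_comb_def by blast
  have lp: "elen p > 0" using wf_edgeD(1)[OF wfB p] .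
  have "gE g p = q" unfolding gE_def
  proof (rule the_equality)
    show "q \<in> edges B \<and> maps_onto (act g) p q" using q by simp
    fix q' assume "q' \<in> edges B \<and> maps_onto (act g) p q'"
    thus "q' = q" using MT[OF wfB q(1) _ lp q(2)] by blast
  qed
  thus ?thesis using q by simp
qed

lemma gE_in: "g \<in> carrier G \<Longrightarrow> p \<in> edges B \<Longrightarrow> gE g p \<in> edges B" using gE_ok by blast

lemma gE_eq:
  assumes g: "g \<in> carrier G" and p: "p \<in> edges B" and q: "q \<in> edges B" and m: "maps_onto (act g) p q"
  shows "gE g p = q"
  using MT[OF wfB gE_in[OF g p] q wf_edgeD(1)[OF wfB p]] gE_ok[OF g p] m by metis

lemma gE_par:
  assumes g: "g \<in> carrier G" and p: "p \<in> edges B" and x: "0 \<le> x" "x \<le> elen p"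
  shows "act g (epar p x) = epar (gE g p) (elen (gE g p) / elen p * x)"
  using mapsD[OF conjunct2[OF gE_ok[OF g p]] x] .

lemma gE_src: "g \<in> carrier G \<Longrightarrow> p \<in> edges B \<Longrightarrow> esrc (gE g p) = act g (esrc p)"
proof -
  assume g: "g \<in> carrier G" and p: "p \<in> edges B"
  have lp: "elen p > 0" using wf_edgeD(1)[OF wfB p] .
  show ?thesis using gE_par[OF g p, of 0] lp by (simp add: esrc_def)
qed

lemma gE_tgt: "g \<in> carrier G \<Longrightarrow> p \<in> edges B \<Longrightarrow> etgt (gE g p) = act g (etgt p)"
proof -
  assume g: "g \<in> carrier G" and p: "p \<in> edges B"
  have lp: "elen p > 0" using wf_edgeD(1)[OF wfB p] .
  show ?thesis using gE_par[OF g p, of "elen p"] lp by (simp add: etgt_def)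
qed

lemma pointsB: "p \<in> edges B \<Longrightarrow> 0 \<le> x \<Longrightarrow> x \<le> elen p \<Longrightarrow> epar p x \<in> points S'"
  using edge_points[of p B x] subdiv_points[OF B] by auto

lemma gE_comp:
  assumes g: "g \<in> carrier G" and h: "h \<in> carrier G" and p: "p \<in> edges B"
  shows "gE (g \<otimes>\<^bsub>G\<^esub> h) p = gE g (gE h p)"
proof (rule gE_eq[OF m_closed[OF g h] p gE_in[OF g gE_in[OF h p]]])
  let ?q1 = "gE h p" and ?q = "gE g (gE h p)"
  have q1: "?q1 \<in> edges B" using gE_in[OF h p] .
  have lp: "elen p > 0" using wf_edgeD(1)[OF wfB p] .
  have l1: "elen ?q1 > 0" using wf_edgeD(1)[OF wfB q1] .
  show "maps_onto (act (g \<otimes>\<^bsub>G\<^esub> h)) p ?q"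
    unfolding maps_onto_def
  proof
    fix x assume x: "x \<in> {0..elen p}"
    have r: "elen ?q1 / elen p * x \<in> {0..elen ?q1}"
    proof -
      have "elen ?q1 / elen p * x \<le> elen ?q1 / elen p * elen p" using x lp l1 by (intro mult_left_mono) auto
      thus ?thesis using x lp l1 by auto
    qed
    have "act (g \<otimes>\<^bsub>G\<^esub> h) (epar p x) = act g (act h (epar p x))"
      using act_comp[OF g h pointsB[OF p]] x by auto
    also have "act h (epar p x) = epar ?q1 (elen ?q1 / elen p * x)" using gE_par[OF h p] x by auto
    also have "act g (epar ?q1 (elen ?q1 / elen p * x)) = epar ?q (elen ?q / elen ?q1 * (elen ?q1 / elen p * x))"
      using gE_par[OF g q1] r by auto
    also have "elen ?q / elen ?q1 * (elen ?q1 / elen p * x) = elen ?q / elen p * x" using l1 by simp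
    finally show "act (g \<otimes>\<^bsub>G\<^esub> h) (epar p x) = epar ?q (elen ?q / elen p * x)" .
  qed
qed

lemma gE_one: "p \<in> edges B \<Longrightarrow> gE \<one>\<^bsub>G\<^esub> p = p"
proof (rule gE_eq[OF one_closed _ _])
  assume p: "p \<in> edges B"
  show "p \<in> edges B" "p \<in> edges B" using p by auto
  have lp: "elen p > 0" using wf_edgeD(1)[OF wfB p] .
  show "maps_onto (act \<one>\<^bsub>G\<^esub>) p p"
    unfolding maps_onto_def using act_one pointsB[OF p] lp by auto
qed

lemma gE_inv: "g \<in> carrier G \<Longrightarrow> p \<in> edges B \<Longrightarrow> gE (inv\<^bsub>G\<^esub> g) (gE g p) = p"
  using gE_comp[OF inv_closed, of g g p] group.l_inv[OF gG] gE_one by metis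

lemma gE_inv2: "g \<in> carrier G \<Longrightarrow> p \<in> edges B \<Longrightarrow> gE g (gE (inv\<^bsub>G\<^esub> g) p) = p"
  using gE_comp[OF _ inv_closed, of g g p] group.r_inv[OF gG] gE_one by metis

lemma gE_inj: "g \<in> carrier G \<Longrightarrow> p \<in> edges B \<Longrightarrow> p' \<in> edges B \<Longrightarrow> gE g p = gE g p' \<Longrightarrow> p = p'"
  using gE_inv by metis

lemma gE_erev:
  assumes g: "g \<in> carrier G" and p: "p \<in> edges B"
  shows "gE g (erev p) = erev (gE g p)"
proof (rule gE_eq[OF g wf_edgeD(8)[OF wfB p] wf_edgeD(8)[OF wfB gE_in[OF g p]]])
  show "maps_onto (act g) (erev p) (erev (gE g p))"
    using maps_onto_erev[OF conjunct2[OF gE_ok[OF g p]] wf_edgeD(1)[OF wfB p]] wf_edgeD(1)[OF wfB gE_in[OF g p]]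
    by simp
qed

lemma gE_fix:
  assumes g: "g \<in> carrier G" and p: "p \<in> edges B" and f: "gE g p = p" and x: "0 \<le> x" "x \<le> elen p"
  shows "act g (epar p x) = epar p x"
  using gE_par[OF g p x] f wf_edgeD(1)[OF wfB p] by simp

lemma gE_not_flip:
  assumes g: "g \<in> carrier G" and p: "p \<in> edges B"
  shows "gE g p \<noteq> erev p"
proof
  assume "gE g p = erev p"
  hence "act g (esrc p) = esrc (erev p)" using gE_src[OF g p] by simp
  also have "esrc (erev p) = etgt p" using erev_src[of p] wf_edgeD(1)[OF wfB p] by simp
  finally have "act g (esrc p) = etgt p" .
  thus False using ends_orb[OF p g] by simp
qed

definition orb :: "'p \<Rightarrow> 'p set" where "orb x = (\<lambda>g. act g x) ` carrier G"

lemma orb_act: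
  assumes g: "g \<in> carrier G" and x: "x \<in> points S'"
  shows "orb (act g x) = orb x"
proof
  show "orb (act g x) \<subseteq> orb x"
  proof
    fix y assume "y \<in> orb (act g x)"
    then obtain h where h: "h \<in> carrier G" "y = act h (act g x)" unfolding orb_def by blast
    hence "y = act (h \<otimes>\<^bsub>G\<^esub> g) x" using act_comp[OF h(1) g x] by simp
    thus "y \<in> orb x" unfolding orb_def using m_closed[OF h(1) g] by blast
  qed
  show "orb x \<subseteq> orb (act g x)"
  proof
    fix y assume "y \<in> orb x"
    then obtain h where h: "h \<in> carrier G" "y = act h x" unfolding orb_def by blast
    have "act (h \<otimes>\<^bsub>G\<^esub> inv\<^bsub>G\<^esub> g) (act g x) = act h (act (inv\<^bsub>G\<^esub> g) (act g x))"
      using act_comp[OF h(1) inv_closed[OF g] actP[OF g x]] .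
    also have "\<dots> = y" using act_inv[OF g x] h by simp
    finally show "y \<in> orb (act g x)" unfolding orb_def using m_closed[OF h(1) inv_closed[OF g]] by force
  qed
qed

lemma orb_eqD:
  assumes x: "x \<in> points S'" and y: "y \<in> points S'" and e: "orb x = orb y"
  shows "\<exists>g\<in>carrier G. act g x = y"
proof -
  have "y \<in> orb y" unfolding orb_def using act_one[OF y] one_closed by force
  hence "y \<in> (\<lambda>g. act g x) ` carrier G" using e unfolding orb_def by simp
  then obtain g where "g \<in> carrier G" "y = act g x" by (rule imageE)
  thus ?thesis by auto
qed

lemma param_inj:
  assumes p: "p \<in> edges B" and s: "0 \<le> s" "s \<le> elen p" and t: "0 \<le> t" "t \<le> elen p"
    and e: "orb (epar p s) = orb (epar p t)"
  shows "s = t"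
proof -
  obtain g where g: "g \<in> carrier G" "act g (epar p s) = epar p t"
    using orb_eqD[OF pointsB[OF p s] pointsB[OF p t] e] by blast
  have lp: "elen p > 0" using wf_edgeD(1)[OF wfB p] .
  have vert: "x = 0 \<or> x = elen p" if "0 \<le> x" "x \<le> elen p" "epar p x \<in> W2" for x
    using wf_interior_notvert[OF wfB p, of x] that vB by force
  show ?thesis
  proof (cases "0 < s \<and> s < elen p")
    case True
    let ?q = "gE g p"
    have q: "?q \<in> edges B" using gE_in[OF g(1) p] .
    have lq: "elen ?q > 0" using wf_edgeD(1)[OF wfB q] .
    have ks: "0 < elen ?q / elen p * s" "elen ?q / elen p * s < elen ?q"
      using True lp lq by (auto simp: field_simps)
    have eq: "epar p t = epar ?q (elen ?q / elen p * s)" using gE_par[OF g(1) p s] g(2) by simp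
    show ?thesis
    proof (cases "0 < t \<and> t < elen p")
      case True
      have "(?q = p \<and> elen ?q / elen p * s = t) \<or> (?q = erev p \<and> elen ?q / elen p * s = elen p - t)"
        using W4[OF wfB p q _ _ ks] True eq by simp
      thus ?thesis using gE_not_flip[OF g(1) p] lp by auto
    next
      case False
      hence "t = 0 \<or> t = elen p" using t by auto
      hence "epar p t \<in> W2" using wf_edgeD(4,5)[OF wfB p] vB by (auto simp: esrc_def etgt_def)
      hence "epar p s \<in> W2" using W2_pre[OF g(1) pointsB[OF p s]] g(2) by simp
      thus ?thesis using vert[OF s] True by auto
    qed
  next
    case False
    hence s01: "s = 0 \<or> s = elen p" using s by auto
    hence "epar p s \<in> W2" using wf_edgeD(4,5)[OF wfB p] vB by (auto simp: esrc_def etgt_def)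
    hence "epar p t \<in> W2" using W2_inv[OF g(1)] g(2) by metis
    hence t01: "t = 0 \<or> t = elen p" using vert[OF t] by simp
    show ?thesis
    proof (rule ccontr)
      assume "s \<noteq> t"
      hence "(s = 0 \<and> t = elen p) \<or> (s = elen p \<and> t = 0)" using s01 t01 by auto
      thus False
      proof
        assume "s = 0 \<and> t = elen p"
        hence "act g (esrc p) = etgt p" using g(2) by (simp add: esrc_def etgt_def)
        thus False using ends_orb[OF p g(1)] by simp
      next
        assume h: "s = elen p \<and> t = 0"
        hence "act g (etgt p) = esrc p" using g(2) by (simp add: esrc_def etgt_def)
        hence "act (inv\<^bsub>G\<^esub> g) (esrc p) = etgt p"
          using act_inv[OF g(1) pointsB[OF p, of "elen p"]] lp by (simp add: etgt_def)
        thus False using ends_orb[OF p inv_closed[OF g(1)]] by simp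
      qed
    qed
  qed
qed

end

declare split_paired_Ex[simp del] split_paired_All[simp del]

context esetup
begin

section \<open>Lengths of quotient edges\<close>

definition mu :: "'p edge \<Rightarrow> real" where "mu p = elen p / real (weight B p)"

definition Stab :: "'p edge \<Rightarrow> 'g set" where "Stab p = {g\<in>carrier G. gE g p = p}"

definition lam :: "'p edge \<Rightarrow> real" where
  "lam p = real (card (Stab p)) * (\<Prod>g\<in>carrier G. mu (gE g p)) powr (1 / real (card (carrier G)))"

lemma mu_pos: "p \<in> edges B \<Longrightarrow> mu p > 0"
  unfolding mu_def using wf_edgeD(1,10)[OF wfB] by simp

lemma mu_erev: "p \<in> edges B \<Longrightarrow> mu (erev p) = mu p"
  unfolding mu_def using wf_edgeD(9)[OF wfB] by simp

lemma finStab: "finite (Stab p)" unfolding Stab_def using finG by simp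

lemma Stab_card_pos: "p \<in> edges B \<Longrightarrow> card (Stab p) > 0"
proof -
  assume p: "p \<in> edges B"
  have "\<one>\<^bsub>G\<^esub> \<in> Stab p" unfolding Stab_def using one_closed gE_one[OF p] by simp
  thus ?thesis using finStab card_gt_0_iff by blast
qed

lemma prod_pos: "p \<in> edges B \<Longrightarrow> (\<Prod>g\<in>carrier G. mu (gE g p)) > 0"
  using mu_pos gE_in by (intro prod_pos) auto

lemma lam_pos: "p \<in> edges B \<Longrightarrow> lam p > 0"
proof -
  assume p: "p \<in> edges B"
  have a: "real (card (Stab p)) > 0" using Stab_card_pos[OF p] by simp
  have b: "(\<Prod>g\<in>carrier G. mu (gE g p)) powr (1 / real (card (carrier G))) > 0" using prod_pos[OF p] by simp
  show ?thesis unfolding lam_def by (rule mult_pos_pos[OF a b])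
qed

lemma inv_cancel_l: "h \<in> carrier G \<Longrightarrow> a \<in> carrier G \<Longrightarrow> inv\<^bsub>G\<^esub> h \<otimes>\<^bsub>G\<^esub> (h \<otimes>\<^bsub>G\<^esub> a) = a"
proof -
  interpret G: group G by (rule gG)
  show "h \<in> carrier G \<Longrightarrow> a \<in> carrier G \<Longrightarrow> inv\<^bsub>G\<^esub> h \<otimes>\<^bsub>G\<^esub> (h \<otimes>\<^bsub>G\<^esub> a) = a"
    by (simp add: G.m_assoc[symmetric])
qed

lemma inv_cancel_l2: "h \<in> carrier G \<Longrightarrow> a \<in> carrier G \<Longrightarrow> h \<otimes>\<^bsub>G\<^esub> (inv\<^bsub>G\<^esub> h \<otimes>\<^bsub>G\<^esub> a) = a"
proof -
  interpret G: group G by (rule gG)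
  show "h \<in> carrier G \<Longrightarrow> a \<in> carrier G \<Longrightarrow> h \<otimes>\<^bsub>G\<^esub> (inv\<^bsub>G\<^esub> h \<otimes>\<^bsub>G\<^esub> a) = a"
    by (simp add: G.m_assoc[symmetric])
qed

lemma rmult_bij:
  assumes h: "h \<in> carrier G"
  shows "bij_betw (\<lambda>g. g \<otimes>\<^bsub>G\<^esub> h) (carrier G) (carrier G)"
proof (rule bij_betw_byWitness[of _ "\<lambda>g. g \<otimes>\<^bsub>G\<^esub> inv\<^bsub>G\<^esub> h"])
  interpret G: group G by (rule gG)
  show "\<forall>a\<in>carrier G. a \<otimes>\<^bsub>G\<^esub> h \<otimes>\<^bsub>G\<^esub> inv\<^bsub>G\<^esub> h = a" using h by (simp add: G.m_assoc inv_cancel_l inv_cancel_l2)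
  show "\<forall>a'\<in>carrier G. a' \<otimes>\<^bsub>G\<^esub> inv\<^bsub>G\<^esub> h \<otimes>\<^bsub>G\<^esub> h = a'" using h by (simp add: G.m_assoc inv_cancel_l inv_cancel_l2)
  show "(\<lambda>g. g \<otimes>\<^bsub>G\<^esub> h) ` carrier G \<subseteq> carrier G" using h by auto
  show "(\<lambda>g. g \<otimes>\<^bsub>G\<^esub> inv\<^bsub>G\<^esub> h) ` carrier G \<subseteq> carrier G" using h by auto
qed

lemma prod_inv:
  assumes h: "h \<in> carrier G" and p: "p \<in> edges B"
  shows "(\<Prod>g\<in>carrier G. mu (gE g (gE h p))) = (\<Prod>g\<in>carrier G. mu (gE g p))"
proof -
  have "(\<Prod>g\<in>carrier G. mu (gE g (gE h p))) = (\<Prod>g\<in>carrier G. mu (gE (g \<otimes>\<^bsub>G\<^esub> h) p))"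
    using gE_comp[OF _ h p] by (intro prod.cong) auto
  also have "\<dots> = (\<Prod>g\<in>carrier G. mu (gE g p))"
    using prod.reindex_bij_betw[OF rmult_bij[OF h], of "\<lambda>g. mu (gE g p)"] by simp
  finally show ?thesis .
qed

lemma Stab_inv:
  assumes h: "h \<in> carrier G" and p: "p \<in> edges B"
  shows "card (Stab (gE h p)) = card (Stab p)"
proof -
  interpret G: group G by (rule gG)
  have hp: "gE h p \<in> edges B" using gE_in[OF h p] .
  have "bij_betw (\<lambda>g. h \<otimes>\<^bsub>G\<^esub> g \<otimes>\<^bsub>G\<^esub> inv\<^bsub>G\<^esub> h) (Stab p) (Stab (gE h p))"
  proof (rule bij_betw_byWitness[of _ "\<lambda>g. inv\<^bsub>G\<^esub> h \<otimes>\<^bsub>G\<^esub> g \<otimes>\<^bsub>G\<^esub> h"])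
    show "\<forall>a\<in>Stab p. inv\<^bsub>G\<^esub> h \<otimes>\<^bsub>G\<^esub> (h \<otimes>\<^bsub>G\<^esub> a \<otimes>\<^bsub>G\<^esub> inv\<^bsub>G\<^esub> h) \<otimes>\<^bsub>G\<^esub> h = a"
      using h unfolding Stab_def by (auto simp: G.m_assoc inv_cancel_l inv_cancel_l2)
    show "\<forall>a'\<in>Stab (gE h p). h \<otimes>\<^bsub>G\<^esub> (inv\<^bsub>G\<^esub> h \<otimes>\<^bsub>G\<^esub> a' \<otimes>\<^bsub>G\<^esub> h) \<otimes>\<^bsub>G\<^esub> inv\<^bsub>G\<^esub> h = a'"
      using h unfolding Stab_def by (auto simp: G.m_assoc inv_cancel_l inv_cancel_l2)
    show "(\<lambda>g. h \<otimes>\<^bsub>G\<^esub> g \<otimes>\<^bsub>G\<^esub> inv\<^bsub>G\<^esub> h) ` Stab p \<subseteq> Stab (gE h p)"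
    proof
      fix x assume "x \<in> (\<lambda>g. h \<otimes>\<^bsub>G\<^esub> g \<otimes>\<^bsub>G\<^esub> inv\<^bsub>G\<^esub> h) ` Stab p"
      then obtain g where g: "g \<in> carrier G" "gE g p = p" "x = h \<otimes>\<^bsub>G\<^esub> g \<otimes>\<^bsub>G\<^esub> inv\<^bsub>G\<^esub> h"
        unfolding Stab_def by blast
      have "gE x (gE h p) = gE (h \<otimes>\<^bsub>G\<^esub> g) (gE (inv\<^bsub>G\<^esub> h) (gE h p))"
        using gE_comp[OF _ _ hp, of "h \<otimes>\<^bsub>G\<^esub> g" "inv\<^bsub>G\<^esub> h"] g h by simp
      also have "\<dots> = gE (h \<otimes>\<^bsub>G\<^esub> g) p" using gE_inv[OF h p] by simp
      also have "\<dots> = gE h (gE g p)" using gE_comp[OF h g(1) p] .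
      finally have "gE x (gE h p) = gE h p" using g by simp
      thus "x \<in> Stab (gE h p)" unfolding Stab_def using g h by simp
    qed
    show "(\<lambda>g. inv\<^bsub>G\<^esub> h \<otimes>\<^bsub>G\<^esub> g \<otimes>\<^bsub>G\<^esub> h) ` Stab (gE h p) \<subseteq> Stab p"
    proof
      fix x assume "x \<in> (\<lambda>g. inv\<^bsub>G\<^esub> h \<otimes>\<^bsub>G\<^esub> g \<otimes>\<^bsub>G\<^esub> h) ` Stab (gE h p)"
      then obtain g where g: "g \<in> carrier G" "gE g (gE h p) = gE h p" "x = inv\<^bsub>G\<^esub> h \<otimes>\<^bsub>G\<^esub> g \<otimes>\<^bsub>G\<^esub> h"
        unfolding Stab_def by blast
      have "gE x p = gE (inv\<^bsub>G\<^esub> h \<otimes>\<^bsub>G\<^esub> g) (gE h p)"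
        using gE_comp[OF _ h p, of "inv\<^bsub>G\<^esub> h \<otimes>\<^bsub>G\<^esub> g"] g h by simp
      also have "\<dots> = gE (inv\<^bsub>G\<^esub> h) (gE g (gE h p))" using gE_comp[OF inv_closed[OF h] g(1) hp] .
      also have "\<dots> = p" using g(2) gE_inv[OF h p] by simp
      finally show "x \<in> Stab p" unfolding Stab_def using g h by simp
    qed
  qed
  thus ?thesis by (rule bij_betw_same_card[symmetric])
qed

lemma lam_inv: "h \<in> carrier G \<Longrightarrow> p \<in> edges B \<Longrightarrow> lam (gE h p) = lam p"
  unfolding lam_def using prod_inv Stab_inv by simp

lemma lam_erev:
  assumes p: "p \<in> edges B"
  shows "lam (erev p) = lam p"
proof -
  have rp: "erev p \<in> edges B" using wf_edgeD(8)[OF wfB p] .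
  have "mu (gE g (erev p)) = mu (gE g p)" if "g \<in> carrier G" for g
    using gE_erev[OF that p] mu_erev[OF gE_in[OF that p]] by simp
  hence P: "(\<Prod>g\<in>carrier G. mu (gE g (erev p))) = (\<Prod>g\<in>carrier G. mu (gE g p))" by (rule prod.cong[OF refl])
  have "Stab (erev p) = Stab p"
  proof -
    have "gE g (erev p) = erev p \<longleftrightarrow> gE g p = p" if g: "g \<in> carrier G" for g
    proof -
      have "gE g (erev p) = erev p \<longleftrightarrow> erev (gE g p) = erev p" using gE_erev[OF g p] by simp
      also have "\<dots> \<longleftrightarrow> gE g p = p"
        using wf_erev_erev[OF wfB gE_in[OF g p]] wf_erev_erev[OF wfB p] by metis
      finally show ?thesis .
    qed
    thus ?thesis unfolding Stab_def by auto
  qed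
  thus ?thesis unfolding lam_def using P by simp
qed

section \<open>The quotient graph\<close>

definition QE :: "'p edge \<Rightarrow> 'p set edge" where
  "QE p = (lam p, \<lambda>t. if t \<in> {0..lam p} then orb (epar p (t * elen p / lam p)) else undefined)"

definition Q :: "'p set wmg" where
  "Q = \<lparr>verts = orb ` W2, edges = QE ` edges B, weight = (\<lambda>_. 1), bdry = orb ` bdry S'\<rparr>"

lemma Q_simps[simp]: "verts Q = orb ` W2" "edges Q = QE ` edges B" "weight Q E = 1" "bdry Q = orb ` bdry S'"
  by (simp_all add: Q_def)

lemma QE_len[simp]: "elen (QE p) = lam p" by (simp add: QE_def)

lemma QE_par: "t \<in> {0..lam p} \<Longrightarrow> epar (QE p) t = orb (epar p (t * elen p / lam p))"
  by (simp add: QE_def)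

lemma QE_undef: "t \<notin> {0..lam p} \<Longrightarrow> epar (QE p) t = undefined"
  by (auto simp: QE_def)

lemma QE_src: "p \<in> edges B \<Longrightarrow> esrc (QE p) = orb (esrc p)"
  using lam_pos[of p] by (simp add: esrc_def QE_par)

lemma QE_tgt: "p \<in> edges B \<Longrightarrow> etgt (QE p) = orb (etgt p)"
  using lam_pos[of p] by (simp add: etgt_def QE_par)

lemma QE_g:
  assumes g: "g \<in> carrier G" and p: "p \<in> edges B"
  shows "QE (gE g p) = QE p"
proof -
  let ?q = "gE g p"
  have lq: "lam ?q = lam p" using lam_inv[OF g p] .
  have lp: "elen p > 0" using wf_edgeD(1)[OF wfB p] .
  have la: "lam p > 0" using lam_pos[OF p] .
  have "epar (QE ?q) t = epar (QE p) t" for t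
  proof (cases "t \<in> {0..lam p}")
    case True
    define x where "x = t * elen p / lam p"
    have x: "0 \<le> x" "x \<le> elen p"
    proof -
      have "t * elen p \<le> lam p * elen p" using True lp by (intro mult_right_mono) auto
      thus "0 \<le> x" "x \<le> elen p" using True lp la unfolding x_def by (auto simp: field_simps)
    qed
    have "epar (QE ?q) t = orb (epar ?q (t * elen ?q / lam p))" using QE_par[of t ?q] True lq by simp
    also have "t * elen ?q / lam p = elen ?q / elen p * x" using lp unfolding x_def by simp
    also have "orb (epar ?q (elen ?q / elen p * x)) = orb (act g (epar p x))" using gE_par[OF g p x] by simp
    also have "\<dots> = orb (epar p x)" using orb_act[OF g pointsB[OF p x]] .
    finally show ?thesis using QE_par[of t p] True x_def by simp
  next
    case False thus ?thesis using QE_undef[of t] lq by simp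
  qed
  hence "snd (QE ?q) = snd (QE p)" by (simp add: epar_def fun_eq_iff)
  moreover have "fst (QE ?q) = fst (QE p)" using lq by (simp add: QE_def)
  ultimately show ?thesis by (simp add: prod_eq_iff)
qed

lemma QE_erev:
  assumes p: "p \<in> edges B"
  shows "erev (QE p) = QE (erev p)"
proof -
  have lr: "lam (erev p) = lam p" using lam_erev[OF p] .
  have lp: "elen p > 0" using wf_edgeD(1)[OF wfB p] .
  have la: "lam p > 0" using lam_pos[OF p] .
  have "epar (erev (QE p)) t = epar (QE (erev p)) t" for t
  proof (cases "t \<in> {0..lam p}")
    case True
    have x: "0 \<le> t * elen p / lam p" "t * elen p / lam p \<le> elen p"
    proof -
      have "t * elen p \<le> lam p * elen p" using True lp by (intro mult_right_mono) auto
      thus "0 \<le> t * elen p / lam p" "t * elen p / lam p \<le> elen p" using True lp la by (auto simp: field_simps)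
    qed
    have "epar (erev (QE p)) t = epar (QE p) (lam p - t)" using True by (simp add: erev_par)
    also have "\<dots> = orb (epar p ((lam p - t) * elen p / lam p))" using True by (simp add: QE_par)
    also have "(lam p - t) * elen p / lam p = elen p - t * elen p / lam p" using la by (simp add: field_simps)
    also have "epar p (elen p - t * elen p / lam p) = epar (erev p) (t * elen p / lam p)"
      using x by (simp add: erev_par)
    also have "orb (epar (erev p) (t * elen p / lam p)) = epar (QE (erev p)) t"
      using True lr by (simp add: QE_par)
    finally show ?thesis .
  next
    case False
    thus ?thesis using lr by (auto simp: erev_def QE_def epar_def elen_def)
  qed
  hence "snd (erev (QE p)) = snd (QE (erev p))" by (simp add: epar_def fun_eq_iff)
  moreover have "fst (erev (QE p)) = fst (QE (erev p))" using lr by (simp add: QE_def erev_def elen_def)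
  ultimately show ?thesis by (simp add: prod_eq_iff)
qed

lemma orb_points:
  assumes x: "x \<in> points S'"
  shows "orb x \<in> points Q"
proof -
  have "x \<in> points B" using x subdiv_points[OF B] by simp
  hence "x \<in> W2 \<or> (\<exists>p\<in>edges B. \<exists>t. 0 < t \<and> t < elen p \<and> x = epar p t)"
    using points_cases[OF wfB] vB by simp
  thus ?thesis
  proof
    assume "x \<in> W2" thus ?thesis unfolding points_def by simp
  next
    assume "\<exists>p\<in>edges B. \<exists>t. 0 < t \<and> t < elen p \<and> x = epar p t"
    then obtain p t where p: "p \<in> edges B" "0 < t" "t < elen p" "x = epar p t" by blast
    have lp: "elen p > 0" using wf_edgeD(1)[OF wfB p(1)] .
    have la: "lam p > 0" using lam_pos[OF p(1)] .
    define s where "s = t * lam p / elen p"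
    have s: "s \<in> {0..lam p}"
    proof -
      have "t * lam p \<le> elen p * lam p" using p la by (intro mult_right_mono) auto
      thus ?thesis using p lp la unfolding s_def by (auto simp: field_simps)
    qed
    have e: "epar (QE p) s = orb x" using QE_par[OF s] p lp la unfolding s_def by simp
    have q: "QE p \<in> edges Q" using p(1) by simp
    have m: "orb x \<in> epar (QE p) ` {0..elen (QE p)}" using s e by (metis QE_len image_eqI)
    show ?thesis unfolding points_def by (rule UnI2, rule UN_I[of "QE p" _ _ "\<lambda>e. epar e ` {0..elen e}", OF q m])
  qed
qed

lemma points_Q: "points Q = orb ` points S'"
proof
  show "orb ` points S' \<subseteq> points Q" using orb_points by blast
  show "points Q \<subseteq> orb ` points S'"
  proof
    fix y assume "y \<in> points Q"
    hence "y \<in> orb ` W2 \<or> (\<exists>E\<in>edges Q. y \<in> epar E ` {0..elen E})" unfolding points_def by simp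
    thus "y \<in> orb ` points S'"
    proof
      assume "y \<in> orb ` W2" thus ?thesis using W2_points by blast
    next
      assume "\<exists>E\<in>edges Q. y \<in> epar E ` {0..elen E}"
      then obtain p t where p: "p \<in> edges B" "t \<in> {0..lam p}" "y = epar (QE p) t" by auto
      have lp: "elen p > 0" using wf_edgeD(1)[OF wfB p(1)] .
      have la: "lam p > 0" using lam_pos[OF p(1)] .
      have x: "0 \<le> t * elen p / lam p" "t * elen p / lam p \<le> elen p"
      proof -
        have "t * elen p \<le> lam p * elen p" using p lp by (intro mult_right_mono) auto
        thus "0 \<le> t * elen p / lam p" "t * elen p / lam p \<le> elen p" using p lp la by (auto simp: field_simps)
      qed
      have "y = orb (epar p (t * elen p / lam p))" using p QE_par by simp
      thus ?thesis using pointsB[OF p(1) x] by blast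
    qed
  qed
qed

end

declare split_paired_Ex[simp del] split_paired_All[simp del]

context esetup
begin

lemma QE_ranges:
  assumes p: "p \<in> edges B" and t: "t \<in> {0..lam p}"
  shows "0 \<le> t * elen p / lam p" "t * elen p / lam p \<le> elen p"
proof -
  have lp: "elen p > 0" using wf_edgeD(1)[OF wfB p] .
  have la: "lam p > 0" using lam_pos[OF p] .
  have "t * elen p \<le> lam p * elen p" using t lp by (intro mult_right_mono) auto
  thus "0 \<le> t * elen p / lam p" "t * elen p / lam p \<le> elen p" using t lp la by (auto simp: field_simps)
qed

lemma QE_interior:
  assumes p: "p \<in> edges B" and t: "0 < t" "t < lam p"
  shows "0 < t * elen p / lam p" "t * elen p / lam p < elen p"
proof -
  have lp: "elen p > 0" using wf_edgeD(1)[OF wfB p] .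
  have la: "lam p > 0" using lam_pos[OF p] .
  have "t * elen p < lam p * elen p" using t lp by (intro mult_strict_right_mono) auto
  thus "0 < t * elen p / lam p" "t * elen p / lam p < elen p" using t lp la by (auto simp: field_simps)
qed

lemma QE_erev_erev: "erev (erev (QE p)) = QE p"
  by (rule erev_erev) (simp add: QE_undef)

lemma wfQ: "wf_wmg Q"
proof -
  have fv: "finite (verts Q)" using finW2 by simp
  have fe: "finite (edges Q)" using wf_finite(2)[OF wfB] by simp
  have "bdry S' \<subseteq> W2" using wf_finite(3)[OF wfS'] vS'_W unfolding W2_def by blast
  hence bv: "bdry Q \<subseteq> verts Q" by (simp add: image_mono)
  have props: "elen E > 0 \<and>
        (\<forall>x. x \<notin> {0..elen E} \<longrightarrow> epar E x = undefined) \<and>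
        inj_on (epar E) {0..elen E} \<and>
        esrc E \<in> verts Q \<and> etgt E \<in> verts Q \<and> esrc E \<noteq> etgt E \<and>
        einterior E \<inter> verts Q = {} \<and>
        erev E \<in> edges Q \<and> weight Q (erev E) = weight Q E \<and> weight Q E > 0"
    if E: "E \<in> edges Q" for E
  proof -
    obtain p where p: "p \<in> edges B" "E = QE p" using E by auto
    have lp: "elen p > 0" using wf_edgeD(1)[OF wfB p(1)] .
    have la: "lam p > 0" using lam_pos[OF p(1)] .
    have a1: "elen E > 0" using la p by simp
    have a2: "\<forall>x. x \<notin> {0..elen E} \<longrightarrow> epar E x = undefined" using p QE_undef by simp
    have a3: "inj_on (epar E) {0..elen E}"
    proof (rule inj_onI)
      fix s t assume st: "s \<in> {0..elen E}" "t \<in> {0..elen E}" "epar E s = epar E t"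
      have st': "s \<in> {0..lam p}" "t \<in> {0..lam p}" using st p by auto
      have "orb (epar p (s * elen p / lam p)) = orb (epar p (t * elen p / lam p))"
        using st(3) p QE_par[OF st'(1)] QE_par[OF st'(2)] by simp
      hence "s * elen p / lam p = t * elen p / lam p"
        by (rule param_inj[OF p(1) QE_ranges[OF p(1) st'(1)] QE_ranges[OF p(1) st'(2)]])
      thus "s = t" using lp la by simp
    qed
    have sv: "esrc p \<in> W2" "etgt p \<in> W2" using wf_edgeD(4,5)[OF wfB p(1)] vB by auto
    have a4: "esrc E \<in> verts Q" "etgt E \<in> verts Q" using QE_src[OF p(1)] QE_tgt[OF p(1)] sv p by auto
    have a5: "esrc E \<noteq> etgt E"
    proof
      assume "esrc E = etgt E"
      hence "orb (esrc p) = orb (etgt p)" using QE_src[OF p(1)] QE_tgt[OF p(1)] p by simp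
      then obtain g where "g \<in> carrier G" "act g (esrc p) = etgt p"
        using orb_eqD sv W2_points by blast
      thus False using ends_orb[OF p(1)] by blast
    qed
    have a6: "einterior E \<inter> verts Q = {}"
    proof -
      { fix t w assume t: "0 < t" "t < lam p" and w: "w \<in> W2" and e: "epar E t = orb w"
        define x where "x = t * elen p / lam p"
        have x: "0 < x" "x < elen p" using QE_interior[OF p(1) t] x_def by auto
        have "orb (epar p x) = orb w" using e p t QE_par x_def by simp
        then obtain g where g: "g \<in> carrier G" "act g w = epar p x"
          using orb_eqD[OF _ pointsB[OF p(1)]] w W2_points x by (metis less_imp_le subsetD)
        hence "epar p x \<in> W2" using W2_inv w by metis
        hence False using wf_interior_notvert[OF wfB p(1) x] vB by simp }
      thus ?thesis unfolding einterior_def using p by auto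
    qed
    have a7: "erev E \<in> edges Q" using QE_erev[OF p(1)] wf_edgeD(8)[OF wfB p(1)] p by simp
    show ?thesis using a1 a2 a3 a4 a5 a6 a7 by simp
  qed
  have disj: "einterior E1 \<inter> einterior E2 = {}"
    if E: "E1 \<in> edges Q" "E2 \<in> edges Q" "E2 \<noteq> E1" "E2 \<noteq> erev E1" for E1 E2
  proof (rule ccontr)
    assume "einterior E1 \<inter> einterior E2 \<noteq> {}"
    then obtain t1 t2 where t: "0 < t1" "t1 < elen E1" "0 < t2" "t2 < elen E2" "epar E1 t1 = epar E2 t2"
      unfolding einterior_def by auto
    obtain p1 where p1: "p1 \<in> edges B" "E1 = QE p1" using E(1) by auto
    obtain p2 where p2: "p2 \<in> edges B" "E2 = QE p2" using E(2) by auto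
    define x1 where "x1 = t1 * elen p1 / lam p1"
    define x2 where "x2 = t2 * elen p2 / lam p2"
    have x1: "0 < x1" "x1 < elen p1" using QE_interior[OF p1(1)] t p1 x1_def by auto
    have x2: "0 < x2" "x2 < elen p2" using QE_interior[OF p2(1)] t p2 x2_def by auto
    have "orb (epar p1 x1) = orb (epar p2 x2)" using t p1 p2 QE_par x1_def x2_def by simp
    then obtain g where g: "g \<in> carrier G" "act g (epar p1 x1) = epar p2 x2"
      using orb_eqD pointsB[OF p1(1)] pointsB[OF p2(1)] x1 x2 by (metis less_imp_le)
    let ?q = "gE g p1"
    have q: "?q \<in> edges B" using gE_in[OF g(1) p1(1)] .
    have lq: "elen ?q > 0" using wf_edgeD(1)[OF wfB q] .
    have lp1: "elen p1 > 0" using wf_edgeD(1)[OF wfB p1(1)] .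
    have kx: "0 < elen ?q / elen p1 * x1" "elen ?q / elen p1 * x1 < elen ?q"
      using x1 lq lp1 by (auto simp: field_simps)
    have eq: "epar p2 x2 = epar ?q (elen ?q / elen p1 * x1)" using gE_par[OF g(1) p1(1)] x1 g(2) by simp
    have "?q = p2 \<or> ?q = erev p2" using W4[OF wfB p2(1) q x2 kx eq] by blast
    thus False
    proof
      assume "?q = p2"
      hence "E2 = E1" using QE_g[OF g(1) p1(1)] p1 p2 by simp
      thus False using E by simp
    next
      assume "?q = erev p2"
      hence "E1 = erev E2" using QE_g[OF g(1) p1(1)] QE_erev[OF p2(1)] p1 p2 by simp
      hence "E2 = erev E1" using p2 QE_erev_erev by simp
      thus False using E by simp
    qed
  qed
  show ?thesis unfolding wf_wmg_def using fv fe bv props disj by blast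
qed

lemma maps_QE: "p \<in> edges B \<Longrightarrow> maps_onto orb p (QE p)"
  unfolding maps_onto_def
proof
  fix x assume p: "p \<in> edges B" and x: "x \<in> {0..elen p}"
  have lp: "elen p > 0" using wf_edgeD(1)[OF wfB p] .
  have la: "lam p > 0" using lam_pos[OF p] .
  have r: "elen (QE p) / elen p * x \<in> {0..lam p}"
  proof -
    have "lam p / elen p * x \<le> lam p / elen p * elen p" using x lp la by (intro mult_left_mono) auto
    thus ?thesis using x lp la by auto
  qed
  have "epar (QE p) (elen (QE p) / elen p * x) = orb (epar p (elen (QE p) / elen p * x * elen p / lam p))"
    using QE_par[OF r] .
  also have "elen (QE p) / elen p * x * elen p / lam p = x" using lp la by simp
  finally show "orb (epar p x) = epar (QE p) (elen (QE p) / elen p * x)" by simp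
qed

lemma maps_QE_iff:
  assumes p: "p \<in> edges B" and E: "E \<in> edges Q"
  shows "maps_onto orb p E \<longleftrightarrow> E = QE p"
  using MT[OF wfQ _ E wf_edgeD(1)[OF wfB p] maps_QE[OF p]] maps_QE[OF p] p by auto

lemma RAT:
  assumes g: "g \<in> carrier G" and v: "v' \<in> W2" "v' \<notin> bdry S'"
    and p: "p \<in> edges B" "esrc p = v'"
  shows "\<exists>c. \<forall>p\<in>edges B. esrc p = v' \<longrightarrow> mu (gE g p) / mu p = c"
proof -
  have "v' \<in> verts B - bdry B" using v vB bB by simp
  then obtain c where c: "\<forall>f\<in>edges B. esrc f = act g v' \<longrightarrow>
      (\<Sum>p'\<in>{p'\<in>edges B. esrc p' = v' \<and> maps_onto (act g) p' f}.
          real (weight B p') / real (weight B f) * (elen f / elen p')) = c"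
    using act_B(3)[OF g] unfolding harmonic_at_def by blast
  have "mu (gE g q) / mu q = c" if q: "q \<in> edges B" "esrc q = v'" for q
  proof -
    let ?f = "gE g q"
    have f: "?f \<in> edges B" "esrc ?f = act g v'" using gE_in[OF g q(1)] gE_src[OF g q(1)] q by auto
    have S: "{p'\<in>edges B. esrc p' = v' \<and> maps_onto (act g) p' ?f} = {q}"
    proof (rule equalityI; rule subsetI)
      fix p' assume "p' \<in> {p'\<in>edges B. esrc p' = v' \<and> maps_onto (act g) p' ?f}"
      hence "p' \<in> edges B" "gE g p' = ?f" using gE_eq[OF g _ f(1)] by auto
      thus "p' \<in> {q}" using gE_inj[OF g _ q(1)] by blast
    next
      fix p' assume "p' \<in> {q}"
      thus "p' \<in> {p'\<in>edges B. esrc p' = v' \<and> maps_onto (act g) p' ?f}" using q gE_ok[OF g q(1)] by auto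
    qed
    have "(\<Sum>p'\<in>{p'\<in>edges B. esrc p' = v' \<and> maps_onto (act g) p' ?f}.
          real (weight B p') / real (weight B ?f) * (elen ?f / elen p')) = c" using c f by blast
    hence "real (weight B q) / real (weight B ?f) * (elen ?f / elen q) = c" unfolding S by simp
    moreover have "mu ?f / mu q = real (weight B q) / real (weight B ?f) * (elen ?f / elen q)"
      unfolding mu_def using wf_edgeD(1,10)[OF wfB q(1)] wf_edgeD(1,10)[OF wfB f(1)] by (simp add: field_simps)
    ultimately show ?thesis by simp
  qed
  thus ?thesis by blast
qed

lemma nG: "card (carrier G) > 0" using finG one_closed card_gt_0_iff by blast

lemma TAU:
  assumes p: "p \<in> edges B"
  shows "lam p / mu p = real (card (Stab p)) * (\<Prod>g\<in>carrier G. mu (gE g p) / mu p) powr (1 / real (card (carrier G)))"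
proof -
  let ?n = "card (carrier G)"
  have mp: "mu p > 0" using mu_pos[OF p] .
  have pos: "(\<Prod>g\<in>carrier G. mu (gE g p) / mu p) > 0" using mu_pos gE_in[OF _ p] mp
    by (intro linordered_semidom_class.prod_pos) auto
  have "(\<Prod>g\<in>carrier G. mu (gE g p)) = (\<Prod>g\<in>carrier G. mu p * (mu (gE g p) / mu p))"
    using mp by (intro prod.cong) auto
  also have "\<dots> = mu p ^ ?n * (\<Prod>g\<in>carrier G. mu (gE g p) / mu p)"
    by (simp only: prod.distrib prod_constant)
  finally have e: "(\<Prod>g\<in>carrier G. mu (gE g p)) = mu p ^ ?n * (\<Prod>g\<in>carrier G. mu (gE g p) / mu p)" .
  have "(mu p ^ ?n) powr (1 / real ?n) = mu p"
    using mp nG by (simp add: powr_realpow[symmetric] powr_powr)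
  hence "(\<Prod>g\<in>carrier G. mu (gE g p)) powr (1 / real ?n)
        = mu p * (\<Prod>g\<in>carrier G. mu (gE g p) / mu p) powr (1 / real ?n)"
    using e mp pos by (simp add: powr_mult)
  thus ?thesis unfolding lam_def using mp by simp
qed

lemma TRANS:
  assumes p: "p \<in> edges B" and p1: "p1 \<in> edges B" and e: "QE p = QE p1"
  shows "\<exists>g1\<in>carrier G. gE g1 p1 = p"
proof -
  have ll: "lam p = lam p1" using arg_cong[OF e, of elen] by simp
  have la: "lam p > 0" using lam_pos[OF p] .
  have lp: "elen p > 0" using wf_edgeD(1)[OF wfB p] .
  have lp1: "elen p1 > 0" using wf_edgeD(1)[OF wfB p1] .
  have m: "lam p / 2 \<in> {0..lam p}" using la by simp
  have "epar (QE p) (lam p / 2) = orb (epar p (elen p / 2))" using QE_par[OF m] la by simp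
  moreover have "epar (QE p1) (lam p / 2) = orb (epar p1 (elen p1 / 2))" using QE_par[of "lam p / 2" p1] m ll la by simp
  ultimately have oo: "orb (epar p1 (elen p1 / 2)) = orb (epar p (elen p / 2))" using e by simp
  have a: "epar p1 (elen p1 / 2) \<in> points S'" using pointsB[OF p1] lp1 by simp
  have b: "epar p (elen p / 2) \<in> points S'" using pointsB[OF p] lp by simp
  obtain g1 where g1: "g1 \<in> carrier G" "act g1 (epar p1 (elen p1 / 2)) = epar p (elen p / 2)"
    using orb_eqD[OF a b oo] by blast
  let ?q = "gE g1 p1"
  have q: "?q \<in> edges B" using gE_in[OF g1(1) p1] .
  have lq: "elen ?q > 0" using wf_edgeD(1)[OF wfB q] .
  have eq: "epar p (elen p / 2) = epar ?q (elen ?q / 2)"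
    using gE_par[OF g1(1) p1, of "elen p1 / 2"] g1(2) lp1 by simp
  have w: "(?q = p \<and> elen ?q / 2 = elen p / 2) \<or> (?q = erev p \<and> elen ?q / 2 = elen p - elen p / 2)"
    by (rule W4[OF wfB p q _ _ _ _ eq]) (use lp lq in auto)
  hence "?q = p \<or> ?q = erev p" by blast
  thus ?thesis
  proof
    assume "?q = erev p"
    hence "QE p1 = erev (QE p)" using QE_g[OF g1(1) p1] QE_erev[OF p] by simp
    hence "erev (QE p) = QE p" using e by simp
    thus ?thesis using wf_erev_neq[OF wfQ, of "QE p"] p by simp
  qed (use g1 in blast)
qed

lemma CNT:
  assumes v: "v' \<in> points S'" and p1: "p1 \<in> edges B" "esrc p1 = v'"
  shows "(\<Sum>p\<in>{p\<in>edges B. esrc p = v' \<and> QE p = QE p1}. real (card (Stab p)))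
         = real (card {g\<in>carrier G. act g v' = v'})"
proof -
  interpret G: group G by (rule gG)
  let ?A = "{p\<in>edges B. esrc p = v' \<and> QE p = QE p1}"
  let ?F = "\<lambda>p. {g\<in>carrier G. gE g p1 = p}"
  have finA: "finite ?A" using wf_finite(2)[OF wfB] by simp
  have U: "{g\<in>carrier G. act g v' = v'} = (\<Union>p\<in>?A. ?F p)"
  proof (rule equalityI; rule subsetI)
    fix g assume g: "g \<in> {g\<in>carrier G. act g v' = v'}"
    hence "gE g p1 \<in> ?A" using gE_in[OF _ p1(1)] gE_src[OF _ p1(1)] QE_g[OF _ p1(1)] p1 by auto
    thus "g \<in> (\<Union>p\<in>?A. ?F p)" using g by blast
  next
    fix g assume "g \<in> (\<Union>p\<in>?A. ?F p)"
    then obtain p where p: "p \<in> ?A" "g \<in> carrier G" "gE g p1 = p" by blast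
    thus "g \<in> {g\<in>carrier G. act g v' = v'}" using gE_src[OF p(2) p1(1)] p1 by auto
  qed
  have cF: "card (?F p) = card (Stab p)" if p: "p \<in> ?A" for p
  proof -
    have pB: "p \<in> edges B" using p by simp
    obtain g1 where g1: "g1 \<in> carrier G" "gE g1 p1 = p" using TRANS[OF pB p1(1)] p by auto
    have ig: "gE (inv\<^bsub>G\<^esub> g1) p = p1" using gE_inv[OF g1(1) p1(1)] g1 by simp
    have "bij_betw (\<lambda>g. g \<otimes>\<^bsub>G\<^esub> inv\<^bsub>G\<^esub> g1) (?F p) (Stab p)"
    proof (rule bij_betw_byWitness[of _ "\<lambda>g. g \<otimes>\<^bsub>G\<^esub> g1"])
      show "\<forall>a\<in>?F p. a \<otimes>\<^bsub>G\<^esub> inv\<^bsub>G\<^esub> g1 \<otimes>\<^bsub>G\<^esub> g1 = a" using g1 by (simp add: G.m_assoc inv_cancel_l)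
      show "\<forall>a'\<in>Stab p. a' \<otimes>\<^bsub>G\<^esub> g1 \<otimes>\<^bsub>G\<^esub> inv\<^bsub>G\<^esub> g1 = a'" using g1 unfolding Stab_def
        by (simp add: G.m_assoc inv_cancel_l2)
      show "(\<lambda>g. g \<otimes>\<^bsub>G\<^esub> inv\<^bsub>G\<^esub> g1) ` ?F p \<subseteq> Stab p"
      proof
        fix x assume "x \<in> (\<lambda>g. g \<otimes>\<^bsub>G\<^esub> inv\<^bsub>G\<^esub> g1) ` ?F p"
        then obtain g where g: "g \<in> carrier G" "gE g p1 = p" "x = g \<otimes>\<^bsub>G\<^esub> inv\<^bsub>G\<^esub> g1" by blast
        have "gE x p = gE g (gE (inv\<^bsub>G\<^esub> g1) p)" using gE_comp[OF g(1) inv_closed[OF g1(1)] pB] g by simp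
        also have "\<dots> = p" using ig g by simp
        finally show "x \<in> Stab p" unfolding Stab_def using g g1 by simp
      qed
      show "(\<lambda>g. g \<otimes>\<^bsub>G\<^esub> g1) ` Stab p \<subseteq> ?F p"
      proof
        fix x assume "x \<in> (\<lambda>g. g \<otimes>\<^bsub>G\<^esub> g1) ` Stab p"
        then obtain g where g: "g \<in> carrier G" "gE g p = p" "x = g \<otimes>\<^bsub>G\<^esub> g1" unfolding Stab_def by blast
        have "gE x p1 = gE g (gE g1 p1)" using gE_comp[OF g(1) g1(1) p1(1)] g by simp
        also have "\<dots> = p" using g g1 by simp
        finally show "x \<in> ?F p" using g g1 by simp
      qed
    qed
    thus ?thesis by (rule bij_betw_same_card)
  qed
  have "card {g\<in>carrier G. act g v' = v'} = (\<Sum>p\<in>?A. card (?F p))"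
    unfolding U by (rule card_UN_disjoint[OF finA]) (use finG in auto)
  also have "\<dots> = (\<Sum>p\<in>?A. card (Stab p))" using cF by (intro sum.cong) auto
  finally have nat_eq: "card {g\<in>carrier G. act g v' = v'} = (\<Sum>p\<in>?A. card (Stab p))" .
  show ?thesis by (simp only: nat_eq of_nat_sum)
qed

lemma harmQ:
  assumes v: "v' \<in> W2" "v' \<notin> bdry S'"
  shows "harmonic_at B Q orb v'"
proof (cases "\<exists>p\<in>edges B. esrc p = v'")
  case False
  have "\<forall>E\<in>edges Q. esrc E = orb v' \<longrightarrow>
      (\<Sum>p\<in>{p\<in>edges B. esrc p = v' \<and> maps_onto orb p E}.
          real (weight B p) / real (weight Q E) * (elen E / elen p)) = 0"
  proof (intro ballI impI)
    fix E assume "E \<in> edges Q" "esrc E = orb v'"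
    have "{p\<in>edges B. esrc p = v' \<and> maps_onto orb p E} = {}" using False by blast
    thus "(\<Sum>p\<in>{p\<in>edges B. esrc p = v' \<and> maps_onto orb p E}.
          real (weight B p) / real (weight Q E) * (elen E / elen p)) = 0" by (simp only: sum.empty)
  qed
  thus ?thesis unfolding harmonic_at_def by blast
next
  case True
  then obtain p0 where p0: "p0 \<in> edges B" "esrc p0 = v'" by blast
  have vP: "v' \<in> points S'" using v W2_points by auto
  define R where "R = (\<Prod>g\<in>carrier G. mu (gE g p0) / mu p0) powr (1 / real (card (carrier G)))"
  have Rp: "(\<Prod>g\<in>carrier G. mu (gE g p) / mu p) powr (1 / real (card (carrier G))) = R"
    if p: "p \<in> edges B" "esrc p = v'" for p
  proof -
    have "mu (gE g p) / mu p = mu (gE g p0) / mu p0" if g: "g \<in> carrier G" for g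
    proof -
      obtain c where "\<forall>p\<in>edges B. esrc p = v' \<longrightarrow> mu (gE g p) / mu p = c" using RAT[OF g v p0] by blast
      thus ?thesis using p p0 by metis
    qed
    hence "(\<Prod>g\<in>carrier G. mu (gE g p) / mu p) = (\<Prod>g\<in>carrier G. mu (gE g p0) / mu p0)"
      by (rule prod.cong[OF refl])
    thus ?thesis unfolding R_def by simp
  qed
  have "\<forall>E\<in>edges Q. esrc E = orb v' \<longrightarrow>
      (\<Sum>p\<in>{p\<in>edges B. esrc p = v' \<and> maps_onto orb p E}.
          real (weight B p) / real (weight Q E) * (elen E / elen p)) = R * real (card {g\<in>carrier G. act g v' = v'})"
  proof (intro ballI impI)
    fix E assume E: "E \<in> edges Q" "esrc E = orb v'"
    obtain q where q: "q \<in> edges B" "E = QE q" using E(1) by auto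
    have "orb (esrc q) = orb v'" using E(2) QE_src[OF q(1)] q by simp
    then obtain g where g: "g \<in> carrier G" "act g (esrc q) = v'"
      using orb_eqD vP wf_edgeD(4)[OF wfB q(1)] vB W2_points by blast
    define p1 where "p1 = gE g q"
    have p1: "p1 \<in> edges B" "esrc p1 = v'" "QE p1 = E"
      using gE_in[OF g(1) q(1)] gE_src[OF g(1) q(1)] QE_g[OF g(1) q(1)] g q unfolding p1_def by auto
    have S: "{p\<in>edges B. esrc p = v' \<and> maps_onto orb p E} = {p\<in>edges B. esrc p = v' \<and> QE p = QE p1}"
      using maps_QE_iff[OF _ E(1)] p1 by auto
    have T: "real (weight B p) / real (weight Q E) * (elen E / elen p) = R * real (card (Stab p))"
      if p: "p \<in> {p\<in>edges B. esrc p = v' \<and> QE p = QE p1}" for p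
    proof -
      have pB: "p \<in> edges B" "esrc p = v'" "QE p = E" using p p1 by auto
      have "elen E = lam p" using pB by auto
      hence "real (weight B p) / real (weight Q E) * (elen E / elen p) = lam p / mu p"
        unfolding mu_def using wf_edgeD(1,10)[OF wfB pB(1)] by (simp add: field_simps)
      also have "\<dots> = real (card (Stab p)) * R" using TAU[OF pB(1)] Rp[OF pB(1,2)] by simp
      finally show ?thesis by simp
    qed
    have "(\<Sum>p\<in>{p\<in>edges B. esrc p = v' \<and> maps_onto orb p E}.
          real (weight B p) / real (weight Q E) * (elen E / elen p))
        = (\<Sum>p\<in>{p\<in>edges B. esrc p = v' \<and> QE p = QE p1}. R * real (card (Stab p)))"
      unfolding S by (rule sum.cong[OF refl]) (rule T)
    also have "\<dots> = R * (\<Sum>p\<in>{p\<in>edges B. esrc p = v' \<and> QE p = QE p1}. real (card (Stab p)))"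
      by (simp add: sum_distrib_left)
    also have "\<dots> = R * real (card {g\<in>carrier G. act g v' = v'})" using CNT[OF vP p1(1,2)] by simp
    finally show "(\<Sum>p\<in>{p\<in>edges B. esrc p = v' \<and> maps_onto orb p E}.
          real (weight B p) / real (weight Q E) * (elen E / elen p)) = R * real (card {g\<in>carrier G. act g v' = v'})" .
  qed
  thus ?thesis unfolding harmonic_at_def by blast
qed

lemma plQ: "pl_comb B Q orb"
  unfolding pl_comb_def
proof (intro conjI ballI impI)
  show "orb ` points B \<subseteq> points Q" using points_Q subdiv_points[OF B] by simp
  show "orb ` verts B \<subseteq> verts Q" using vB by simp
next
  fix p assume "p \<in> edges B"
  hence "QE p \<in> edges Q" "maps_onto orb p (QE p)" using maps_QE by auto
  thus "contracted orb p \<or> (\<exists>E\<in>edges Q. maps_onto orb p E)" by blast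
next
  fix v' assume v': "v' \<in> verts B" and h: "orb v' \<in> bdry Q \<and> (\<exists>e'\<in>edges B. esrc e' = v' \<and> \<not> contracted orb e')"
  then obtain b where b: "b \<in> bdry S'" "orb v' = orb b" by auto
  have bP: "b \<in> points S'" using b wf_finite(3)[OF wfS'] verts_points[of S'] by blast
  have vP: "v' \<in> points S'" using v' vB W2_points by auto
  obtain g where g: "g \<in> carrier G" "act g b = v'" using orb_eqD[OF bP vP] b by auto
  thus "v' \<in> bdry B" using bdG b bB by blast
qed

lemma quotQ: "is_quotient G act S' Q orb"
  unfolding is_quotient_def
proof (intro conjI)
  show "harmonic S' Q orb"
    unfolding harmonic_def
    using B subdiv_refl[OF wfQ] plQ harmQ vB bB by blast
  show "orb ` points S' = points Q" using points_Q by simp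
  show "\<forall>g\<in>carrier G. \<forall>x\<in>points S'. orb (act g x) = orb x" using orb_act by blast
  show "\<forall>x\<in>points S'. \<forall>y\<in>points S'. orb x = orb y \<longrightarrow> (\<exists>g\<in>carrier G. act g x = y)" using orb_eqD by blast
  show "{x \<in> points S'. orb x \<in> bdry Q} = bdry S'"
  proof (rule equalityI; rule subsetI)
    fix x assume "x \<in> {x \<in> points S'. orb x \<in> bdry Q}"
    then obtain b where b: "x \<in> points S'" "b \<in> bdry S'" "orb x = orb b" by auto
    have bP: "b \<in> points S'" using b wf_finite(3)[OF wfS'] verts_points[of S'] by blast
    obtain g where "g \<in> carrier G" "act g b = x" using orb_eqD[OF bP b(1)] b by auto
    thus "x \<in> bdry S'" using bdG b by blast
  next
    fix x assume "x \<in> bdry S'"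
    thus "x \<in> {x \<in> points S'. orb x \<in> bdry Q}" using wf_finite(3)[OF wfS'] verts_points[of S'] by auto
  qed
qed

lemma existence: "\<exists>(S :: 'p set wmg) \<pi>. wf_wmg S \<and> is_quotient G act S' S \<pi>"
  using wfQ quotQ by blast

end

theorem proposition3p20:
  fixes G :: "('g, 'm) monoid_scheme" and act :: "'g \<Rightarrow> 'p \<Rightarrow> 'p" and S' :: "'p wmg"
  assumes "wf_wmg S'"
    and "group G" and "finite (carrier G)"
    and "group_action G (points S') act"
    and "\<forall>g\<in>carrier G. harmonic S' S' (act g)"
    and "\<forall>g\<in>carrier G. act g ` bdry S' \<subseteq> bdry S'"
  shows "(\<exists>(S :: 'p set wmg) \<pi>. wf_wmg S \<and> is_quotient G act S' S \<pi>) \<and>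
         (\<forall>(S1 :: 'q wmg) (S2 :: 'r wmg) \<pi>1 \<pi>2.
            wf_wmg S1 \<and> is_quotient G act S' S1 \<pi>1 \<and>
            wf_wmg S2 \<and> is_quotient G act S' S2 \<pi>2 \<longrightarrow>
            (\<exists>h. harmonic_iso S1 S2 h \<and> (\<forall>x\<in>points S'. h (\<pi>1 x) = \<pi>2 x)))"
proof -
  interpret e: esetup G act S'
    by (rule esetup.intro[OF qsetup.intro[OF assms(1-4)] esetup_axioms.intro[OF assms(5,6)]])
  show ?thesis using e.existence e.uniqueness by blast
qed

end
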